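(* Let $C\subset\mathbb{D}$ be a subspace of dimension $n\ge1$ with basis $c_1,\dots,c_n$, and let $q_C$ be the polynomial defined in the context. Then there exist a differential operator $\bar Q$ in $x$ with polynomial-exponential coefficients and a polynomial-exponential function $\pi(x)$ such that $q_C(\partial)=\bar Q\circ\frac{1}{\pi(x)}\circ\bar K_C$, where $\bar K_C=\tau_C(x)K_C$. For such $\bar Q$ and $\pi$, the translational-differential operator in $z$ $$\hat\Lambda:=z^{-n}\circ b(\bar K_C)\circ b(\bar Q)\circ \frac{z^n}{q_C(z)}$$ satisfies $$\hat\Lambda[\psi_C(x,z)]=\pi(x)\,\psi_C(x,z).$$
   Context: $\mathbb{D}$ is the complex vector space spanned by the distributions $\Delta(\lambda,m)$ ($\lambda\in\mathbb{C}$, $m\in\mathbb{N}$) acting on functions of $z$ by $\Delta(\lambda,m)[f(z)]=f^{(m)}(\lambda)$; for a function $f(x,z)$, $c[f(x,z)]$ denotes the resulting function of $x$. Write $\partial=\partial/\partial x$, $\partial_z=\partial/\partial z$, and for $\lambda\in\mathbb{C}$ let $\mathbf{S}_\lambda$ be the translation operator $\mathbf{S}_\lambda f(z)=f(z+\lambda)$. A polynomial-exponential function is one of the form $\sum_{i=1}^k p_i(x)e^{\mu_i x}$ with $\mu_i\in\mathbb{C}$, $p_i\in\mathbb{C}[x]$. $\tau_C(x)=\mathrm{Wr}(c_1(e^{xz}),\dots,c_n(e^{xz}))$ (Wronskian in $x$), $K_C$ is the unique monic differential operator in $x$ of order $n$ whose kernel contains all $c_i(e^{xz})$, i.e. $K_C(f)=\frac{1}{\tau_C(x)}\mathrm{Wr}(c_1(e^{xz}),\dots,c_n(e^{xz}),f(x))$,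 and the wave function is $\psi_C(x,z)=z^{-n}K_C e^{xz}$. If $\lambda_1,\dots,\lambda_N$ are the points in the supports of the distributions in $C$ and $m_i$ is the highest order of derivative taken at $\lambda_i$ by any element of $C$, then $q_C(z)=\prod_{i=1}^N (z-\lambda_i)^{m_i+1}$. For a differential operator $L$ in $x$ with polynomial-exponential coefficients, $b(L)$ is the unique translational-differential operator in $z$ with polynomial coefficients with $L[e^{xz}]=b(L)[e^{xz}]$; explicitly $b$ is linear with $b(x^k e^{\mu x}\partial^j)=z^j\circ\partial_z^k\circ\mathbf{S}_\mu$ (and $b$ is an anti-isomorphism onto its image). Operators in $z$ act on functions of $(x,z)$ with $x$ treated as a parameter. *)

theory Defs
  imports "HOL-Complex_Analysis.Complex_Analysis" "HOL-Computational_Algebra.Polynomial"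
begin

(* An element of the space D: a finitely supported coefficient function,
   c = sum over (lambda,m) of c(lambda,m) * Delta(lambda,m). *)
type_synonym distr = "complex \<times> nat \<Rightarrow> complex"

definition finite_supp :: "('a \<Rightarrow> complex) \<Rightarrow> bool" where
  "finite_supp f \<longleftrightarrow> finite {t. f t \<noteq> 0}"

definition dapp :: "distr \<Rightarrow> (complex \<Rightarrow> complex) \<Rightarrow> complex" where
  "dapp c f = (\<Sum>p\<in>{p. c p \<noteq> 0}. c p * (deriv ^^ snd p) f (fst p))"

definition dspan :: "nat \<Rightarrow> (nat \<Rightarrow> distr) \<Rightarrow> distr set" where
  "dspan n cs = {(\<lambda>p. \<Sum>i<n. a i * cs i p) | a. True}"

definition dlin_indep :: "nat \<Rightarrow> (nat \<Rightarrow> distr) \<Rightarrow> bool" where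
  "dlin_indep n cs \<longleftrightarrow>
     (\<forall>a. (\<forall>p. (\<Sum>i<n. a i * cs i p) = 0) \<longrightarrow> (\<forall>i<n. a i = 0))"

definition supp_points :: "distr set \<Rightarrow> complex set" where
  "supp_points C = {l. \<exists>c\<in>C. \<exists>m. c (l, m) \<noteq> 0}"

definition max_order :: "distr set \<Rightarrow> complex \<Rightarrow> nat" where
  "max_order C l = Max {m. \<exists>c\<in>C. c (l, m) \<noteq> 0}"

definition qC :: "distr set \<Rightarrow> complex poly" where
  "qC C = (\<Prod>l\<in>supp_points C. [:-l, 1:] ^ (max_order C l + 1))"

definition poly_diff :: "complex poly \<Rightarrow> (complex \<Rightarrow> complex) \<Rightarrow> complex \<Rightarrow> complex" where
  "poly_diff q f x = (\<Sum>i\<le>degree q. coeff q i * (deriv ^^ i) f x)"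

definition wronsk :: "nat \<Rightarrow> (nat \<Rightarrow> complex \<Rightarrow> complex) \<Rightarrow> complex \<Rightarrow> complex" where
  "wronsk n fs x =
     (\<Sum>p | p permutes {..<n}. of_int (sign p) * (\<Prod>i<n. (deriv ^^ i) (fs (p i)) x))"

definition cexp :: "(nat \<Rightarrow> distr) \<Rightarrow> nat \<Rightarrow> complex \<Rightarrow> complex" where
  "cexp cs j = (\<lambda>x. dapp (cs j) (\<lambda>z. exp (x * z)))"

definition tauC :: "nat \<Rightarrow> (nat \<Rightarrow> distr) \<Rightarrow> complex \<Rightarrow> complex" where
  "tauC n cs = wronsk n (cexp cs)"

(* Kbar_C = tau_C K_C, i.e. f \<mapsto> Wr(c_1(e^{xz}),...,c_n(e^{xz}),f) *)
definition KbarC :: "nat \<Rightarrow> (nat \<Rightarrow> distr) \<Rightarrow> (complex \<Rightarrow> complex) \<Rightarrow> complex \<Rightarrow> complex" where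
  "KbarC n cs f = wronsk (Suc n) (\<lambda>j. if j < n then cexp cs j else f)"

definition KC :: "nat \<Rightarrow> (nat \<Rightarrow> distr) \<Rightarrow> (complex \<Rightarrow> complex) \<Rightarrow> complex \<Rightarrow> complex" where
  "KC n cs f x = KbarC n cs f x / tauC n cs x"

definition psiC :: "nat \<Rightarrow> (nat \<Rightarrow> distr) \<Rightarrow> complex \<Rightarrow> complex \<Rightarrow> complex" where
  "psiC n cs x z = KC n cs (\<lambda>y. exp (y * z)) x / z ^ n"

(* polynomial-exponential function: p(k,mu) is the coefficient of x^k e^{mu x} *)
definition pe_fun :: "(nat \<times> complex \<Rightarrow> complex) \<Rightarrow> complex \<Rightarrow> complex" where
  "pe_fun p x = (\<Sum>t\<in>{t. p t \<noteq> 0}. p t * x ^ fst t * exp (snd t * x))"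

(* differential operator in x with polynomial-exponential coefficients:
   L(k,mu,j) is the coefficient of x^k e^{mu x} \<partial>^j *)
type_synonym peop = "nat \<times> complex \<times> nat \<Rightarrow> complex"

definition peop_apply :: "peop \<Rightarrow> (complex \<Rightarrow> complex) \<Rightarrow> complex \<Rightarrow> complex" where
  "peop_apply L f x =
     (\<Sum>t\<in>{t. L t \<noteq> 0}. (case t of (k, mu, j) \<Rightarrow>
        L t * x ^ k * exp (mu * x) * (deriv ^^ j) f x))"

(* b(L): b(x^k e^{mu x} \<partial>^j) = z^j \<circ> \<partial>_z^k \<circ> S_mu, acting on functions of z *)
definition b_apply :: "peop \<Rightarrow> (complex \<Rightarrow> complex) \<Rightarrow> complex \<Rightarrow> complex" where
  "b_apply L F z =
     (\<Sum>t\<in>{t. L t \<noteq> 0}. (case t of (k, mu, j) \<Rightarrow>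
        L t * z ^ j * (deriv ^^ k) (\<lambda>w. F (w + mu)) z))"

definition represents_Kbar :: "nat \<Rightarrow> (nat \<Rightarrow> distr) \<Rightarrow> peop \<Rightarrow> bool" where
  "represents_Kbar n cs Kb \<longleftrightarrow> finite_supp Kb \<and>
     (\<forall>f. f holomorphic_on UNIV \<longrightarrow> (\<forall>x. peop_apply Kb f x = KbarC n cs f x))"

(* q_C(\<partial>) = Q \<circ> (1/pp) \<circ> Kbar_C, as an identity of operators (with meromorphic
   coefficients), tested on all entire functions at all points where pp \<noteq> 0 *)
definition factorization :: "nat \<Rightarrow> (nat \<Rightarrow> distr) \<Rightarrow> peop \<Rightarrow> (nat \<times> complex \<Rightarrow> complex) \<Rightarrow> bool" where
  "factorization n cs Q pp \<longleftrightarrow> finite_supp Q \<and> finite_supp pp \<and> pe_fun pp \<noteq> (\<lambda>x. 0) \<and>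
     (\<forall>f. f holomorphic_on UNIV \<longrightarrow> (\<forall>x. pe_fun pp x \<noteq> 0 \<longrightarrow>
        poly_diff (qC (dspan n cs)) f x =
        peop_apply Q (\<lambda>y. KbarC n cs f y / pe_fun pp y) x))"

definition Lambda_hat :: "nat \<Rightarrow> (nat \<Rightarrow> distr) \<Rightarrow> peop \<Rightarrow> peop \<Rightarrow> (complex \<Rightarrow> complex) \<Rightarrow> complex \<Rightarrow> complex" where
  "Lambda_hat n cs Kb Q F z =
     (1 / z ^ n) * b_apply Kb (b_apply Q (\<lambda>u. u ^ n / poly (qC (dspan n cs)) u * F u)) z"

end

theory Submission
  imports Defs "Jordan_Normal_Form.Determinant"
begin

lemma hd_shift: "(deriv ^^ n) (\<lambda>w. f (w + a)) (z::complex) = (deriv ^^ n) f (z + a)"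
proof -
  have "(deriv ^^ n) (\<lambda>w. f (w + a)) z = (deriv ^^ n) ((\<lambda>w. f (w + a)) \<circ> (\<lambda>x. z + x)) 0"
    by (rule higher_deriv_shift_0)
  also have "\<dots> = (deriv ^^ n) (f \<circ> (\<lambda>x. (z + a) + x)) 0"
    by (simp add: o_def add_ac)
  also have "\<dots> = (deriv ^^ n) f (z + a)"
    by (rule higher_deriv_shift_0[symmetric])
  finally show ?thesis .
qed

lemma hd_sum:
  assumes "finite I" "\<And>i. i \<in> I \<Longrightarrow> f i holomorphic_on S" "open S" "z \<in> S"
  shows "(deriv ^^ n) (\<lambda>w. \<Sum>i\<in>I. f i w) z = (\<Sum>i\<in>I. (deriv ^^ n) (f i) z)"
  using assms(1,2)
proof (induction I rule: finite_induct)
  case empty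
  then show ?case by simp
next
  case (insert i I)
  have h1: "f i holomorphic_on S" using insert by auto
  have h2: "(\<lambda>w. \<Sum>i\<in>I. f i w) holomorphic_on S"
    using insert by (intro holomorphic_on_sum) auto
  have "(deriv ^^ n) (\<lambda>w. \<Sum>i\<in>insert i I. f i w) z = (deriv ^^ n) (\<lambda>w. f i w + (\<Sum>i\<in>I. f i w)) z"
    using insert by simp
  also have "\<dots> = (deriv ^^ n) (f i) z + (deriv ^^ n) (\<lambda>w. \<Sum>i\<in>I. f i w) z"
    using higher_deriv_add[OF h1 h2 assms(3,4)] by simp
  finally show ?case using insert by simp
qed

lemma hd_cmult:
  assumes "f holomorphic_on S" "open S" "z \<in> S"
  shows "(deriv ^^ n) (\<lambda>w. c * f w) z = c * (deriv ^^ n) f z"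
  using higher_deriv_cmult[OF assms(1,3,2)] .

lemma hd_exp: "(deriv ^^ n) (\<lambda>w. exp (c * w)) (z::complex) = c ^ n * exp (c * z)"
proof (induction n arbitrary: z)
  case 0
  then show ?case by simp
next
  case (Suc n)
  have d: "deriv (\<lambda>w. exp (c * w)) = (\<lambda>w. c * exp (c * w))"
  proof
    fix w
    show "deriv (\<lambda>w. exp (c * w)) w = c * exp (c * w)"
      by (rule DERIV_imp_deriv) (auto intro!: derivative_eq_intros)
  qed
  have "(deriv ^^ Suc n) (\<lambda>w. exp (c * w)) z = (deriv ^^ n) (\<lambda>w. c * exp (c * w)) z"
    by (simp add: funpow_Suc_right d del: funpow.simps)
  also have "\<dots> = c * (deriv ^^ n) (\<lambda>w. exp (c * w)) z"
    by (rule hd_cmult[where S=UNIV]) (auto intro: holomorphic_intros)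
  finally show ?case using Suc by simp
qed

lemma hd_zero: "(deriv ^^ n) (\<lambda>w. 0::complex) = (\<lambda>w. 0)"
  using higher_deriv_const[of n "0::complex"] by simp

lemma entire_hd: "f holomorphic_on UNIV \<Longrightarrow> (deriv ^^ n) f holomorphic_on UNIV"
  by (rule holomorphic_higher_deriv) auto

(* the function A k rho x z = d^k/dw^k [exp(x w) rho(w)] at w = z *)
definition Afun :: "nat \<Rightarrow> (complex \<Rightarrow> complex) \<Rightarrow> complex \<Rightarrow> complex \<Rightarrow> complex" where
  "Afun k rho x z = (\<Sum>i = 0..k. of_nat (k choose i) * x ^ i * exp (x * z) * (deriv ^^ (k - i)) rho z)"

lemma hd_exp_mult:
  assumes "rho holomorphic_on S" "open S" "z \<in> S"
  shows "(deriv ^^ k) (\<lambda>w. exp (x * w) * rho w) z = Afun k rho x z"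
proof -
  have "(deriv ^^ k) (\<lambda>w. exp (x * w) * rho w) z =
     (\<Sum>i = 0..k. of_nat (k choose i) * (deriv ^^ i) (\<lambda>w. exp (x * w)) z * (deriv ^^ (k - i)) rho z)"
    by (rule higher_deriv_mult[OF _ assms(1,2,3)]) (auto intro: holomorphic_intros)
  then show ?thesis unfolding Afun_def hd_exp by (simp add: mult_ac)
qed

lemma Afun_cong:
  assumes "rho1 holomorphic_on S" "rho2 holomorphic_on S" "open S" "z \<in> S"
    "\<And>w. w \<in> S \<Longrightarrow> rho1 w = rho2 w"
  shows "Afun k rho1 x z = Afun k rho2 x z"
  unfolding Afun_def
  by (rule sum.cong[OF refl]) (simp add: higher_deriv_transform_within_open[OF assms])

lemma Afun_add:
  assumes "rho1 holomorphic_on S" "rho2 holomorphic_on S" "open S" "z \<in> S"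
  shows "Afun k (\<lambda>w. rho1 w + rho2 w) x z = Afun k rho1 x z + Afun k rho2 x z"
  unfolding Afun_def higher_deriv_add[OF assms]
  by (simp add: sum.distrib algebra_simps)

lemma Afun_cmult:
  assumes "rho holomorphic_on S" "open S" "z \<in> S"
  shows "Afun k (\<lambda>w. c * rho w) x z = c * Afun k rho x z"
  unfolding Afun_def hd_cmult[OF assms] 
  by (simp add: sum_distrib_left algebra_simps)

lemma Afun_const1: "Afun k (\<lambda>w. 1) x z = x ^ k * exp (x * z)"
proof -
  have "Afun k (\<lambda>w. 1) x z = (\<Sum>i = 0..k. (if i = k then x ^ k * exp (x * z) else 0))"
    unfolding Afun_def by (rule sum.cong) auto
  then show ?thesis by simp
qed

lemma Afun_rec:
  assumes "rho holomorphic_on S" "open S" "z \<in> S"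
  shows "Afun (Suc k) rho x z = x * Afun k rho x z + Afun k (deriv rho) x z"
proof -
  have hE: "(\<lambda>w. exp (x * w) * rho w) holomorphic_on S"
    using assms by (auto intro!: holomorphic_intros)
  have hd: "deriv rho holomorphic_on S" using assms by (auto intro: holomorphic_deriv)
  have eq: "\<And>w. w \<in> S \<Longrightarrow> deriv (\<lambda>w. exp (x * w) * rho w) w = x * (exp (x * w) * rho w) + exp (x * w) * deriv rho w"
  proof -
    fix w assume w: "w \<in> S"
    have "rho field_differentiable at w"
      using assms w holomorphic_on_imp_differentiable_at by blast
    then have "(rho has_field_derivative deriv rho w) (at w)"
      using DERIV_deriv_iff_field_differentiable by blast
    then have "((\<lambda>w. exp (x * w) * rho w) has_field_derivative (x * exp (x * w)) * rho w + exp (x * w) * deriv rho w) (at w)"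
      by (auto intro!: derivative_eq_intros)
    then show "deriv (\<lambda>w. exp (x * w) * rho w) w = x * (exp (x * w) * rho w) + exp (x * w) * deriv rho w"
      by (subst DERIV_imp_deriv) (auto simp: algebra_simps)
  qed
  have h1: "(\<lambda>w. x * (exp (x * w) * rho w)) holomorphic_on S" using hE by (auto intro!: holomorphic_intros)
  have h2: "(\<lambda>w. exp (x * w) * deriv rho w) holomorphic_on S" using hd by (auto intro!: holomorphic_intros)
  have "Afun (Suc k) rho x z = (deriv ^^ Suc k) (\<lambda>w. exp (x * w) * rho w) z"
    by (rule hd_exp_mult[OF assms, symmetric])
  also have "\<dots> = (deriv ^^ k) (deriv (\<lambda>w. exp (x * w) * rho w)) z"
    by (simp add: funpow_Suc_right del: funpow.simps)
  also have "\<dots> = (deriv ^^ k) (\<lambda>w. x * (exp (x * w) * rho w) + exp (x * w) * deriv rho w) z"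
    by (rule higher_deriv_transform_within_open[OF _ _ assms(2,3)])
       (auto intro!: holomorphic_intros holomorphic_deriv hE assms hd simp: eq)
  also have "\<dots> = (deriv ^^ k) (\<lambda>w. x * (exp (x * w) * rho w)) z + (deriv ^^ k) (\<lambda>w. exp (x * w) * deriv rho w) z"
    by (rule higher_deriv_add[OF h1 h2 assms(2,3)])
  also have "\<dots> = x * (deriv ^^ k) (\<lambda>w. exp (x * w) * rho w) z + (deriv ^^ k) (\<lambda>w. exp (x * w) * deriv rho w) z"
    using hd_cmult[OF hE assms(2,3)] by simp
  also have "\<dots> = x * Afun k rho x z + Afun k (deriv rho) x z"
    using hd_exp_mult[OF assms] hd_exp_mult[OF hd assms(2,3)] by simp
  finally show ?thesis .
qed

lemma Afun_holo: "(\<lambda>x. Afun k rho x z) holomorphic_on UNIV"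
  unfolding Afun_def by (auto intro!: holomorphic_intros)

lemma Afun_dx:
  assumes "rho holomorphic_on S" "open S" "z \<in> S"
  shows "((\<lambda>x. Afun k rho x z) has_field_derivative Afun k (\<lambda>w. w * rho w) x z) (at x)"
  using assms(1)
proof (induction k arbitrary: rho x)
  case 0
  show ?case unfolding Afun_def
    by (auto intro!: derivative_eq_intros simp: algebra_simps)
next
  case (Suc k)
  have hd: "deriv rho holomorphic_on S" using Suc.prems assms by (auto intro: holomorphic_deriv)
  have hw: "(\<lambda>w. w * rho w) holomorphic_on S" using Suc.prems by (auto intro!: holomorphic_intros)
  have hwd: "(\<lambda>w. w * deriv rho w) holomorphic_on S" using hd by (auto intro!: holomorphic_intros)
  have feq: "(\<lambda>x. Afun (Suc k) rho x z) = (\<lambda>x. x * Afun k rho x z + Afun k (deriv rho) x z)"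
    using Afun_rec[OF Suc.prems assms(2,3)] by auto
  have D: "((\<lambda>x. x * Afun k rho x z + Afun k (deriv rho) x z) has_field_derivative
      (Afun k rho x z + x * Afun k (\<lambda>w. w * rho w) x z) + Afun k (\<lambda>w. w * deriv rho w) x z) (at x)"
    using Suc.IH[OF Suc.prems, of x] Suc.IH[OF hd, of x]
    by (auto intro!: derivative_eq_intros)
  have "deriv (\<lambda>w. w * rho w) = deriv (\<lambda>w. w * rho w)" ..
  have deq: "\<And>w. w \<in> S \<Longrightarrow> deriv (\<lambda>w. w * rho w) w = rho w + w * deriv rho w"
  proof -
    fix w assume w: "w \<in> S"
    have "(rho has_field_derivative deriv rho w) (at w)"
      using Suc.prems assms w holomorphic_on_imp_differentiable_at DERIV_deriv_iff_field_differentiable by blast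
    then show "deriv (\<lambda>w. w * rho w) w = rho w + w * deriv rho w"
      by (intro DERIV_imp_deriv) (auto intro!: derivative_eq_intros)
  qed
  have "Afun (Suc k) (\<lambda>w. w * rho w) x z = x * Afun k (\<lambda>w. w * rho w) x z + Afun k (deriv (\<lambda>w. w * rho w)) x z"
    by (rule Afun_rec[OF hw assms(2,3)])
  also have "Afun k (deriv (\<lambda>w. w * rho w)) x z = Afun k (\<lambda>w. rho w + w * deriv rho w) x z"
    by (rule Afun_cong[OF _ _ assms(2,3)]) (auto intro!: holomorphic_intros holomorphic_deriv hw Suc.prems hwd assms simp: deq)
  also have "\<dots> = Afun k rho x z + Afun k (\<lambda>w. w * deriv rho w) x z"
    by (rule Afun_add[OF Suc.prems hwd assms(2,3)])
  finally have "Afun (Suc k) (\<lambda>w. w * rho w) x z = (Afun k rho x z + x * Afun k (\<lambda>w. w * rho w) x z) + Afun k (\<lambda>w. w * deriv rho w) x z"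
    by (simp add: algebra_simps)
  then show ?case using D feq by simp
qed

lemma Afun_deriv_x:
  assumes "rho holomorphic_on S" "open S" "z \<in> S"
  shows "deriv (\<lambda>x. Afun k rho x z) = (\<lambda>x. Afun k (\<lambda>w. w * rho w) x z)"
  using Afun_dx[OF assms] DERIV_imp_deriv by blast

lemma Afun_hdx:
  assumes "rho holomorphic_on S" "open S" "z \<in> S"
  shows "(deriv ^^ i) (\<lambda>x. Afun k rho x z) x = Afun k (\<lambda>w. w ^ i * rho w) x z"
  using assms(1)
proof (induction i arbitrary: rho)
  case 0
  then show ?case by simp
next
  case (Suc i)
  have hw: "(\<lambda>w. w * rho w) holomorphic_on S" using Suc.prems by (auto intro!: holomorphic_intros)
  have "(deriv ^^ Suc i) (\<lambda>x. Afun k rho x z) x = (deriv ^^ i) (deriv (\<lambda>x. Afun k rho x z)) x"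
    by (simp add: funpow_Suc_right del: funpow.simps)
  also have "\<dots> = (deriv ^^ i) (\<lambda>x. Afun k (\<lambda>w. w * rho w) x z) x"
    by (simp add: Afun_deriv_x[OF Suc.prems assms(2,3)])
  also have "\<dots> = Afun k (\<lambda>w. w ^ i * (w * rho w)) x z"
    by (rule Suc.IH[OF hw])
  also have "(\<lambda>w. w ^ i * (w * rho w)) = (\<lambda>w. w ^ Suc i * rho w)"
    by (auto simp: algebra_simps)
  finally show ?case .
qed

definition emono :: "nat \<times> complex \<Rightarrow> complex \<Rightarrow> complex" where
  "emono t x = x ^ fst t * exp (snd t * x)"

definition isE :: "(complex \<Rightarrow> complex) \<Rightarrow> bool" where
  "isE g \<longleftrightarrow> (\<exists>p. finite_supp p \<and> g = pe_fun p)"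

lemma pe_fun_superset:
  assumes "finite A" "{t. p t \<noteq> 0} \<subseteq> A"
  shows "pe_fun p x = (\<Sum>t\<in>A. p t * emono t x)"
proof -
  have "pe_fun p x = (\<Sum>t\<in>{t. p t \<noteq> 0}. p t * emono t x)"
    unfolding pe_fun_def emono_def by (simp add: mult.assoc)
  also have "\<dots> = (\<Sum>t\<in>A. p t * emono t x)"
    by (rule sum.mono_neutral_left) (use assms in auto)
  finally show ?thesis .
qed

lemma pe_fun_mono: "pe_fun p x = (\<Sum>t\<in>{t. p t \<noteq> 0}. p t * emono t x)"
  unfolding pe_fun_def emono_def by (simp add: mult.assoc)

lemma isE_intro: "finite {t. p t \<noteq> 0} \<Longrightarrow> f = pe_fun p \<Longrightarrow> isE f"
  unfolding isE_def finite_supp_def by blast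

lemma isE_zero: "isE (\<lambda>x. 0)"
  unfolding isE_def finite_supp_def
  by (rule exI[of _ "\<lambda>t. 0"]) (auto simp: pe_fun_def fun_eq_iff)

lemma isE_mono: "isE (emono t)"
proof -
  let ?p = "\<lambda>s. if s = t then (1::complex) else 0"
  have "finite {s. ?p s \<noteq> 0}" by auto
  moreover have "emono t = pe_fun ?p"
  proof
    fix x
    have "pe_fun ?p x = (\<Sum>s\<in>{t}. ?p s * emono s x)"
      by (rule pe_fun_superset) auto
    then show "emono t x = pe_fun ?p x" by simp
  qed
  ultimately show ?thesis by (rule isE_intro)
qed

lemma isE_add:
  assumes "isE f" "isE g"
  shows "isE (\<lambda>x. f x + g x)"
proof -
  obtain p q where p: "finite {t. p t \<noteq> 0}" "f = pe_fun p" and q: "finite {t. q t \<noteq> 0}" "g = pe_fun q"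
    using assms unfolding isE_def finite_supp_def by blast
  let ?A = "{t. p t \<noteq> 0} \<union> {t. q t \<noteq> 0}"
  have fin: "finite {t. p t + q t \<noteq> 0}"
    by (rule finite_subset[of _ ?A]) (use p q in auto)
  have "(\<lambda>x. f x + g x) = pe_fun (\<lambda>t. p t + q t)"
  proof
    fix x
    have "pe_fun (\<lambda>t. p t + q t) x = (\<Sum>t\<in>?A. (p t + q t) * emono t x)"
      by (rule pe_fun_superset) (use p q in auto)
    also have "\<dots> = (\<Sum>t\<in>?A. p t * emono t x) + (\<Sum>t\<in>?A. q t * emono t x)"
      by (simp add: sum.distrib algebra_simps)
    also have "\<dots> = f x + g x"
      using pe_fun_superset[of ?A p x] pe_fun_superset[of ?A q x] p q by auto
    finally show "f x + g x = pe_fun (\<lambda>t. p t + q t) x" by simp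
  qed
  then show ?thesis by (intro isE_intro[OF fin])
qed

lemma isE_cmult:
  assumes "isE f"
  shows "isE (\<lambda>x. c * f x)"
proof -
  obtain p where p: "finite {t. p t \<noteq> 0}" "f = pe_fun p"
    using assms unfolding isE_def finite_supp_def by blast
  have fin: "finite {t. c * p t \<noteq> 0}"
    by (rule finite_subset[of _ "{t. p t \<noteq> 0}"]) (use p in auto)
  have "(\<lambda>x. c * f x) = pe_fun (\<lambda>t. c * p t)"
  proof
    fix x
    have "pe_fun (\<lambda>t. c * p t) x = (\<Sum>t\<in>{t. p t \<noteq> 0}. (c * p t) * emono t x)"
      by (rule pe_fun_superset) (use p in auto)
    also have "\<dots> = c * f x"
      using pe_fun_superset[of "{t. p t \<noteq> 0}" p x] p by (simp add: sum_distrib_left mult.assoc)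
    finally show "c * f x = pe_fun (\<lambda>t. c * p t) x" by simp
  qed
  then show ?thesis by (intro isE_intro[OF fin])
qed

lemma isE_induct[consumes 1, case_names zero emono cmult add]:
  assumes "isE g"
    and "P (\<lambda>x. 0)"
    and "\<And>t. P (emono t)"
    and "\<And>c f. P f \<Longrightarrow> P (\<lambda>x. c * f x)"
    and "\<And>f g. P f \<Longrightarrow> P g \<Longrightarrow> P (\<lambda>x. f x + g x)"
  shows "P g"
proof -
  obtain p where p: "finite {t. p t \<noteq> 0}" "g = pe_fun p"
    using assms unfolding isE_def finite_supp_def by blast
  have "\<And>A. finite A \<Longrightarrow> P (\<lambda>x. \<Sum>t\<in>A. p t * emono t x)"
  proof -
    fix A :: "(nat \<times> complex) set"
    assume "finite A"
    then show "P (\<lambda>x. \<Sum>t\<in>A. p t * emono t x)"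
    proof (induction A rule: finite_induct)
      case empty
      then show ?case using assms(2) by simp
    next
      case (insert t A)
      have "P (\<lambda>x. p t * emono t x + (\<Sum>t\<in>A. p t * emono t x))"
        by (rule assms(5)[OF assms(4)[OF assms(3)] insert.IH])
      then show ?case using insert by simp
    qed
  qed
  moreover have "g = (\<lambda>x. \<Sum>t\<in>{t. p t \<noteq> 0}. p t * emono t x)"
    using p by (auto simp: pe_fun_mono)
  ultimately show ?thesis using p by simp
qed

lemma isE_sum:
  assumes "finite I" "\<And>i. i \<in> I \<Longrightarrow> isE (f i)"
  shows "isE (\<lambda>x. \<Sum>i\<in>I. f i x)"
  using assms
proof (induction I rule: finite_induct)
  case empty
  then show ?case using isE_zero by simp
next
  case (insert i I)
  then show ?case using isE_add[of "f i" "\<lambda>x. \<Sum>i\<in>I. f i x"] by simp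
qed

lemma isE_const: "isE (\<lambda>x. c)"
proof -
  have "(\<lambda>x. c) = (\<lambda>x. c * emono (0, 0) x)" by (auto simp: emono_def)
  then show ?thesis using isE_cmult[OF isE_mono] by metis
qed

lemma isE_mult_mono:
  assumes "isE f"
  shows "isE (\<lambda>x. f x * emono s x)"
  using assms
proof (induction rule: isE_induct)
  case zero
  then show ?case using isE_zero by simp
next
  case (emono t)
  have "(\<lambda>x. emono t x * emono s x) = emono (fst t + fst s, snd t + snd s)"
    by (auto simp: emono_def fun_eq_iff power_add exp_add algebra_simps)
  then show ?case using isE_mono by metis
next
  case (cmult c f)
  then show ?case using isE_cmult[of "\<lambda>x. f x * emono s x" c] by (simp add: mult.assoc)
next
  case (add f g)
  then show ?case using isE_add[of "\<lambda>x. f x * emono s x" "\<lambda>x. g x * emono s x"] by (simp add: algebra_simps)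
qed

lemma isE_mult:
  assumes "isE f" "isE g"
  shows "isE (\<lambda>x. f x * g x)"
  using assms(2)
proof (induction rule: isE_induct)
  case zero
  then show ?case using isE_zero by simp
next
  case (emono t)
  then show ?case using isE_mult_mono[OF assms(1)] by simp
next
  case (cmult c g)
  then show ?case using isE_cmult[of "\<lambda>x. f x * g x" c] by (simp add: algebra_simps)
next
  case (add g h)
  then show ?case using isE_add[of "\<lambda>x. f x * g x" "\<lambda>x. f x * h x"] by (simp add: algebra_simps)
qed

lemma isE_prod:
  assumes "finite I" "\<And>i. i \<in> I \<Longrightarrow> isE (f i)"
  shows "isE (\<lambda>x. \<Prod>i\<in>I. f i x)"
  using assms
proof (induction I rule: finite_induct)
  case empty
  then show ?case using isE_const by simp
next
  case (insert i I)
  then show ?case using isE_mult[of "f i" "\<lambda>x. \<Prod>i\<in>I. f i x"] by simp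
qed

lemma isE_uminus: "isE f \<Longrightarrow> isE (\<lambda>x. - f x)"
  using isE_cmult[of f "-1"] by simp

lemma isE_diff: "isE f \<Longrightarrow> isE g \<Longrightarrow> isE (\<lambda>x. f x - g x)"
  using isE_add[of f "\<lambda>x. - g x"] isE_uminus[of g] by simp

lemma isE_power: "isE f \<Longrightarrow> isE (\<lambda>x. f x ^ k)"
  using isE_prod[of "{..<k}" "\<lambda>i. f"] by simp

lemma isE_xpow_exp: "isE (\<lambda>x. x ^ k * exp (mu * x))"
  using isE_mono[of "(k, mu)"] unfolding emono_def by simp

lemma isE_exp: "isE (\<lambda>x. exp (mu * x))"
  using isE_xpow_exp[of 0 mu] by simp

lemma isE_xpow: "isE (\<lambda>x. x ^ k)"
  using isE_xpow_exp[of k 0] by simp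

lemma isE_holo: "isE f \<Longrightarrow> f holomorphic_on UNIV"
proof (induction rule: isE_induct)
  case (emono t)
  then show ?case unfolding emono_def by (auto intro!: holomorphic_intros)
qed (auto intro!: holomorphic_intros)

lemma isE_has_deriv:
  assumes "isE f"
  shows "\<exists>g. isE g \<and> (\<forall>x. (f has_field_derivative g x) (at x))"
  using assms
proof (induction rule: isE_induct)
  case zero
  then show ?case using isE_zero by auto
next
  case (emono t)
  obtain k mu where t: "t = (k, mu)" by (cases t)
  let ?g = "\<lambda>x. of_nat k * x ^ (k - 1) * exp (mu * x) + mu * (x ^ k * exp (mu * x))"
  have "isE ?g"
    by (intro isE_add isE_cmult isE_mult isE_xpow isE_exp isE_xpow_exp)
  moreover have "\<forall>x. (emono t has_field_derivative ?g x) (at x)"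
    unfolding emono_def t by (auto intro!: derivative_eq_intros simp: algebra_simps)
  ultimately show ?case by blast
next
  case (cmult c f)
  then obtain g where "isE g" "\<forall>x. (f has_field_derivative g x) (at x)" by blast
  then show ?case
    by (intro exI[of _ "\<lambda>x. c * g x"]) (auto intro!: derivative_eq_intros isE_cmult)
next
  case (add f h)
  then obtain g1 g2 where "isE g1" "\<forall>x. (f has_field_derivative g1 x) (at x)"
     "isE g2" "\<forall>x. (h has_field_derivative g2 x) (at x)" by blast
  then show ?case
    by (intro exI[of _ "\<lambda>x. g1 x + g2 x"]) (auto intro!: derivative_eq_intros isE_add)
qed

lemma isE_deriv: "isE f \<Longrightarrow> isE (deriv f)"
proof -
  assume "isE f"
  then obtain g where g: "isE g" "\<forall>x. (f has_field_derivative g x) (at x)" using isE_has_deriv by blast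
  then have "deriv f = g" using DERIV_imp_deriv by blast
  then show ?thesis using g by simp
qed

lemma isE_hd: "isE f \<Longrightarrow> isE ((deriv ^^ k) f)"
  by (induction k) (auto intro: isE_deriv)

lemma isE_pe_fun: "finite_supp p \<Longrightarrow> isE (pe_fun p)"
  unfolding isE_def by blast

definition opap :: "nat \<Rightarrow> (nat \<Rightarrow> complex \<Rightarrow> complex) \<Rightarrow> (complex \<Rightarrow> complex) \<Rightarrow> complex \<Rightarrow> complex" where
  "opap m a g x = (\<Sum>j\<le>m. a j x * (deriv ^^ j) g x)"

definition pcoef :: "peop \<Rightarrow> nat \<Rightarrow> complex \<Rightarrow> complex" where
  "pcoef L j x = (\<Sum>t\<in>{t. L t \<noteq> 0 \<and> snd (snd t) = j}. L t * x ^ fst t * exp (fst (snd t) * x))"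

lemma peop_opap:
  assumes "finite_supp L" "\<And>t. L t \<noteq> 0 \<Longrightarrow> snd (snd t) \<le> m"
  shows "peop_apply L f x = opap m (pcoef L) f x"
proof -
  let ?S = "{t. L t \<noteq> 0}"
  let ?h = "\<lambda>t. L t * x ^ fst t * exp (fst (snd t) * x) * (deriv ^^ snd (snd t)) f x"
  have fin: "finite ?S" using assms(1) unfolding finite_supp_def .
  have 1: "peop_apply L f x = (\<Sum>t\<in>?S. ?h t)"
    unfolding peop_apply_def by (rule sum.cong) (auto split: prod.splits)
  have 2: "(\<Sum>t\<in>?S. ?h t) = (\<Sum>j\<le>m. \<Sum>t\<in>{t\<in>?S. snd (snd t) = j}. ?h t)"
    by (rule sum.group[symmetric]) (use fin assms(2) in auto)
  have 3: "(\<Sum>j\<le>m. \<Sum>t\<in>{t\<in>?S. snd (snd t) = j}. ?h t) = opap m (pcoef L) f x"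
    unfolding opap_def pcoef_def
  proof (rule sum.cong[OF refl])
    fix j
    have "(\<Sum>t\<in>{t\<in>?S. snd (snd t) = j}. ?h t) = (\<Sum>t\<in>{t. L t \<noteq> 0 \<and> snd (snd t) = j}. L t * x ^ fst t * exp (fst (snd t) * x) * (deriv ^^ j) f x)"
      by (rule sum.cong) auto
    then show "(\<Sum>t\<in>{t\<in>?S. snd (snd t) = j}. ?h t) = (\<Sum>t\<in>{t. L t \<noteq> 0 \<and> snd (snd t) = j}. L t * x ^ fst t * exp (fst (snd t) * x)) * (deriv ^^ j) f x"
      by (simp add: sum_distrib_right)
  qed
  show ?thesis using 1 2 3 by simp
qed
lemma opap_to_peop:
  assumes "\<And>j. j \<le> m \<Longrightarrow> isE (a j)"
  shows "\<exists>L. finite_supp L \<and> (\<forall>f x. peop_apply L f x = opap m a f x)"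
proof -
  have "\<forall>j. \<exists>p. j \<le> m \<longrightarrow> finite {t. p t \<noteq> 0} \<and> a j = pe_fun p"
    using assms unfolding isE_def finite_supp_def by blast
  from choice[OF this] obtain P where P0: "\<forall>j. j \<le> m \<longrightarrow> finite {t. P j t \<noteq> 0} \<and> a j = pe_fun (P j)"
    by blast
  then have P: "\<And>j. j \<le> m \<Longrightarrow> finite {t. P j t \<noteq> 0} \<and> a j = pe_fun (P j)" by blast
  define L :: peop where "L = (\<lambda>(k, mu, j). if j \<le> m then P j (k, mu) else 0)"
  have sub: "{t. L t \<noteq> 0} \<subseteq> (\<Union>j\<le>m. (\<lambda>(k, mu). (k, mu, j)) ` {t. P j t \<noteq> 0})"
  proof
    fix t assume "t \<in> {t. L t \<noteq> 0}"
    then obtain k mu j where t: "t = (k, mu, j)" "j \<le> m" "P j (k, mu) \<noteq> 0"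
      unfolding L_def by (cases t) (auto split: if_splits)
    have "t \<in> (\<lambda>(k, mu). (k, mu, j)) ` {t. P j t \<noteq> 0}"
      by (rule image_eqI[of _ _ "(k, mu)"]) (use t in auto)
    then show "t \<in> (\<Union>j\<le>m. (\<lambda>(k, mu). (k, mu, j)) ` {t. P j t \<noteq> 0})" using t(2) by blast
  qed
  have fin: "finite {t. L t \<noteq> 0}"
    by (rule finite_subset[OF sub]) (use P in auto)
  have bnd: "\<And>t. L t \<noteq> 0 \<Longrightarrow> snd (snd t) \<le> m"
    unfolding L_def by (auto split: prod.splits if_splits)
  have pc: "\<And>j x. j \<le> m \<Longrightarrow> pcoef L j x = a j x"
  proof -
    fix j x assume j: "j \<le> m"
    have img: "{t. L t \<noteq> 0 \<and> snd (snd t) = j} = (\<lambda>(k, mu). (k, mu, j)) ` {t. P j t \<noteq> 0}"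
    proof
      show "{t. L t \<noteq> 0 \<and> snd (snd t) = j} \<subseteq> (\<lambda>(k, mu). (k, mu, j)) ` {t. P j t \<noteq> 0}"
      proof
        fix t assume a: "t \<in> {t. L t \<noteq> 0 \<and> snd (snd t) = j}"
        obtain k mu j' where t: "t = (k, mu, j')" by (cases t)
        have "j' = j" "P j (k, mu) \<noteq> 0" using a j unfolding t L_def by (auto split: if_splits)
        then show "t \<in> (\<lambda>(k, mu). (k, mu, j)) ` {t. P j t \<noteq> 0}"
          unfolding t by (intro image_eqI[of _ _ "(k, mu)"]) auto
      qed
    next
      show "(\<lambda>(k, mu). (k, mu, j)) ` {t. P j t \<noteq> 0} \<subseteq> {t. L t \<noteq> 0 \<and> snd (snd t) = j}"
        using j unfolding L_def by auto
    qed
    have inj: "inj_on (\<lambda>(k, mu). (k, mu, j)) {t. P j t \<noteq> 0}"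
      by (auto simp: inj_on_def)
    have "pcoef L j x = (\<Sum>t\<in>{t. P j t \<noteq> 0}. P j t * x ^ fst t * exp (snd t * x))"
      unfolding pcoef_def img sum.reindex[OF inj]
      by (rule sum.cong) (use j in \<open>auto simp: L_def split: prod.splits\<close>)
    also have "\<dots> = a j x" using P[OF j] by (simp add: pe_fun_def)
    finally show "pcoef L j x = a j x" .
  qed
  have "\<forall>f x. peop_apply L f x = opap m a f x"
  proof (intro allI)
    fix f x
    have "peop_apply L f x = opap m (pcoef L) f x"
      by (rule peop_opap) (use fin bnd in \<open>auto simp: finite_supp_def\<close>)
    also have "\<dots> = opap m a f x"
      unfolding opap_def using pc by auto
    finally show "peop_apply L f x = opap m a f x" .
  qed
  then show ?thesis using fin unfolding finite_supp_def by blast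
qed


lemma dapp_superset:
  assumes "finite A" "{p. c p \<noteq> 0} \<subseteq> A"
  shows "dapp c f = (\<Sum>p\<in>A. c p * (deriv ^^ snd p) f (fst p))"
  unfolding dapp_def
  by (rule sum.mono_neutral_left) (use assms in auto)

lemma cexp_formula:
  "dapp c (\<lambda>z. exp (x * z)) = (\<Sum>p\<in>{p. c p \<noteq> 0}. c p * (x ^ snd p * exp (fst p * x)))"
  unfolding dapp_def hd_exp by (simp add: mult.commute)

lemma isE_cexp:
  assumes "finite_supp c"
  shows "isE (\<lambda>x. dapp c (\<lambda>z. exp (x * z)))"
  unfolding cexp_formula
  by (rule isE_sum) (use assms in \<open>auto simp: finite_supp_def intro!: isE_cmult isE_xpow_exp\<close>)

lemma cexp_Afun: "dapp c (\<lambda>z. exp (x * z)) = (\<Sum>p\<in>{p. c p \<noteq> 0}. c p * Afun (snd p) (\<lambda>w. 1) x (fst p))"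
  unfolding cexp_formula Afun_const1 by (simp add: mult.commute)

lemma cexp_hd:
  assumes "finite_supp c"
  shows "(deriv ^^ i) (\<lambda>x. dapp c (\<lambda>z. exp (x * z))) x = dapp c (\<lambda>z. z ^ i * exp (x * z))"
proof -
  let ?S = "{p. c p \<noteq> 0}"
  have fin: "finite ?S" using assms unfolding finite_supp_def .
  have "(deriv ^^ i) (\<lambda>x. dapp c (\<lambda>z. exp (x * z))) x =
        (deriv ^^ i) (\<lambda>x. \<Sum>p\<in>?S. c p * Afun (snd p) (\<lambda>w. 1) x (fst p)) x"
    unfolding cexp_Afun ..
  also have "\<dots> = (\<Sum>p\<in>?S. (deriv ^^ i) (\<lambda>x. c p * Afun (snd p) (\<lambda>w. 1) x (fst p)) x)"
    by (rule hd_sum[OF fin _ open_UNIV], rule holomorphic_on_mult[OF holomorphic_on_const Afun_holo], simp)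
  also have "\<dots> = (\<Sum>p\<in>?S. c p * Afun (snd p) (\<lambda>w. w ^ i * 1) x (fst p))"
  proof (rule sum.cong[OF refl])
    fix p
    have "(deriv ^^ i) (\<lambda>x. c p * Afun (snd p) (\<lambda>w. 1) x (fst p)) x = c p * (deriv ^^ i) (\<lambda>x. Afun (snd p) (\<lambda>w. 1) x (fst p)) x"
      by (rule hd_cmult[OF Afun_holo open_UNIV]) simp
    also have "\<dots> = c p * Afun (snd p) (\<lambda>w. w ^ i * 1) x (fst p)"
      using Afun_hdx[of "\<lambda>w. 1" UNIV "fst p" i "snd p" x] by simp
    finally show "(deriv ^^ i) (\<lambda>x. c p * Afun (snd p) (\<lambda>w. 1) x (fst p)) x = c p * Afun (snd p) (\<lambda>w. w ^ i * 1) x (fst p)" .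
  qed
  also have "\<dots> = (\<Sum>p\<in>?S. c p * (deriv ^^ snd p) (\<lambda>z. z ^ i * exp (x * z)) (fst p))"
  proof (rule sum.cong[OF refl])
    fix p
    have "(deriv ^^ snd p) (\<lambda>w. exp (x * w) * (w ^ i * 1)) (fst p) = Afun (snd p) (\<lambda>w. w ^ i * 1) x (fst p)"
      by (rule hd_exp_mult[of _ UNIV]) (auto intro!: holomorphic_intros)
    moreover have "(\<lambda>w. exp (x * w) * (w ^ i * 1)) = (\<lambda>z. z ^ i * exp (x * z))"
      by (auto simp: mult.commute)
    ultimately show "c p * Afun (snd p) (\<lambda>w. w ^ i * 1) x (fst p) = c p * (deriv ^^ snd p) (\<lambda>z. z ^ i * exp (x * z)) (fst p)"
      by simp
  qed
  also have "\<dots> = dapp c (\<lambda>z. z ^ i * exp (x * z))"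
    unfolding dapp_def ..
  finally show ?thesis .
qed

lemma dapp_lin_f:
  assumes "finite_supp c" "finite I" "\<And>i. i \<in> I \<Longrightarrow> f i holomorphic_on UNIV"
  shows "dapp c (\<lambda>z. \<Sum>i\<in>I. a i * f i z) = (\<Sum>i\<in>I. a i * dapp c (f i))"
proof -
  have "dapp c (\<lambda>z. \<Sum>i\<in>I. a i * f i z) = (\<Sum>p\<in>{p. c p \<noteq> 0}. c p * (\<Sum>i\<in>I. a i * (deriv ^^ snd p) (f i) (fst p)))"
    unfolding dapp_def
  proof (rule sum.cong[OF refl])
    fix p
    have "(deriv ^^ snd p) (\<lambda>z. \<Sum>i\<in>I. a i * f i z) (fst p) = (\<Sum>i\<in>I. (deriv ^^ snd p) (\<lambda>z. a i * f i z) (fst p))"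
      by (rule hd_sum[OF assms(2) _ open_UNIV]) (auto intro!: holomorphic_intros assms(3))
    also have "\<dots> = (\<Sum>i\<in>I. a i * (deriv ^^ snd p) (f i) (fst p))"
      by (rule sum.cong[OF refl], rule hd_cmult[OF assms(3) open_UNIV]) auto
    finally show "c p * (deriv ^^ snd p) (\<lambda>z. \<Sum>i\<in>I. a i * f i z) (fst p) = c p * (\<Sum>i\<in>I. a i * (deriv ^^ snd p) (f i) (fst p))"
      by simp
  qed
  also have "\<dots> = (\<Sum>p\<in>{p. c p \<noteq> 0}. \<Sum>i\<in>I. a i * (c p * (deriv ^^ snd p) (f i) (fst p)))"
    by (simp add: sum_distrib_left mult_ac)
  also have "\<dots> = (\<Sum>i\<in>I. \<Sum>p\<in>{p. c p \<noteq> 0}. a i * (c p * (deriv ^^ snd p) (f i) (fst p)))"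
    by (rule sum.swap)
  also have "\<dots> = (\<Sum>i\<in>I. a i * dapp c (f i))"
    unfolding dapp_def by (simp add: sum_distrib_left)
  finally show ?thesis .
qed

lemma poly_diff_cexp:
  assumes "finite_supp c"
  shows "poly_diff q (\<lambda>x. dapp c (\<lambda>z. exp (x * z))) x = dapp c (\<lambda>z. poly q z * exp (x * z))"
proof -
  have "poly_diff q (\<lambda>x. dapp c (\<lambda>z. exp (x * z))) x = (\<Sum>i\<le>degree q. coeff q i * dapp c (\<lambda>z. z ^ i * exp (x * z)))"
    unfolding poly_diff_def cexp_hd[OF assms] ..
  also have "\<dots> = dapp c (\<lambda>z. \<Sum>i\<le>degree q. coeff q i * (z ^ i * exp (x * z)))"
    by (rule dapp_lin_f[OF assms, symmetric]) (auto intro!: holomorphic_intros)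
  also have "(\<lambda>z. \<Sum>i\<le>degree q. coeff q i * (z ^ i * exp (x * z))) = (\<lambda>z. poly q z * exp (x * z))"
    by (auto simp: poly_altdef sum_distrib_right mult.assoc)
  finally show ?thesis .
qed

lemma dapp_lin_c:
  assumes "finite I" "\<And>i. i \<in> I \<Longrightarrow> finite_supp (cs i)"
  shows "dapp (\<lambda>p. \<Sum>i\<in>I. a i * cs i p) f = (\<Sum>i\<in>I. a i * dapp (cs i) f)"
proof -
  let ?A = "\<Union>i\<in>I. {p. cs i p \<noteq> 0}"
  have finA: "finite ?A" using assms unfolding finite_supp_def by auto
  have sub: "{p. (\<Sum>i\<in>I. a i * cs i p) \<noteq> 0} \<subseteq> ?A"
  proof
    fix p assume "p \<in> {p. (\<Sum>i\<in>I. a i * cs i p) \<noteq> 0}"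
    then have "(\<Sum>i\<in>I. a i * cs i p) \<noteq> 0" by simp
    then obtain i where "i \<in> I" "a i * cs i p \<noteq> 0" by (rule sum.not_neutral_contains_not_neutral)
    then show "p \<in> ?A" by auto
  qed
  have "dapp (\<lambda>p. \<Sum>i\<in>I. a i * cs i p) f = (\<Sum>p\<in>?A. (\<Sum>i\<in>I. a i * cs i p) * (deriv ^^ snd p) f (fst p))"
    by (rule dapp_superset[OF finA sub])
  also have "\<dots> = (\<Sum>p\<in>?A. \<Sum>i\<in>I. a i * (cs i p * (deriv ^^ snd p) f (fst p)))"
    by (simp add: sum_distrib_right mult.assoc)
  also have "\<dots> = (\<Sum>i\<in>I. \<Sum>p\<in>?A. a i * (cs i p * (deriv ^^ snd p) f (fst p)))"
    by (rule sum.swap)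
  also have "\<dots> = (\<Sum>i\<in>I. a i * (\<Sum>p\<in>?A. cs i p * (deriv ^^ snd p) f (fst p)))"
    by (simp add: sum_distrib_left)
  also have "\<dots> = (\<Sum>i\<in>I. a i * dapp (cs i) f)"
  proof (rule sum.cong[OF refl])
    fix i assume i: "i \<in> I"
    have "dapp (cs i) f = (\<Sum>p\<in>?A. cs i p * (deriv ^^ snd p) f (fst p))"
      by (rule dapp_superset[OF finA]) (use i in auto)
    then show "a i * (\<Sum>p\<in>?A. cs i p * (deriv ^^ snd p) f (fst p)) = a i * dapp (cs i) f" by simp
  qed
  finally show ?thesis .
qed

lemma hd_power_at: "(deriv ^^ i) (\<lambda>w. (w - a) ^ k) (a::complex) = (if i = k then fact k else 0)"
proof -
  have "(deriv ^^ i) (\<lambda>w. (w - a) ^ k) a = pochhammer (of_nat (Suc k - i)) i * (a - a) ^ (k - i)"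
    by (rule higher_deriv_power)
  then show ?thesis
    by (cases "i = k") (auto simp: pochhammer_fact pochhammer_0_left)
qed

lemma hd_root_vanish:
  assumes "[:-a, 1:] ^ k dvd q" "m < k" "g holomorphic_on UNIV"
  shows "(deriv ^^ m) (\<lambda>z. poly q z * g z) a = 0"
proof -
  obtain u where u: "q = [:-a, 1:] ^ k * u" using assms(1) by (auto elim: dvdE)
  have eq: "(\<lambda>z. poly q z * g z) = (\<lambda>z. (z - a) ^ k * (poly u z * g z))"
    by (auto simp: u poly_mult mult.assoc)
  have "(deriv ^^ m) (\<lambda>z. (z - a) ^ k * (poly u z * g z)) a =
     (\<Sum>i = 0..m. of_nat (m choose i) * (deriv ^^ i) (\<lambda>z. (z - a) ^ k) a * (deriv ^^ (m - i)) (\<lambda>z. poly u z * g z) a)"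
    by (rule higher_deriv_mult[where S=UNIV]) (auto intro!: holomorphic_intros assms(3)[unfolded holomorphic_on_def, THEN bspec, simplified]
       simp: holomorphic_on_def[symmetric] assms(3))
  also have "\<dots> = 0"
    by (rule sum.neutral) (use assms(2) in \<open>auto simp: hd_power_at\<close>)
  finally show ?thesis using eq by simp
qed

lemma hd_poly_leading:
  "(deriv ^^ k) (\<lambda>z. poly ([:-a, 1:] ^ k * u) z) (a::complex) = fact k * poly u a"
proof -
  have eq: "(\<lambda>z. poly ([:-a, 1:] ^ k * u) z) = (\<lambda>z. (z - a) ^ k * poly u z)"
    by (auto simp: poly_mult)
  have "(deriv ^^ k) (\<lambda>z. (z - a) ^ k * poly u z) a =
     (\<Sum>i = 0..k. of_nat (k choose i) * (deriv ^^ i) (\<lambda>z. (z - a) ^ k) a * (deriv ^^ (k - i)) (poly u) a)"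
    by (rule higher_deriv_mult[where S=UNIV]) (auto intro!: holomorphic_intros)
  also have "\<dots> = (\<Sum>i\<in>{k}. of_nat (k choose i) * (deriv ^^ i) (\<lambda>z. (z - a) ^ k) a * (deriv ^^ (k - i)) (poly u) a)"
    by (rule sum.mono_neutral_right) (auto simp: hd_power_at)
  also have "\<dots> = fact k * poly u a" by (simp add: hd_power_at)
  finally show ?thesis using eq by simp
qed

lemma dapp_poly_zero:
  assumes "finite_supp c" "\<And>r. dapp c (\<lambda>z. z ^ r) = 0"
  shows "dapp c (poly P) = 0"
proof -
  have "dapp c (\<lambda>z. \<Sum>i\<le>degree P. coeff P i * z ^ i) = (\<Sum>i\<le>degree P. coeff P i * dapp c (\<lambda>z. z ^ i))"
    by (rule dapp_lin_f[OF assms(1)]) (auto intro!: holomorphic_intros)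
  moreover have "(\<lambda>z. \<Sum>i\<le>degree P. coeff P i * z ^ i) = poly P"
    by (auto simp: poly_altdef)
  ultimately show ?thesis using assms(2) by simp
qed

lemma dapp_hermite:
  assumes "finite_supp c" "\<And>P. dapp c (poly P) = 0"
  shows "c p = 0"
proof (rule ccontr)
  assume cp: "c p \<noteq> 0"
  let ?S = "{p. c p \<noteq> 0}"
  have finS: "finite ?S" using assms(1) unfolding finite_supp_def .
  define l0 where "l0 = fst p"
  define M0 where "M0 = {m. c (l0, m) \<noteq> 0}"
  have finM0: "finite M0"
  proof -
    have "M0 \<subseteq> snd ` ?S" unfolding M0_def by (auto simp: image_iff)
    then show ?thesis using finS finite_subset by blast
  qed
  have M0ne: "snd p \<in> M0" using cp unfolding M0_def l0_def by simp
  define m0 where "m0 = Max M0"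
  have m0in: "m0 \<in> M0" unfolding m0_def using finM0 M0ne Max_in by blast
  have m0ge: "\<And>m. c (l0, m) \<noteq> 0 \<Longrightarrow> m \<le> m0"
    unfolding m0_def using finM0 M0_def by auto
  define Mx where "Mx = Max (snd ` ?S)"
  have Mxge: "\<And>q. c q \<noteq> 0 \<Longrightarrow> snd q \<le> Mx"
    unfolding Mx_def using finS by auto
  define Lam where "Lam = fst ` ?S - {l0}"
  have finLam: "finite Lam" unfolding Lam_def using finS by auto
  define U where "U = (\<Prod>l\<in>Lam. [:-l, 1:] ^ (Suc Mx))"
  define P where "P = [:-l0, 1:] ^ m0 * U"
  have Ul0: "poly U l0 \<noteq> 0"
    unfolding U_def poly_prod using finLam by (auto simp: Lam_def)
  have terms: "\<And>q. q \<in> ?S \<Longrightarrow> q \<noteq> (l0, m0) \<Longrightarrow> c q * (deriv ^^ snd q) (poly P) (fst q) = 0"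
  proof -
    fix q assume q: "q \<in> ?S" "q \<noteq> (l0, m0)"
    show "c q * (deriv ^^ snd q) (poly P) (fst q) = 0"
    proof (cases "fst q = l0")
      case True
      then have "snd q < m0" using m0ge[of "snd q"] q by (cases q) auto
      moreover have "[:-l0, 1:] ^ m0 dvd P" unfolding P_def by simp
      ultimately have "(deriv ^^ snd q) (\<lambda>z. poly P z * 1) l0 = 0"
        by (intro hd_root_vanish) auto
      then show ?thesis using True by simp
    next
      case False
      then have inL: "fst q \<in> Lam" unfolding Lam_def using q by auto
      have "[:-fst q, 1:] ^ Suc Mx dvd U" unfolding U_def by (rule dvd_prodI[OF finLam inL])
      then have "[:-fst q, 1:] ^ Suc Mx dvd P" unfolding P_def by simp
      moreover have "snd q < Suc Mx" using Mxge[of q] q by simp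
      ultimately have "(deriv ^^ snd q) (\<lambda>z. poly P z * 1) (fst q) = 0"
        by (intro hd_root_vanish) auto
      then show ?thesis by simp
    qed
  qed
  have inS: "(l0, m0) \<in> ?S" using m0in unfolding M0_def by simp
  have "dapp c (poly P) = (\<Sum>q\<in>?S. c q * (deriv ^^ snd q) (poly P) (fst q))"
    unfolding dapp_def ..
  also have "\<dots> = c (l0, m0) * (deriv ^^ m0) (poly P) l0 + (\<Sum>q\<in>?S - {(l0, m0)}. c q * (deriv ^^ snd q) (poly P) (fst q))"
    using sum.remove[OF finS inS, of "\<lambda>q. c q * (deriv ^^ snd q) (poly P) (fst q)"] by simp
  also have "(\<Sum>q\<in>?S - {(l0, m0)}. c q * (deriv ^^ snd q) (poly P) (fst q)) = 0"
    by (rule sum.neutral) (use terms in auto)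
  also have "(deriv ^^ m0) (poly P) l0 = fact m0 * poly U l0"
    unfolding P_def by (rule hd_poly_leading)
  finally have "dapp c (poly P) = c (l0, m0) * (fact m0 * poly U l0)" by simp
  moreover have "c (l0, m0) \<noteq> 0" using inS by simp
  ultimately have "dapp c (poly P) \<noteq> 0" using Ul0 by simp
  then show False using assms(2) by simp
qed

lemma cexp_inj:
  assumes "finite_supp c" "\<And>x. dapp c (\<lambda>z. exp (x * z)) = 0"
  shows "c p = 0"
proof (rule dapp_hermite[OF assms(1)])
  fix P
  show "dapp c (poly P) = 0"
  proof (rule dapp_poly_zero[OF assms(1)])
    fix r
    have "(\<lambda>x. dapp c (\<lambda>z. exp (x * z))) = (\<lambda>x. 0)" using assms(2) by auto
    then have "(deriv ^^ r) (\<lambda>x. dapp c (\<lambda>z. exp (x * z))) 0 = 0" by (simp add: hd_zero)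
    then show "dapp c (\<lambda>z. z ^ r) = 0" using cexp_hd[OF assms(1), of r 0] by simp
  qed
qed

lemma dspan_mem: "i < n \<Longrightarrow> cs i \<in> dspan n cs"
proof -
  assume i: "i < n"
  have "cs i = (\<lambda>p. \<Sum>j<n. (if j = i then 1 else 0) * cs j p)"
  proof
    fix p
    have "(\<Sum>j<n. (if j = i then 1 else 0) * cs j p) = (\<Sum>j<n. if j = i then cs j p else 0)"
      by (rule sum.cong) auto
    also have "\<dots> = cs i p" using i by simp
    finally show "cs i p = (\<Sum>j<n. (if j = i then 1 else 0) * cs j p)" by simp
  qed
  then show ?thesis unfolding dspan_def by (intro CollectI exI[of _ "\<lambda>j. if j = i then 1 else 0"]) simp
qed

lemma dspan_nonzero:
  assumes "c \<in> dspan n cs" "c p \<noteq> 0"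
  shows "\<exists>j<n. cs j p \<noteq> 0"
proof -
  obtain a where a: "c = (\<lambda>p. \<Sum>i<n. a i * cs i p)" using assms(1) unfolding dspan_def by blast
  then have "(\<Sum>i<n. a i * cs i p) \<noteq> 0" using assms(2) by simp
  then obtain j where "j \<in> {..<n}" "a j * cs j p \<noteq> 0" by (rule sum.not_neutral_contains_not_neutral)
  then show ?thesis by auto
qed

lemma qC_dvd:
  assumes fs: "\<forall>i<n. finite_supp (cs i)" and i: "i < n" and p: "cs i p \<noteq> 0"
  shows "[:-fst p, 1:] ^ Suc (snd p) dvd qC (dspan n cs)"
proof -
  let ?C = "dspan n cs"
  have finSP: "finite (supp_points ?C)"
  proof -
    have "supp_points ?C \<subseteq> (\<Union>j<n. fst ` {p. cs j p \<noteq> 0})"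
    proof
      fix l assume "l \<in> supp_points ?C"
      then obtain c m where "c \<in> ?C" "c (l, m) \<noteq> 0" unfolding supp_points_def by blast
      then obtain j where "j < n" "cs j (l, m) \<noteq> 0" using dspan_nonzero by blast
      then show "l \<in> (\<Union>j<n. fst ` {p. cs j p \<noteq> 0})" by force
    qed
    moreover have "finite (\<Union>j<n. fst ` {p. cs j p \<noteq> 0})" using fs unfolding finite_supp_def by auto
    ultimately show ?thesis using finite_subset by blast
  qed
  have ci: "cs i \<in> ?C" by (rule dspan_mem[OF i])
  have lin: "fst p \<in> supp_points ?C"
    unfolding supp_points_def using ci p by (cases p) auto
  have finM: "finite {m. \<exists>c\<in>?C. c (fst p, m) \<noteq> 0}"
  proof -
    have "{m. \<exists>c\<in>?C. c (fst p, m) \<noteq> 0} \<subseteq> (\<Union>j<n. snd ` {p. cs j p \<noteq> 0})"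
    proof
      fix m assume "m \<in> {m. \<exists>c\<in>?C. c (fst p, m) \<noteq> 0}"
      then obtain c where "c \<in> ?C" "c (fst p, m) \<noteq> 0" by blast
      then obtain j where "j < n" "cs j (fst p, m) \<noteq> 0" using dspan_nonzero by blast
      then show "m \<in> (\<Union>j<n. snd ` {p. cs j p \<noteq> 0})" by force
    qed
    moreover have "finite (\<Union>j<n. snd ` {p. cs j p \<noteq> 0})" using fs unfolding finite_supp_def by auto
    ultimately show ?thesis using finite_subset by blast
  qed
  have "snd p \<le> max_order ?C (fst p)"
    unfolding max_order_def by (rule Max_ge[OF finM]) (use ci p in \<open>cases p, auto\<close>)
  then have "[:-fst p, 1:] ^ Suc (snd p) dvd [:-fst p, 1:] ^ (max_order ?C (fst p) + 1)"
    by (intro le_imp_power_dvd) simp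
  also have "\<dots> dvd qC ?C"
    unfolding qC_def by (rule dvd_prodI[OF finSP lin])
  finally show ?thesis .
qed

lemma qC_kernel:
  assumes fs: "\<forall>i<n. finite_supp (cs i)" and i: "i < n"
  shows "poly_diff (qC (dspan n cs)) (cexp cs i) x = 0"
proof -
  have fi: "finite_supp (cs i)" using fs i by simp
  have "poly_diff (qC (dspan n cs)) (cexp cs i) x = dapp (cs i) (\<lambda>z. poly (qC (dspan n cs)) z * exp (x * z))"
    unfolding cexp_def by (rule poly_diff_cexp[OF fi])
  also have "\<dots> = 0"
    unfolding dapp_def
  proof (rule sum.neutral, intro ballI)
    fix p assume "p \<in> {p. cs i p \<noteq> 0}"
    then have "(deriv ^^ snd p) (\<lambda>z. poly (qC (dspan n cs)) z * exp (x * z)) (fst p) = 0"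
      by (intro hd_root_vanish[OF qC_dvd[OF fs i]]) (auto intro!: holomorphic_intros)
    then show "cs i p * (deriv ^^ snd p) (\<lambda>z. poly (qC (dspan n cs)) z * exp (x * z)) (fst p) = 0" by simp
  qed
  finally show ?thesis .
qed

definition wmat :: "nat \<Rightarrow> (nat \<Rightarrow> complex \<Rightarrow> complex) \<Rightarrow> complex \<Rightarrow> complex Matrix.mat" where
  "wmat k fs x = Matrix.mat k k (\<lambda>(i, j). (deriv ^^ i) (fs j) x)"

lemma wmat_carrier: "wmat k fs x \<in> carrier_mat k k"
  unfolding wmat_def by simp

lemma wronsk_det: "wronsk k fs x = Determinant.det (wmat k fs x)"
proof -
  have "Determinant.det (wmat k fs x) = (\<Sum>p\<in>{p. p permutes {0..<k}}. of_int (sign p) * (\<Prod>i = 0..<k. wmat k fs x $$ (i, p i)))"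
    unfolding Determinant.det_def by (simp add: wmat_def)
  also have "\<dots> = (\<Sum>p\<in>{p. p permutes {..<k}}. of_int (sign p) * (\<Prod>i<k. (deriv ^^ i) (fs (p i)) x))"
  proof (rule sum.cong)
    show "{p. p permutes {0..<k}} = {p. p permutes {..<k}}" by (simp add: atLeast0LessThan)
  next
    fix p assume "p \<in> {p. p permutes {..<k}}"
    then have p: "p permutes {..<k}" by simp
    have "\<And>i. i < k \<Longrightarrow> p i < k" using permutes_in_image[OF p] by auto
    then show "of_int (sign p) * (\<Prod>i = 0..<k. wmat k fs x $$ (i, p i)) = of_int (sign p) * (\<Prod>i<k. (deriv ^^ i) (fs (p i)) x)"
      by (auto simp: wmat_def atLeast0LessThan intro!: prod.cong)
  qed
  finally show ?thesis unfolding wronsk_def by simp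
qed

lemma wronsk_cong: "(\<And>j. j < k \<Longrightarrow> fs j = gs j) \<Longrightarrow> wronsk k fs x = wronsk k gs x"
proof -
  assume h: "\<And>j. j < k \<Longrightarrow> fs j = gs j"
  show ?thesis unfolding wronsk_def
  proof (rule sum.cong[OF refl])
    fix p assume "p \<in> {p. p permutes {..<k}}"
    then have "\<And>i. i < k \<Longrightarrow> p i < k" using permutes_in_image by fastforce
    then show "of_int (sign p) * (\<Prod>i<k. (deriv ^^ i) (fs (p i)) x) = of_int (sign p) * (\<Prod>i<k. (deriv ^^ i) (gs (p i)) x)"
      using h by (auto intro!: prod.cong)
  qed
qed

definition kap :: "nat \<Rightarrow> (nat \<Rightarrow> complex \<Rightarrow> complex) \<Rightarrow> nat \<Rightarrow> complex \<Rightarrow> complex" where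
  "kap k w l x = (-1) ^ (l + k) * Determinant.det (Matrix.mat k k (\<lambda>(i', j'). (deriv ^^ (if i' < l then i' else Suc i')) (w j') x))"

lemma wronsk_expand:
  "wronsk (Suc k) (\<lambda>j. if j < k then w j else f) x = (\<Sum>l\<le>k. kap k w l x * (deriv ^^ l) f x)"
proof -
  let ?fs = "\<lambda>j. if j < k then w j else f"
  let ?A = "wmat (Suc k) ?fs x"
  have "wronsk (Suc k) ?fs x = Determinant.det ?A" by (rule wronsk_det)
  also have "\<dots> = (\<Sum>i<Suc k. ?A $$ (i, k) * cofactor ?A i k)"
    by (rule laplace_expansion_column[OF wmat_carrier]) simp
  also have "\<dots> = (\<Sum>l\<le>k. kap k w l x * (deriv ^^ l) f x)"
    unfolding lessThan_Suc_atMost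
  proof (rule sum.cong[OF refl])
    fix l assume l: "l \<in> {..k}"
    have md: "mat_delete ?A l k = Matrix.mat k k (\<lambda>(i', j'). (deriv ^^ (if i' < l then i' else Suc i')) (w j') x)"
      by (rule eq_matI) (auto simp: mat_delete_def wmat_def)
    have "?A $$ (l, k) = (deriv ^^ l) f x" using l by (simp add: wmat_def)
    then show "?A $$ (l, k) * cofactor ?A l k = kap k w l x * (deriv ^^ l) f x"
      unfolding cofactor_def md kap_def by (simp add: mult_ac)
  qed
  finally show ?thesis .
qed

lemma isE_det:
  assumes "\<And>i j. i < k \<Longrightarrow> j < k \<Longrightarrow> isE (\<lambda>x. M x i j)"
  shows "isE (\<lambda>x. Determinant.det (Matrix.mat k k (\<lambda>(i, j). M x i j)))"
proof -
  have eq: "(\<lambda>x. Determinant.det (Matrix.mat k k (\<lambda>(i, j). M x i j))) =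
     (\<lambda>x. \<Sum>p\<in>{p. p permutes {0..<k}}. of_int (sign p) * (\<Prod>i\<in>{0..<k}. M x i (p i)))"
  proof
    fix x
    show "Determinant.det (Matrix.mat k k (\<lambda>(i, j). M x i j)) = (\<Sum>p\<in>{p. p permutes {0..<k}}. of_int (sign p) * (\<Prod>i\<in>{0..<k}. M x i (p i)))"
      unfolding Determinant.det_def'[of "Matrix.mat k k (\<lambda>(i, j). M x i j)" k, OF mat_carrier]
    proof (rule sum.cong[OF refl])
      fix p assume "p \<in> {p. p permutes {0..<k}}"
      then have "\<And>i. i < k \<Longrightarrow> p i < k" using permutes_in_image by fastforce
      then show "of_int (sign p) * (\<Prod>i = 0..<k. Matrix.mat k k (\<lambda>(i, j). M x i j) $$ (i, p i)) = of_int (sign p) * (\<Prod>i = 0..<k. M x i (p i))"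
        by (auto intro!: prod.cong)
    qed
  qed
  show ?thesis unfolding eq
  proof (rule isE_sum)
    show "finite {p. p permutes {0..<k}}" by (rule finite_permutations) simp
  next
    fix p assume "p \<in> {p. p permutes {0..<k}}"
    then have "\<And>i. i < k \<Longrightarrow> p i < k" using permutes_in_image by fastforce
    then show "isE (\<lambda>x. of_int (sign p) * (\<Prod>i\<in>{0..<k}. M x i (p i)))"
      by (intro isE_cmult isE_prod) (auto intro: assms)
  qed
qed

lemma isE_kap:
  assumes "\<And>j. j < k \<Longrightarrow> isE (w j)"
  shows "isE (kap k w l)"
proof -
  have "isE (\<lambda>x. Determinant.det (Matrix.mat k k (\<lambda>(i', j'). (deriv ^^ (if i' < l then i' else Suc i')) (w j') x)))"
    by (rule isE_det) (auto intro: isE_hd assms isE_deriv[OF isE_hd])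
  then show ?thesis unfolding kap_def[abs_def] by (rule isE_cmult)
qed

lemma kap_top: "kap k w k x = wronsk k w x"
proof -
  have "(-1::complex) ^ (k + k) = 1" by (simp add: power_add[symmetric] mult_2[symmetric] power_mult)
  moreover have "Matrix.mat k k (\<lambda>(i', j'). (deriv ^^ (if i' < k then i' else Suc i')) (w j') x) = wmat k w x"
    by (rule eq_matI) (auto simp: wmat_def)
  ultimately show ?thesis unfolding kap_def wronsk_det by simp
qed

lemma wronsk_repeat:
  assumes "j0 < k"
  shows "wronsk (Suc k) (\<lambda>j. if j < k then w j else w j0) x = 0"
proof -
  let ?A = "wmat (Suc k) (\<lambda>j. if j < k then w j else w j0) x"
  have "Determinant.det ?A = 0"
  proof (rule det_identical_columns[OF wmat_carrier, of j0 k])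
    show "Matrix.col ?A j0 = Matrix.col ?A k"
      by (rule eq_vecI) (use assms in \<open>auto simp: wmat_def\<close>)
  qed (use assms in auto)
  then show ?thesis by (simp add: wronsk_det)
qed

lemma wronsk_invertible:
  assumes "wronsk n w x \<noteq> 0" "\<And>i. i < n \<Longrightarrow> (\<Sum>l<n. r l * (deriv ^^ l) (w i) x) = 0" "l < n"
  shows "r l = 0"
proof -
  let ?A = "wmat n w x"
  let ?At = "transpose_mat ?A"
  have At: "?At \<in> carrier_mat n n" using wmat_carrier by auto
  have "Determinant.det ?At = Determinant.det ?A" by (rule det_transpose[OF wmat_carrier])
  then have dnz: "Determinant.det ?At \<noteq> 0" using assms(1) by (simp add: wronsk_det)
  let ?v = "vec n r"
  have "?At *\<^sub>v ?v = 0\<^sub>v n"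
  proof (rule eq_vecI)
    fix i assume "i < dim_vec (0\<^sub>v n :: complex vec)"
    then have i: "i < n" by simp
    have "(?At *\<^sub>v ?v) $ i = Matrix.row ?At i \<bullet> ?v" using i by (simp add: wmat_def)
    also have "\<dots> = (\<Sum>l\<in>{0..<n}. (deriv ^^ l) (w i) x * r l)"
      unfolding scalar_prod_def using i by (auto simp: wmat_def intro!: sum.cong)
    also have "\<dots> = 0" using assms(2)[OF i] by (simp add: atLeast0LessThan mult.commute)
    finally show "(?At *\<^sub>v ?v) $ i = 0\<^sub>v n $ i" using i by simp
  qed (simp add: wmat_def)
  moreover have "?v \<in> carrier_vec n" by simp
  moreover have "\<not> (\<exists>v. v \<in> carrier_vec n \<and> v \<noteq> 0\<^sub>v n \<and> ?At *\<^sub>v v = 0\<^sub>v n)"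
    using det_0_iff_vec_prod_zero[OF At] dnz by simp
  ultimately have "?v = 0\<^sub>v n" by blast
  then have "?v $ l = 0" using assms(3) by simp
  then show ?thesis using assms(3) by simp
qed

lemma dep_vectors:
  fixes v :: "nat \<Rightarrow> nat \<Rightarrow> complex"
  shows "\<exists>c. (\<exists>i\<le>m. c i \<noteq> 0) \<and> (\<forall>l<m. (\<Sum>i\<le>m. c i * v i l) = 0)"
proof -
  let ?A = "Matrix.mat (Suc m) (Suc m) (\<lambda>(l, i). if l < m then v i l else 0)"
  have A: "?A \<in> carrier_mat (Suc m) (Suc m)" by simp
  have "Determinant.det ?A = (\<Sum>j<Suc m. ?A $$ (m, j) * cofactor ?A m j)"
    by (rule laplace_expansion_row[OF A]) simp
  also have "\<dots> = 0" by (rule sum.neutral) auto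
  finally have "Determinant.det ?A = 0" .
  then obtain u where u: "u \<in> carrier_vec (Suc m)" "u \<noteq> 0\<^sub>v (Suc m)" "?A *\<^sub>v u = 0\<^sub>v (Suc m)"
    using det_0_iff_vec_prod_zero[OF A] by blast
  have "\<exists>i\<le>m. u $ i \<noteq> 0"
  proof (rule ccontr)
    assume "\<not> (\<exists>i\<le>m. u $ i \<noteq> 0)"
    then have "u = 0\<^sub>v (Suc m)" using u(1) by (intro eq_vecI) (auto simp: less_Suc_eq_le)
    then show False using u(2) by simp
  qed
  moreover have "\<forall>l<m. (\<Sum>i\<le>m. u $ i * v i l) = 0"
  proof (intro allI impI)
    fix l assume l: "l < m"
    have "(?A *\<^sub>v u) $ l = 0" using u(3) l by simp
    moreover have "(?A *\<^sub>v u) $ l = (\<Sum>i\<in>{0..<Suc m}. v i l * u $ i)"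
      using l u(1) by (auto simp: scalar_prod_def intro!: sum.cong)
    ultimately show "(\<Sum>i\<le>m. u $ i * v i l) = 0"
      by (simp add: atLeast0LessThan lessThan_Suc_atMost mult.commute)
  qed
  ultimately show ?thesis by blast
qed

lemma hd_hd: "(deriv ^^ a) ((deriv ^^ b) g) = (deriv ^^ (a + b)) g"
  by (simp add: funpow_add)

lemma ode_unique:
  assumes ah: "\<And>l. l \<le> m \<Longrightarrow> a l holomorphic_on UNIV" and am: "a m x0 \<noteq> 0"
    and gh: "g holomorphic_on UNIV"
    and eq: "\<And>x. (\<Sum>l\<le>m. a l x * (deriv ^^ l) g x) = 0"
    and init: "\<And>l. l < m \<Longrightarrow> (deriv ^^ l) g x0 = 0"
  shows "g x = 0"
proof -
  have all: "(deriv ^^ p) g x0 = 0" for p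
  proof (induction p rule: less_induct)
    case (less p)
    show ?case
    proof (cases "p < m")
      case True
      then show ?thesis by (rule init)
    next
      case False
      define r where "r = p - m"
      have p: "p = m + r" using False r_def by simp
      let ?F = "\<lambda>x. \<Sum>l\<le>m. a l x * (deriv ^^ l) g x"
      have Fz: "?F = (\<lambda>x. 0)" using eq by auto
      have "(deriv ^^ r) ?F x0 = 0" unfolding Fz by (simp add: hd_zero)
      moreover have "(deriv ^^ r) ?F x0 = (\<Sum>l\<le>m. (deriv ^^ r) (\<lambda>x. a l x * (deriv ^^ l) g x) x0)"
        by (rule hd_sum[OF _ _ open_UNIV]) (auto intro!: holomorphic_intros ah holomorphic_higher_deriv gh)
      moreover have "\<dots> = (\<Sum>l\<le>m. \<Sum>s = 0..r. of_nat (r choose s) * (deriv ^^ s) (a l) x0 * (deriv ^^ (r - s + l)) g x0)"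
      proof (rule sum.cong[OF refl])
        fix l assume l: "l \<in> {..m}"
        have "(deriv ^^ r) (\<lambda>x. a l x * (deriv ^^ l) g x) x0 =
          (\<Sum>s = 0..r. of_nat (r choose s) * (deriv ^^ s) (a l) x0 * (deriv ^^ (r - s)) ((deriv ^^ l) g) x0)"
          by (rule higher_deriv_mult[where S=UNIV]) (use l in \<open>auto intro!: ah holomorphic_higher_deriv gh\<close>)
        then show "(deriv ^^ r) (\<lambda>x. a l x * (deriv ^^ l) g x) x0 = (\<Sum>s = 0..r. of_nat (r choose s) * (deriv ^^ s) (a l) x0 * (deriv ^^ (r - s + l)) g x0)"
          by (simp add: hd_hd)
      qed
      moreover have "\<dots> = (\<Sum>l\<le>m. if l = m then a m x0 * (deriv ^^ p) g x0 else 0)"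
      proof (rule sum.cong[OF refl])
        fix l assume l: "l \<in> {..m}"
        show "(\<Sum>s = 0..r. of_nat (r choose s) * (deriv ^^ s) (a l) x0 * (deriv ^^ (r - s + l)) g x0) =
              (if l = m then a m x0 * (deriv ^^ p) g x0 else 0)"
        proof (cases "l = m")
          case True
          have "(\<Sum>s = 0..r. of_nat (r choose s) * (deriv ^^ s) (a l) x0 * (deriv ^^ (r - s + l)) g x0) =
                (\<Sum>s\<in>{0}. of_nat (r choose s) * (deriv ^^ s) (a l) x0 * (deriv ^^ (r - s + l)) g x0)"
          proof (rule sum.mono_neutral_right)
            show "\<forall>s\<in>{0..r} - {0}. of_nat (r choose s) * (deriv ^^ s) (a l) x0 * (deriv ^^ (r - s + l)) g x0 = 0"
            proof
              fix s assume s: "s \<in> {0..r} - {0}"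
              then have "r - s + l < p" using True p by auto
              then show "of_nat (r choose s) * (deriv ^^ s) (a l) x0 * (deriv ^^ (r - s + l)) g x0 = 0"
                using less.IH by simp
            qed
          qed auto
          then show ?thesis using True p by (simp add: add.commute)
        next
          case False
          have "(\<Sum>s = 0..r. of_nat (r choose s) * (deriv ^^ s) (a l) x0 * (deriv ^^ (r - s + l)) g x0) = 0"
          proof (rule sum.neutral, intro ballI)
            fix s assume s: "s \<in> {0..r}"
            then have "r - s + l < p" using False l p by auto
            then show "of_nat (r choose s) * (deriv ^^ s) (a l) x0 * (deriv ^^ (r - s + l)) g x0 = 0"
              using less.IH by simp
          qed
          then show ?thesis using False by simp
        qed
      qed
      moreover have "\<dots> = a m x0 * (deriv ^^ p) g x0" by simp
      ultimately have "a m x0 * (deriv ^^ p) g x0 = 0" by simp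
      then show ?thesis using am by simp
    qed
  qed
  have "g holomorphic_on ball x0 (dist x0 x + 1)" using gh by (rule holomorphic_on_subset) simp
  then show "g x = 0"
    by (rule holomorphic_fun_eq_0_on_ball[where w=x]) (auto intro: all)
qed

lemma ode_dep:
  assumes ah: "\<And>l. l \<le> m \<Longrightarrow> a l holomorphic_on UNIV" and am: "a m x0 \<noteq> 0"
    and gh: "\<And>i. i \<le> m \<Longrightarrow> g i holomorphic_on UNIV"
    and eq: "\<And>i x. i \<le> m \<Longrightarrow> (\<Sum>l\<le>m. a l x * (deriv ^^ l) (g i) x) = 0"
  shows "\<exists>c. (\<exists>i\<le>m. c i \<noteq> 0) \<and> (\<forall>x. (\<Sum>i\<le>m. c i * g i x) = 0)"
proof -
  obtain c where c: "\<exists>i\<le>m. c i \<noteq> 0" "\<forall>l<m. (\<Sum>i\<le>m. c i * (deriv ^^ l) (g i) x0) = 0"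
    using dep_vectors[of m "\<lambda>i l. (deriv ^^ l) (g i) x0"] by blast
  let ?G = "\<lambda>x. \<Sum>i\<le>m. c i * g i x"
  have Gh: "?G holomorphic_on UNIV" by (auto intro!: holomorphic_intros gh)
  have dG: "\<And>l x. (deriv ^^ l) ?G x = (\<Sum>i\<le>m. c i * (deriv ^^ l) (g i) x)"
  proof -
    fix l x
    have "(deriv ^^ l) ?G x = (\<Sum>i\<le>m. (deriv ^^ l) (\<lambda>x. c i * g i x) x)"
      by (rule hd_sum[OF _ _ open_UNIV]) (auto intro!: holomorphic_intros gh)
    also have "\<dots> = (\<Sum>i\<le>m. c i * (deriv ^^ l) (g i) x)"
      by (rule sum.cong[OF refl], rule hd_cmult[OF gh open_UNIV]) auto
    finally show "(deriv ^^ l) ?G x = (\<Sum>i\<le>m. c i * (deriv ^^ l) (g i) x)" .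
  qed
  have e1: "\<And>y. (\<Sum>l\<le>m. a l y * (deriv ^^ l) ?G y) = 0"
  proof -
    fix y
    have "(\<Sum>l\<le>m. a l y * (deriv ^^ l) ?G y) = (\<Sum>l\<le>m. \<Sum>i\<le>m. c i * (a l y * (deriv ^^ l) (g i) y))"
      by (simp add: dG sum_distrib_left mult_ac)
    also have "\<dots> = (\<Sum>i\<le>m. \<Sum>l\<le>m. c i * (a l y * (deriv ^^ l) (g i) y))"
      by (rule sum.swap)
    also have "\<dots> = (\<Sum>i\<le>m. c i * (\<Sum>l\<le>m. a l y * (deriv ^^ l) (g i) y))"
      by (simp add: sum_distrib_left)
    also have "\<dots> = 0" using eq by simp
    finally show "(\<Sum>l\<le>m. a l y * (deriv ^^ l) ?G y) = 0" .
  qed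
  have e2: "\<And>l. l < m \<Longrightarrow> (deriv ^^ l) ?G x0 = 0" using c(2) dG by simp
  have "\<forall>x. ?G x = 0"
    using ode_unique[where m=m and a=a and g="?G", OF ah am Gh e1 e2] by blast
  then show ?thesis using c(1) by blast
qed

lemma finite_supp_lin:
  assumes "finite I" "\<And>i. i \<in> I \<Longrightarrow> finite_supp (cs i)"
  shows "finite_supp (\<lambda>p. \<Sum>i\<in>I. a i * cs i p)"
proof -
  let ?A = "\<Union>i\<in>I. {p. cs i p \<noteq> 0}"
  have finA: "finite ?A" using assms unfolding finite_supp_def by auto
  have sub: "{p. (\<Sum>i\<in>I. a i * cs i p) \<noteq> 0} \<subseteq> ?A"
  proof
    fix p assume "p \<in> {p. (\<Sum>i\<in>I. a i * cs i p) \<noteq> 0}"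
    then have "(\<Sum>i\<in>I. a i * cs i p) \<noteq> 0" by simp
    then obtain i where "i \<in> I" "a i * cs i p \<noteq> 0" by (rule sum.not_neutral_contains_not_neutral)
    then show "p \<in> ?A" by auto
  qed
  show ?thesis unfolding finite_supp_def using finite_subset[OF sub finA] .
qed

lemma wronsk_0: "wronsk 0 fs x = 1"
  unfolding wronsk_def by simp

lemma tau_nonzero:
  assumes fs: "\<forall>i<n. finite_supp (cs i)" and indep: "dlin_indep n cs"
  shows "\<exists>x. tauC n cs x \<noteq> 0"
proof -
  let ?w = "cexp cs"
  have wE: "\<And>j. j < n \<Longrightarrow> isE (?w j)"
    unfolding cexp_def using fs isE_cexp by blast
  have "\<forall>k\<le>n. \<exists>x. wronsk k ?w x \<noteq> 0"
  proof (intro allI impI)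
    fix k assume "k \<le> n"
    then show "\<exists>x. wronsk k ?w x \<noteq> 0"
    proof (induction k)
      case 0
      then show ?case by (simp add: wronsk_0)
    next
      case (Suc k)
      then obtain x0 where x0: "wronsk k ?w x0 \<noteq> 0" by auto
      have kn: "k < n" using Suc.prems by simp
      show ?case
      proof (rule ccontr)
        assume "\<not> (\<exists>x. wronsk (Suc k) ?w x \<noteq> 0)"
        then have W0: "\<And>x. wronsk (Suc k) ?w x = 0" by simp
        have wEk: "\<And>j. j < k \<Longrightarrow> isE (?w j)" using wE kn by simp
        have eqs: "\<And>i x. i \<le> k \<Longrightarrow> (\<Sum>l\<le>k. kap k ?w l x * (deriv ^^ l) (?w i) x) = 0"
        proof -
          fix i x assume i: "i \<le> k"
          have "(\<Sum>l\<le>k. kap k ?w l x * (deriv ^^ l) (?w i) x) = wronsk (Suc k) (\<lambda>j. if j < k then ?w j else ?w i) x"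
            by (rule wronsk_expand[symmetric])
          also have "\<dots> = 0"
          proof (cases "i < k")
            case True
            then show ?thesis by (rule wronsk_repeat)
          next
            case False
            then have "i = k" using i by simp
            then have "wronsk (Suc k) (\<lambda>j. if j < k then ?w j else ?w i) x = wronsk (Suc k) ?w x"
              by (intro wronsk_cong) (auto simp: less_Suc_eq)
            then show ?thesis using W0 by simp
          qed
          finally show "(\<Sum>l\<le>k. kap k ?w l x * (deriv ^^ l) (?w i) x) = 0" .
        qed
        obtain c where c: "\<exists>i\<le>k. c i \<noteq> 0" "\<forall>x. (\<Sum>i\<le>k. c i * ?w i x) = 0"
        proof -
          have "\<exists>c. (\<exists>i\<le>k. c i \<noteq> 0) \<and> (\<forall>x. (\<Sum>i\<le>k. c i * ?w i x) = 0)"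
          proof (rule ode_dep[of k "kap k ?w" x0])
            show "\<And>l. l \<le> k \<Longrightarrow> kap k ?w l holomorphic_on UNIV"
              using isE_holo isE_kap wEk by blast
            show "kap k ?w k x0 \<noteq> 0" using x0 kap_top by simp
            show "\<And>i. i \<le> k \<Longrightarrow> ?w i holomorphic_on UNIV"
              using wE kn isE_holo by (meson le_less_trans)
          qed (rule eqs)
          then show ?thesis using that by blast
        qed
        let ?c = "\<lambda>p. \<Sum>i\<le>k. c i * cs i p"
        have fsk: "\<And>i. i \<in> {..k} \<Longrightarrow> finite_supp (cs i)" using fs kn by auto
        have fc: "finite_supp ?c" by (rule finite_supp_lin) (use fsk in auto)
        have zero: "\<And>p. ?c p = 0"
        proof (rule cexp_inj[OF fc])
          fix x
          have "dapp ?c (\<lambda>z. exp (x * z)) = (\<Sum>i\<le>k. c i * dapp (cs i) (\<lambda>z. exp (x * z)))"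
            by (rule dapp_lin_c) (use fsk in auto)
          also have "\<dots> = 0" using c(2) unfolding cexp_def by simp
          finally show "dapp ?c (\<lambda>z. exp (x * z)) = 0" .
        qed
        let ?a = "\<lambda>i. if i \<le> k then c i else 0"
        have "\<forall>p. (\<Sum>i<n. ?a i * cs i p) = 0"
        proof
          fix p
          have "(\<Sum>i<n. ?a i * cs i p) = (\<Sum>i\<le>k. ?a i * cs i p)"
            by (rule sum.mono_neutral_right) (use kn in auto)
          also have "\<dots> = ?c p" by simp
          finally show "(\<Sum>i<n. ?a i * cs i p) = 0" using zero by simp
        qed
        then have "\<forall>i<n. ?a i = 0" using indep[unfolded dlin_indep_def, THEN spec[of _ ?a]] by blast
        moreover obtain i where i: "i \<le> k" "c i \<noteq> 0" using c(1) by blast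
        moreover have "i < n" using i kn by simp
        ultimately show False by auto
      qed
    qed
  qed
  then show ?thesis unfolding tauC_def by simp
qed

definition bnd :: "nat \<Rightarrow> (nat \<Rightarrow> complex \<Rightarrow> complex) \<Rightarrow> bool" where
  "bnd m a \<longleftrightarrow> (\<forall>j>m. a j = (\<lambda>x. 0))"

definition Eop :: "(nat \<Rightarrow> complex \<Rightarrow> complex) \<Rightarrow> bool" where
  "Eop a \<longleftrightarrow> (\<forall>j. isE (a j))"

definition dop :: "(nat \<Rightarrow> complex \<Rightarrow> complex) \<Rightarrow> nat \<Rightarrow> complex \<Rightarrow> complex" where
  "dop a = (\<lambda>j x. deriv (a j) x + (if j = 0 then 0 else a (j - 1) x))"

lemma opap_mono:
  assumes "bnd m a" "m \<le> M"
  shows "opap M a g x = opap m a g x"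
  unfolding opap_def
  by (rule sum.mono_neutral_right) (use assms in \<open>auto simp: bnd_def\<close>)

lemma deriv_zero_fun: "deriv (\<lambda>x. 0::complex) = (\<lambda>x. 0)"
  using hd_zero[of 1] by simp

lemma Eop_dop': 
  assumes "Eop a" shows "Eop (dop a)"
proof -
  have "\<And>j. isE (dop a j)"
  proof -
    fix j
    have e1: "isE (deriv (a j))" using assms unfolding Eop_def by (simp add: isE_deriv)
    show "isE (dop a j)"
    proof (cases "j = 0")
      case True
      then have "dop a j = (\<lambda>x. deriv (a j) x + 0)" unfolding dop_def by simp
      then show ?thesis using isE_add[OF e1 isE_zero] by simp
    next
      case False
      then have "dop a j = (\<lambda>x. deriv (a j) x + a (j - 1) x)" unfolding dop_def by simp
      moreover have "isE (a (j - 1))" using assms unfolding Eop_def by simp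
      ultimately show ?thesis using isE_add[OF e1] by simp
    qed
  qed
  then show ?thesis unfolding Eop_def by simp
qed

lemma bnd_dop: "bnd m a \<Longrightarrow> bnd (Suc m) (dop a)"
  unfolding bnd_def dop_def by (auto simp: deriv_zero_fun)

lemma dop_top: "bnd m a \<Longrightarrow> dop a (Suc m) = a m"
  unfolding bnd_def dop_def by (auto simp: deriv_zero_fun)

lemma opap_deriv:
  assumes "Eop a" "bnd m a" "g holomorphic_on UNIV"
  shows "((\<lambda>x. opap m a g x) has_field_derivative opap (Suc m) (dop a) g x) (at x)"
proof -
  have ha: "\<And>j. ((a j) has_field_derivative deriv (a j) x) (at x)"
    using assms(1) unfolding Eop_def
    by (meson DERIV_deriv_iff_field_differentiable UNIV_I holomorphic_on_imp_differentiable_at isE_holo open_UNIV)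
  have hg: "\<And>j. ((deriv ^^ j) g has_field_derivative (deriv ^^ Suc j) g x) (at x)"
  proof -
    fix j
    have "(deriv ^^ j) g holomorphic_on UNIV" using assms(3) by (rule entire_hd)
    then have "((deriv ^^ j) g has_field_derivative deriv ((deriv ^^ j) g) x) (at x)"
      by (meson DERIV_deriv_iff_field_differentiable UNIV_I holomorphic_on_imp_differentiable_at open_UNIV)
    then show "((deriv ^^ j) g has_field_derivative (deriv ^^ Suc j) g x) (at x)" by simp
  qed
  have D: "((\<lambda>x. opap m a g x) has_field_derivative
      (\<Sum>j\<le>m. deriv (a j) x * (deriv ^^ j) g x + a j x * (deriv ^^ Suc j) g x)) (at x)"
    unfolding opap_def
    by (rule DERIV_sum) (auto intro!: derivative_eq_intros ha hg)
  have "opap (Suc m) (dop a) g x =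
      (\<Sum>j\<le>Suc m. deriv (a j) x * (deriv ^^ j) g x) + (\<Sum>j\<le>Suc m. (if j = 0 then 0 else a (j - 1) x) * (deriv ^^ j) g x)"
    unfolding opap_def dop_def by (simp add: distrib_right sum.distrib)
  also have "(\<Sum>j\<le>Suc m. deriv (a j) x * (deriv ^^ j) g x) = (\<Sum>j\<le>m. deriv (a j) x * (deriv ^^ j) g x)"
    using assms(2) by (simp add: bnd_def deriv_zero_fun)
  also have "(\<Sum>j\<le>Suc m. (if j = 0 then 0 else a (j - 1) x) * (deriv ^^ j) g x) = (\<Sum>j\<le>m. a j x * (deriv ^^ Suc j) g x)"
    by (subst sum.atMost_Suc_shift) simp
  finally have "opap (Suc m) (dop a) g x = (\<Sum>j\<le>m. deriv (a j) x * (deriv ^^ j) g x + a j x * (deriv ^^ Suc j) g x)"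
    by (simp add: sum.distrib)
  then show ?thesis using D by simp
qed

lemma Eop_dopr: "Eop a \<Longrightarrow> Eop ((dop ^^ r) a)"
  by (induction r) (auto intro: Eop_dop')

lemma bnd_dopr: "bnd m a \<Longrightarrow> bnd (m + r) ((dop ^^ r) a)"
  by (induction r) (auto intro: bnd_dop)

lemma dopr_top: "bnd m a \<Longrightarrow> (dop ^^ r) a (m + r) = a m"
proof (induction r)
  case 0
  then show ?case by simp
next
  case (Suc r)
  have "(dop ^^ Suc r) a (m + Suc r) = dop ((dop ^^ r) a) (Suc (m + r))" by simp
  also have "\<dots> = (dop ^^ r) a (m + r)" by (rule dop_top[OF bnd_dopr[OF Suc.prems]])
  finally show ?case using Suc by simp
qed

lemma opap_hd:
  assumes "Eop a" "bnd m a" "g holomorphic_on UNIV"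
  shows "(deriv ^^ r) (\<lambda>x. opap m a g x) x = opap (m + r) ((dop ^^ r) a) g x"
proof (induction r arbitrary: x)
  case 0
  then show ?case by simp
next
  case (Suc r)
  have feq: "(deriv ^^ r) (\<lambda>x. opap m a g x) = (\<lambda>x. opap (m + r) ((dop ^^ r) a) g x)"
    using Suc.IH by auto
  have "(deriv ^^ Suc r) (\<lambda>x. opap m a g x) x = deriv (\<lambda>x. opap (m + r) ((dop ^^ r) a) g x) x"
    using feq by simp
  also have "\<dots> = opap (Suc (m + r)) (dop ((dop ^^ r) a)) g x"
    by (rule DERIV_imp_deriv, rule opap_deriv[OF Eop_dopr[OF assms(1)] bnd_dopr[OF assms(2)] assms(3)])
  finally show ?case by simp
qed

lemma opap_holo:
  assumes "Eop a" "g holomorphic_on UNIV"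
  shows "(\<lambda>x. opap m a g x) holomorphic_on UNIV"
  unfolding opap_def using assms
  by (auto intro!: holomorphic_intros entire_hd simp: Eop_def isE_holo)

lemma bnd_mono: "bnd m a \<Longrightarrow> m \<le> M \<Longrightarrow> bnd M a"
  unfolding bnd_def by auto

lemma opap_zero_op: "opap m (\<lambda>j x. 0) g x = 0"
  unfolding opap_def by simp

lemma opap_F':
  "opap m (\<lambda>j x. t x * F j x - c x * G j x) g x = t x * opap m F g x - c x * opap m G g x"
  unfolding opap_def by (simp add: algebra_simps sum_distrib_left sum_subtractf)

lemma opap_add_delta:
  assumes "k \<le> M"
  shows "opap M (\<lambda>j. if j = k then (\<lambda>x. A j x + e x) else A j) h x = opap M A h x + e x * (deriv ^^ k) h x"
proof -
  have "opap M (\<lambda>j. if j = k then (\<lambda>x. A j x + e x) else A j) h x =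
        (\<Sum>j\<le>M. A j x * (deriv ^^ j) h x + (if j = k then e x * (deriv ^^ k) h x else 0))"
    unfolding opap_def by (rule sum.cong) (auto simp: algebra_simps)
  also have "\<dots> = opap M A h x + e x * (deriv ^^ k) h x"
    unfolding opap_def sum.distrib using assms by simp
  finally show ?thesis .
qed

lemma pseudo_div:
  assumes Kc: "Eop Kc" "bnd n Kc" "Kc n = tau" "n \<ge> 1"
  shows "Eop F \<Longrightarrow> bnd m F \<Longrightarrow> \<exists>s A mA R. Eop A \<and> bnd mA A \<and> Eop R \<and> (\<forall>j. n \<le> j \<longrightarrow> R j = (\<lambda>x. 0)) \<and> bnd m R \<and>
     (\<forall>g x. g holomorphic_on UNIV \<longrightarrow> tau x ^ s * opap m F g x = opap mA A (\<lambda>y. opap n Kc g y) x + opap m R g x)"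
proof (induction m arbitrary: F rule: less_induct)
  case (less m)
  show ?case
  proof (cases "m < n")
    case True
    have "\<forall>j. n \<le> j \<longrightarrow> F j = (\<lambda>x. 0)" using less.prems(2) True unfolding bnd_def by auto
    moreover have "Eop (\<lambda>j x. 0)" unfolding Eop_def using isE_zero by simp
    moreover have "bnd 0 (\<lambda>j x. 0)" unfolding bnd_def by simp
    ultimately show ?thesis using less.prems
      by (intro exI[of _ 0] exI[of _ "\<lambda>j x. 0"] exI[of _ 0] exI[of _ F]) (simp add: opap_zero_op)
  next
    case False
    then have mn: "n \<le> m" by simp
    have tauE: "isE tau" using Kc(1,3) unfolding Eop_def by metis
    define c where "c = F m"
    have cE: "isE c" using less.prems(1) unfolding Eop_def c_def by simp
    define G where "G = (dop ^^ (m - n)) Kc"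
    have GE: "Eop G" unfolding G_def by (rule Eop_dopr[OF Kc(1)])
    have Gb: "bnd m G" using bnd_dopr[OF Kc(2), of "m - n"] mn unfolding G_def by simp
    have Gtop: "G m = tau" using dopr_top[OF Kc(2), of "m - n"] mn Kc(3) unfolding G_def by simp
    define F' where "F' = (\<lambda>j x. tau x * F j x - c x * G j x)"
    have F'E: "Eop F'"
      using less.prems(1) GE unfolding Eop_def F'_def by (auto intro!: isE_diff isE_mult tauE cE)
    have F'b: "bnd (m - 1) F'"
      unfolding bnd_def
    proof (intro allI impI)
      fix j assume j: "m - 1 < j"
      show "F' j = (\<lambda>x. 0)"
      proof (cases "j = m")
        case True
        then show ?thesis unfolding F'_def c_def using Gtop by (auto simp: fun_eq_iff)
      next
        case False
        then have "m < j" using j by simp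
        then show ?thesis using less.prems(2) Gb unfolding bnd_def F'_def by auto
      qed
    qed
    have m1: "m - 1 < m" using mn Kc(4) by simp
    obtain s A mA R where IH: "Eop A" "bnd mA A" "Eop R" "\<forall>j. n \<le> j \<longrightarrow> R j = (\<lambda>x. 0)" "bnd (m - 1) R"
      "\<forall>g x. g holomorphic_on UNIV \<longrightarrow> tau x ^ s * opap (m - 1) F' g x = opap mA A (\<lambda>y. opap n Kc g y) x + opap (m - 1) R g x"
      using less.IH[OF m1 F'E F'b] by blast
    define mA2 where "mA2 = max mA (m - n)"
    define A2 where "A2 = (\<lambda>j. if j = m - n then (\<lambda>x. A j x + tau x ^ s * c x) else A j)"
    have A2E: "Eop A2"
      using IH(1) unfolding Eop_def A2_def by (auto intro!: isE_add isE_mult isE_power tauE cE)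
    have A2b: "bnd mA2 A2"
      using IH(2) unfolding bnd_def A2_def mA2_def by auto
    have Rb: "bnd m R" using IH(5) by (rule bnd_mono) simp
    have main: "\<forall>g x. g holomorphic_on UNIV \<longrightarrow> tau x ^ Suc s * opap m F g x = opap mA2 A2 (\<lambda>y. opap n Kc g y) x + opap m R g x"
    proof (intro allI impI)
      fix g x assume g: "g holomorphic_on UNIV"
      let ?h = "\<lambda>y. opap n Kc g y"
      have hd: "opap m G g x = (deriv ^^ (m - n)) ?h x"
        using opap_hd[OF Kc(1,2) g, of "m - n" x] mn unfolding G_def by simp
      have "opap (m - 1) F' g x = opap m F' g x"
        by (rule opap_mono[OF F'b, symmetric]) simp
      also have "\<dots> = tau x * opap m F g x - c x * (deriv ^^ (m - n)) ?h x"
        unfolding F'_def opap_F' hd ..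
      finally have e1: "opap (m - 1) F' g x = tau x * opap m F g x - c x * (deriv ^^ (m - n)) ?h x" .
      have e2: "opap mA2 A2 ?h x = opap mA A ?h x + tau x ^ s * c x * (deriv ^^ (m - n)) ?h x"
      proof -
        have "opap mA2 A2 ?h x = opap mA2 A ?h x + tau x ^ s * c x * (deriv ^^ (m - n)) ?h x"
          unfolding A2_def by (rule opap_add_delta) (simp add: mA2_def)
        moreover have "opap mA2 A ?h x = opap mA A ?h x"
          by (rule opap_mono[OF IH(2)]) (simp add: mA2_def)
        ultimately show ?thesis by simp
      qed
      have e3: "opap (m - 1) R g x = opap m R g x"
        by (rule opap_mono[OF IH(5), symmetric]) simp
      have "tau x ^ Suc s * opap m F g x = tau x ^ s * (tau x * opap m F g x)" by simp
      also have "\<dots> = tau x ^ s * (opap (m - 1) F' g x + c x * (deriv ^^ (m - n)) ?h x)"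
        using e1 by simp
      also have "\<dots> = opap mA A ?h x + opap (m - 1) R g x + tau x ^ s * c x * (deriv ^^ (m - n)) ?h x"
        using IH(6) g by (simp add: algebra_simps)
      also have "\<dots> = opap mA2 A2 ?h x + opap m R g x"
        using e2 e3 by simp
      finally show "tau x ^ Suc s * opap m F g x = opap mA2 A2 ?h x + opap m R g x" .
    qed
    show ?thesis using A2E A2b IH(3,4) Rb main by blast
  qed
qed

definition Kco :: "nat \<Rightarrow> (nat \<Rightarrow> distr) \<Rightarrow> nat \<Rightarrow> complex \<Rightarrow> complex" where
  "Kco n cs = (\<lambda>j. if j \<le> n then kap n (cexp cs) j else (\<lambda>x. 0))"

lemma KbarC_opap: "KbarC n cs f x = opap n (Kco n cs) f x"
  unfolding KbarC_def wronsk_expand opap_def Kco_def by simp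

lemma cexp_isE: "\<forall>i<n. finite_supp (cs i) \<Longrightarrow> j < n \<Longrightarrow> isE (cexp cs j)"
  unfolding cexp_def using isE_cexp by blast

lemma Kco_Eop: "\<forall>i<n. finite_supp (cs i) \<Longrightarrow> Eop (Kco n cs)"
  unfolding Eop_def Kco_def using isE_kap cexp_isE isE_zero by auto

lemma Kco_bnd: "bnd n (Kco n cs)"
  unfolding bnd_def Kco_def by auto

lemma Kco_top: "Kco n cs n = tauC n cs"
  unfolding Kco_def tauC_def by (auto simp: kap_top fun_eq_iff)

lemma tauC_isE: "\<forall>i<n. finite_supp (cs i) \<Longrightarrow> isE (tauC n cs)"
  using Kco_Eop Kco_top unfolding Eop_def by metis

lemma Kbar_exists:
  assumes "\<forall>i<n. finite_supp (cs i)"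
  shows "\<exists>Kb. represents_Kbar n cs Kb"
proof -
  obtain L where L: "finite_supp L" "\<forall>f x. peop_apply L f x = opap n (Kco n cs) f x"
    using opap_to_peop[of n "Kco n cs"] Kco_Eop[OF assms] unfolding Eop_def by blast
  then show ?thesis unfolding represents_Kbar_def by (auto simp: KbarC_opap)
qed

lemma Kbar_kills: "j < n \<Longrightarrow> opap n (Kco n cs) (cexp cs j) x = 0"
  unfolding KbarC_opap[symmetric] KbarC_def by (rule wronsk_repeat)

lemma powder:
  assumes "isE t" "r \<le> M"
  shows "\<exists>rho. isE rho \<and> (\<forall>x. (deriv ^^ r) (\<lambda>x. t x ^ M) x = t x ^ (M - r) * rho x)"
  using assms(2)
proof (induction r)
  case 0
  show ?case by (intro exI[of _ "\<lambda>x. 1"]) (auto intro: isE_const)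
next
  case (Suc r)
  then obtain rho where rho: "isE rho" "\<forall>x. (deriv ^^ r) (\<lambda>x. t x ^ M) x = t x ^ (M - r) * rho x" by auto
  define k where "k = M - r"
  have k: "k = Suc (M - Suc r)" using Suc.prems unfolding k_def by simp
  have ht: "\<And>x. (t has_field_derivative deriv t x) (at x)"
    using isE_holo[OF assms(1)]
    by (meson DERIV_deriv_iff_field_differentiable UNIV_I holomorphic_on_imp_differentiable_at open_UNIV)
  have hr: "\<And>x. (rho has_field_derivative deriv rho x) (at x)"
    using isE_holo[OF rho(1)]
    by (meson DERIV_deriv_iff_field_differentiable UNIV_I holomorphic_on_imp_differentiable_at open_UNIV)
  define rho' where "rho' = (\<lambda>x. of_nat k * deriv t x * rho x + t x * deriv rho x)"
  have rE: "isE rho'" unfolding rho'_def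
    by (intro isE_add isE_mult isE_const isE_deriv assms(1) rho(1))
  have "\<forall>x. (deriv ^^ Suc r) (\<lambda>x. t x ^ M) x = t x ^ (M - Suc r) * rho' x"
  proof
    fix x
    have "(deriv ^^ Suc r) (\<lambda>x. t x ^ M) x = deriv (\<lambda>x. t x ^ k * rho x) x"
    proof -
      have "(deriv ^^ r) (\<lambda>x. t x ^ M) = (\<lambda>x. t x ^ k * rho x)" using rho(2) unfolding k_def by auto
      then show ?thesis by simp
    qed
    also have "\<dots> = of_nat k * (deriv t x * t x ^ (k - Suc 0)) * rho x + t x ^ k * deriv rho x"
      by (rule DERIV_imp_deriv) (auto intro!: derivative_eq_intros ht hr)
    also have "\<dots> = t x ^ (M - Suc r) * rho' x"
      unfolding rho'_def k by (simp add: algebra_simps)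
    finally show "(deriv ^^ Suc r) (\<lambda>x. t x ^ M) x = t x ^ (M - Suc r) * rho' x" .
  qed
  then show ?case using rE by blast
qed

lemma opap_zero_fun: "opap m A (\<lambda>y. 0) x = 0"
  unfolding opap_def by (simp add: hd_zero)

lemma opap_cong: "(\<And>j. (deriv ^^ j) g x = (deriv ^^ j) h x) \<Longrightarrow> opap m A g x = opap m A h x"
  unfolding opap_def by simp

lemma Qb_identity:
  assumes tE: "isE t" and AE: "Eop A"
    and rho: "\<And>r. r \<le> M \<Longrightarrow> (\<forall>x. (deriv ^^ r) (\<lambda>x. t x ^ M) x = t x ^ (M - r) * rho r x)"
    and M: "M = mA + s + 1"
    and h: "h holomorphic_on S" "open S" "x \<in> S"
  shows "t x ^ s * opap mA (\<lambda>l x. \<Sum>j\<le>mA. A j x * of_nat (j choose l) * (if l \<le> j then t x ^ (M - (j - l) - s) * rho (j - l) x else 0)) h x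
       = opap mA A (\<lambda>y. t y ^ M * h y) x"
proof -
  let ?c = "\<lambda>j l. A j x * of_nat (j choose l) * (if l \<le> j then t x ^ (M - (j - l)) * rho (j - l) x else 0)"
  have th: "(\<lambda>y. t y ^ M) holomorphic_on S"
    using isE_holo[OF tE] by (auto intro!: holomorphic_intros intro: holomorphic_on_subset)
  have perj: "\<And>j. j \<le> mA \<Longrightarrow> A j x * (deriv ^^ j) (\<lambda>y. t y ^ M * h y) x = (\<Sum>l\<le>mA. ?c j l * (deriv ^^ l) h x)"
  proof -
    fix j assume j: "j \<le> mA"
    have "(deriv ^^ j) (\<lambda>y. t y ^ M * h y) x = (deriv ^^ j) (\<lambda>y. h y * t y ^ M) x"
      by (simp add: mult.commute)
    also have "\<dots> = (\<Sum>l = 0..j. of_nat (j choose l) * (deriv ^^ l) h x * (deriv ^^ (j - l)) (\<lambda>y. t y ^ M) x)"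
      by (rule higher_deriv_mult[OF h(1) th h(2,3)])
    also have "\<dots> = (\<Sum>l = 0..j. of_nat (j choose l) * (deriv ^^ l) h x * (t x ^ (M - (j - l)) * rho (j - l) x))"
    proof (rule sum.cong[OF refl])
      fix l assume "l \<in> {0..j}"
      then have "j - l \<le> M" using j M by simp
      then show "of_nat (j choose l) * (deriv ^^ l) h x * (deriv ^^ (j - l)) (\<lambda>y. t y ^ M) x =
                 of_nat (j choose l) * (deriv ^^ l) h x * (t x ^ (M - (j - l)) * rho (j - l) x)"
        using rho by simp
    qed
    finally have e: "A j x * (deriv ^^ j) (\<lambda>y. t y ^ M * h y) x = (\<Sum>l = 0..j. ?c j l * (deriv ^^ l) h x)"
      by (simp add: sum_distrib_left mult_ac)
    have "(\<Sum>l\<le>mA. ?c j l * (deriv ^^ l) h x) = (\<Sum>l = 0..j. ?c j l * (deriv ^^ l) h x)"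
      by (rule sum.mono_neutral_right) (use j in auto)
    then show "A j x * (deriv ^^ j) (\<lambda>y. t y ^ M * h y) x = (\<Sum>l\<le>mA. ?c j l * (deriv ^^ l) h x)"
      using e by simp
  qed
  have "opap mA A (\<lambda>y. t y ^ M * h y) x = (\<Sum>j\<le>mA. \<Sum>l\<le>mA. ?c j l * (deriv ^^ l) h x)"
    unfolding opap_def by (rule sum.cong[OF refl]) (use perj in auto)
  also have "\<dots> = (\<Sum>l\<le>mA. \<Sum>j\<le>mA. ?c j l * (deriv ^^ l) h x)"
    by (rule sum.swap)
  also have "\<dots> = (\<Sum>l\<le>mA. (\<Sum>j\<le>mA. ?c j l) * (deriv ^^ l) h x)"
    by (simp add: sum_distrib_right)
  also have "\<dots> = t x ^ s * opap mA (\<lambda>l x. \<Sum>j\<le>mA. A j x * of_nat (j choose l) * (if l \<le> j then t x ^ (M - (j - l) - s) * rho (j - l) x else 0)) h x"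
    unfolding opap_def sum_distrib_left
  proof (rule sum.cong[OF refl])
    fix l assume l: "l \<in> {..mA}"
    have "(\<Sum>j\<le>mA. ?c j l) = t x ^ s * (\<Sum>j\<le>mA. A j x * of_nat (j choose l) * (if l \<le> j then t x ^ (M - (j - l) - s) * rho (j - l) x else 0))"
      unfolding sum_distrib_left
    proof (rule sum.cong[OF refl])
      fix j assume j: "j \<in> {..mA}"
      have "M - (j - l) = s + (M - (j - l) - s)" using j M by auto
      then have pw: "t x ^ (M - (j - l)) = t x ^ s * t x ^ (M - (j - l) - s)" by (metis power_add)
      show "?c j l = t x ^ s * (A j x * of_nat (j choose l) * (if l \<le> j then t x ^ (M - (j - l) - s) * rho (j - l) x else 0))"
      proof (cases "l \<le> j")
        case True
        have "?c j l = A j x * of_nat (j choose l) * (t x ^ (M - (j - l)) * rho (j - l) x)"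
          using True by (simp only: if_True)
        also have "\<dots> = A j x * of_nat (j choose l) * (t x ^ s * t x ^ (M - (j - l) - s) * rho (j - l) x)"
          by (simp only: pw)
        also have "\<dots> = t x ^ s * (A j x * of_nat (j choose l) * (t x ^ (M - (j - l) - s) * rho (j - l) x))"
          by (simp only: mult_ac)
        also have "\<dots> = t x ^ s * (A j x * of_nat (j choose l) * (if l \<le> j then t x ^ (M - (j - l) - s) * rho (j - l) x else 0))"
          using True by (simp only: if_True)
        finally show ?thesis .
      next
        case False
        then show ?thesis by simp
      qed
    qed
    then show "(\<Sum>j\<le>mA. ?c j l) * (deriv ^^ l) h x =
      t x ^ s * ((\<Sum>j\<le>mA. A j x * of_nat (j choose l) * (if l \<le> j then t x ^ (M - (j - l) - s) * rho (j - l) x else 0)) * (deriv ^^ l) h x)"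
      by simp
  qed
  finally show ?thesis by simp
qed

lemma fact_exists:
  assumes n1: "n \<ge> 1" and fs: "\<forall>i<n. finite_supp (cs i)" and indep: "dlin_indep n cs"
  shows "\<exists>Q pp. factorization n cs Q pp"
proof -
  let ?q = "qC (dspan n cs)"
  let ?K = "Kco n cs"
  let ?t = "tauC n cs"
  define F where "F = (\<lambda>j (x::complex). coeff ?q j)"
  have FE: "Eop F" unfolding Eop_def F_def using isE_const by simp
  have Fb: "bnd (degree ?q) F" unfolding bnd_def F_def by (auto simp: coeff_eq_0 fun_eq_iff)
  have pdF: "\<And>g x. poly_diff ?q g x = opap (degree ?q) F g x"
    unfolding poly_diff_def opap_def F_def ..
  obtain s A mA R where sA: "Eop A" "bnd mA A" "Eop R" "\<forall>j. n \<le> j \<longrightarrow> R j = (\<lambda>x. 0)" "bnd (degree ?q) R"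
    "\<forall>g x. g holomorphic_on UNIV \<longrightarrow> ?t x ^ s * opap (degree ?q) F g x = opap mA A (\<lambda>y. opap n ?K g y) x + opap (degree ?q) R g x"
    using pseudo_div[OF Kco_Eop[OF fs] Kco_bnd Kco_top n1 FE Fb] by blast
  have tE: "isE ?t" by (rule tauC_isE[OF fs])
  have key: "\<And>g x. g holomorphic_on UNIV \<Longrightarrow> ?t x \<noteq> 0 \<Longrightarrow> ?t x ^ s * poly_diff ?q g x = opap mA A (\<lambda>y. opap n ?K g y) x"
  proof -
    fix g x assume g: "g holomorphic_on UNIV" and tx: "?t x \<noteq> 0"
    let ?M' = "max (degree ?q) n"
    have Rz: "\<And>l. R l x = 0"
    proof -
      fix l
      show "R l x = 0"
      proof (cases "n \<le> l")
        case True
        then show ?thesis using sA(4) by simp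
      next
        case False
        show ?thesis
        proof (rule wronsk_invertible[of n "cexp cs" x "\<lambda>l. R l x" l])
          show "wronsk n (cexp cs) x \<noteq> 0" using tx unfolding tauC_def .
          show "l < n" using False by simp
        next
          fix i assume i: "i < n"
          have wh: "cexp cs i holomorphic_on UNIV" using cexp_isE[OF fs i] isE_holo by blast
          have "?t x ^ s * opap (degree ?q) F (cexp cs i) x = opap mA A (\<lambda>y. opap n ?K (cexp cs i) y) x + opap (degree ?q) R (cexp cs i) x"
            using sA(6) wh by blast
          moreover have "opap (degree ?q) F (cexp cs i) x = 0"
            using qC_kernel[OF fs i] pdF by simp
          moreover have "(\<lambda>y. opap n ?K (cexp cs i) y) = (\<lambda>y. 0)"
            using Kbar_kills[OF i] by auto
          ultimately have z: "opap (degree ?q) R (cexp cs i) x = 0" by (simp add: opap_zero_fun)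
          have "opap (degree ?q) R (cexp cs i) x = opap ?M' R (cexp cs i) x"
            by (rule opap_mono[OF sA(5), symmetric]) simp
          also have "\<dots> = (\<Sum>l<n. R l x * (deriv ^^ l) (cexp cs i) x)"
            unfolding opap_def by (rule sum.mono_neutral_right) (use sA(4) in auto)
          finally show "(\<Sum>l<n. R l x * (deriv ^^ l) (cexp cs i) x) = 0" using z by simp
        qed
      qed
    qed
    have "opap (degree ?q) R g x = 0" unfolding opap_def using Rz by simp
    then show "?t x ^ s * poly_diff ?q g x = opap mA A (\<lambda>y. opap n ?K g y) x"
      using sA(6) g pdF by simp
  qed
  define M where "M = mA + s + 1"
  have "\<forall>r. \<exists>rho. r \<le> M \<longrightarrow> isE rho \<and> (\<forall>x. (deriv ^^ r) (\<lambda>x. ?t x ^ M) x = ?t x ^ (M - r) * rho x)"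
    using powder[OF tE] by blast
  from choice[OF this] obtain rho where rho: "\<And>r. r \<le> M \<Longrightarrow> isE (rho r) \<and> (\<forall>x. (deriv ^^ r) (\<lambda>x. ?t x ^ M) x = ?t x ^ (M - r) * rho r x)"
    by blast
  define Qb where "Qb = (\<lambda>l x. \<Sum>j\<le>mA. A j x * of_nat (j choose l) * (if l \<le> j then ?t x ^ (M - (j - l) - s) * rho (j - l) x else 0))"
  have QbE: "Eop Qb"
    unfolding Eop_def Qb_def
  proof (intro allI isE_sum)
    fix l j assume j: "j \<in> {..mA}"
    show "isE (\<lambda>x. A j x * of_nat (j choose l) * (if l \<le> j then ?t x ^ (M - (j - l) - s) * rho (j - l) x else 0))"
    proof (cases "l \<le> j")
      case True
      have "j - l \<le> M" using j unfolding M_def by auto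
      then have "isE (rho (j - l))" using rho by blast
      then show ?thesis using True sA(1) unfolding Eop_def by (auto intro!: isE_mult isE_const isE_power tE)
    next
      case False
      then show ?thesis using isE_zero by simp
    qed
  qed simp
  obtain Q where Q: "finite_supp Q" "\<forall>f x. peop_apply Q f x = opap mA Qb f x"
    using opap_to_peop[of mA Qb] QbE unfolding Eop_def by blast
  obtain pp where pp: "finite_supp pp" "(\<lambda>x. ?t x ^ M) = pe_fun pp"
    using isE_power[OF tE, of M] unfolding isE_def by blast
  have "factorization n cs Q pp"
    unfolding factorization_def
  proof (intro conjI allI impI)
    show "finite_supp Q" by (rule Q(1))
    show "finite_supp pp" by (rule pp(1))
    obtain x0 where x0: "?t x0 \<noteq> 0" using tau_nonzero[OF fs indep] by blast
    then have "pe_fun pp x0 \<noteq> 0" using pp(2) by (metis power_not_zero)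
    then show "pe_fun pp \<noteq> (\<lambda>x. 0)" by auto
  next
    fix f x
    assume f: "f holomorphic_on UNIV" and px: "pe_fun pp x \<noteq> 0"
    let ?pi = "\<lambda>y. ?t y ^ M"
    have pieq: "pe_fun pp = ?pi" using pp(2) by simp
    have pix: "?pi x \<noteq> 0" using px pieq by simp
    have tx: "?t x \<noteq> 0"
    proof
      assume "?t x = 0"
      then have "?pi x = 0" unfolding M_def by simp
      then show False using pix by simp
    qed
    let ?S = "{y. ?pi y \<noteq> 0}"
    have tholo: "?t holomorphic_on UNIV" using isE_holo[OF tE] .
    have piholo: "?pi holomorphic_on UNIV" by (rule holomorphic_on_power[OF tholo])
    have Sopen: "open ?S"
    proof -
      have "continuous_on UNIV ?pi"
        by (rule holomorphic_on_imp_continuous_on[OF piholo])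
      then show ?thesis by (rule open_Collect_neq[OF _ continuous_on_const])
    qed
    have xS: "x \<in> ?S" using px pieq by simp
    let ?Kf = "\<lambda>y. opap n ?K f y"
    have Kfh: "?Kf holomorphic_on UNIV" by (rule opap_holo[OF Kco_Eop[OF fs] f])
    let ?h = "\<lambda>y. KbarC n cs f y / pe_fun pp y"
    have heq: "?h = (\<lambda>y. ?Kf y / ?pi y)" unfolding pieq KbarC_opap ..
    have hh: "?h holomorphic_on ?S"
      unfolding heq
      by (rule holomorphic_on_divide[OF holomorphic_on_subset[OF Kfh] holomorphic_on_subset[OF piholo]]) auto
    have "?t x ^ s * opap mA Qb ?h x = opap mA A (\<lambda>y. ?pi y * ?h y) x"
      unfolding Qb_def
      by (rule Qb_identity[OF tE sA(1) conjunct2[OF rho] M_def hh Sopen xS])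
    also have "\<dots> = opap mA A ?Kf x"
    proof (rule opap_cong)
      fix j
      have "(deriv ^^ j) (\<lambda>y. ?pi y * ?h y) x = (deriv ^^ j) ?Kf x"
      proof (rule higher_deriv_transform_within_open[OF _ _ Sopen xS])
        show "(\<lambda>y. ?pi y * ?h y) holomorphic_on ?S"
          by (rule holomorphic_on_mult[OF holomorphic_on_subset[OF piholo] hh]) auto
        show "?Kf holomorphic_on ?S" using Kfh by (rule holomorphic_on_subset) auto
        fix y assume "y \<in> ?S"
        then show "?pi y * ?h y = ?Kf y" by (simp add: pieq KbarC_opap)
      qed
      then show "(deriv ^^ j) (\<lambda>y. ?pi y * ?h y) x = (deriv ^^ j) ?Kf x" by simp
    qed
    also have "\<dots> = ?t x ^ s * poly_diff ?q f x"
      by (rule key[OF f tx, symmetric])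
    finally have "opap mA Qb ?h x = poly_diff ?q f x" using tx by simp
    then show "poly_diff ?q f x = peop_apply Q ?h x" using Q(2) by simp
  qed
  then show ?thesis by blast
qed

lemma entire_zero_on_open:
  assumes "g holomorphic_on UNIV" "open U" "x1 \<in> U" "\<And>x. x \<in> U \<Longrightarrow> g x = 0"
  shows "g x = 0"
proof -
  have ev: "eventually (\<lambda>y. g y = 0) (nhds x1)"
    using assms(2,3,4) eventually_nhds_in_open[OF assms(2,3)] by (auto elim: eventually_mono)
  have "\<And>n. (deriv ^^ n) g x1 = 0"
  proof -
    fix n
    have "(deriv ^^ n) g x1 = (deriv ^^ n) (\<lambda>y. 0) x1"
      by (rule higher_deriv_cong_ev[OF ev refl])
    then show "(deriv ^^ n) g x1 = 0" by (simp add: hd_zero)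
  qed
  moreover have "g holomorphic_on ball x1 (dist x1 x + 1)" using assms(1) by (rule holomorphic_on_subset) simp
  ultimately show ?thesis
    using holomorphic_fun_eq_0_on_ball[of g x1 "dist x1 x + 1" x] by simp
qed

lemma entire_mult_zero:
  assumes "f holomorphic_on UNIV" "g holomorphic_on UNIV" "\<And>x. f x * g x = 0" "f x1 \<noteq> 0"
  shows "g x = 0"
proof -
  have "continuous_on UNIV f" using assms(1) by (rule holomorphic_on_imp_continuous_on)
  then have op: "open {x. f x \<noteq> 0}" by (rule open_Collect_neq[OF _ continuous_on_const])
  show ?thesis
    by (rule entire_zero_on_open[OF assms(2) op, of x1]) (use assms(3,4) in auto)
qed

lemma poly_zero_cofinite:
  fixes p :: "complex poly"
  assumes "finite B" "\<And>z. z \<notin> B \<Longrightarrow> poly p z = 0"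
  shows "p = 0"
proof (rule ccontr)
  assume "p \<noteq> 0"
  then have "finite {z. poly p z = 0}" by (rule poly_roots_finite)
  moreover have "UNIV \<subseteq> B \<union> {z. poly p z = 0}" using assms(2) by auto
  ultimately have "finite (UNIV :: complex set)" using assms(1) finite_subset by blast
  then show False using infinite_UNIV_char_0 by blast
qed

lemma Afun_sum:
  assumes "finite I" "\<And>i. i \<in> I \<Longrightarrow> rho i holomorphic_on S" "open S" "z \<in> S"
  shows "Afun k (\<lambda>w. \<Sum>i\<in>I. c i * rho i w) x z = (\<Sum>i\<in>I. c i * Afun k (rho i) x z)"
proof -
  have "\<And>l. (deriv ^^ l) (\<lambda>w. \<Sum>i\<in>I. c i * rho i w) z = (\<Sum>i\<in>I. c i * (deriv ^^ l) (rho i) z)"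
  proof -
    fix l
    have "(deriv ^^ l) (\<lambda>w. \<Sum>i\<in>I. c i * rho i w) z = (\<Sum>i\<in>I. (deriv ^^ l) (\<lambda>w. c i * rho i w) z)"
      by (rule hd_sum[OF assms(1) _ assms(3,4)]) (auto intro!: holomorphic_intros assms(2))
    also have "\<dots> = (\<Sum>i\<in>I. c i * (deriv ^^ l) (rho i) z)"
      by (rule sum.cong[OF refl], rule hd_cmult[OF assms(2) assms(3,4)])
    finally show "(deriv ^^ l) (\<lambda>w. \<Sum>i\<in>I. c i * rho i w) z = (\<Sum>i\<in>I. c i * (deriv ^^ l) (rho i) z)" .
  qed
  then show ?thesis
    unfolding Afun_def by (simp add: sum_distrib_left sum_distrib_right mult_ac sum.swap[of _ "{0..k}"])
qed

lemma opap_exp_mult: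
  assumes "phi holomorphic_on S" "open S" "x \<in> S"
  shows "opap d Qc (\<lambda>y. exp (y * z) * phi y) x =
     exp (x * z) * (\<Sum>j\<le>d. Qc j x * (\<Sum>s = 0..j. of_nat (j choose s) * z ^ s * (deriv ^^ (j - s)) phi x))"
proof -
  have he: "(\<lambda>y. exp (y * z)) holomorphic_on S" by (auto intro!: holomorphic_intros)
  have "\<And>j. (deriv ^^ j) (\<lambda>y. exp (y * z) * phi y) x = exp (x * z) * (\<Sum>s = 0..j. of_nat (j choose s) * z ^ s * (deriv ^^ (j - s)) phi x)"
  proof -
    fix j
    have "(deriv ^^ j) (\<lambda>y. exp (y * z) * phi y) x = (\<Sum>s = 0..j. of_nat (j choose s) * (deriv ^^ s) (\<lambda>y. exp (y * z)) x * (deriv ^^ (j - s)) phi x)"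
      by (rule higher_deriv_mult[OF he assms])
    also have "\<dots> = (\<Sum>s = 0..j. of_nat (j choose s) * (z ^ s * exp (x * z)) * (deriv ^^ (j - s)) phi x)"
    proof (rule sum.cong[OF refl])
      fix s
      have e: "(\<lambda>y. exp (y * z)) = (\<lambda>y. exp (z * y))" by (simp add: mult.commute)
      have "(deriv ^^ s) (\<lambda>y. exp (y * z)) x = (deriv ^^ s) (\<lambda>y. exp (z * y)) x" by (simp only: e)
      also have "\<dots> = z ^ s * exp (z * x)" by (rule hd_exp)
      finally have "(deriv ^^ s) (\<lambda>y. exp (y * z)) x = z ^ s * exp (x * z)" by (simp add: mult.commute)
      then show "of_nat (j choose s) * (deriv ^^ s) (\<lambda>y. exp (y * z)) x * (deriv ^^ (j - s)) phi x =
                 of_nat (j choose s) * (z ^ s * exp (x * z)) * (deriv ^^ (j - s)) phi x" by simp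
    qed
    also have "\<dots> = exp (x * z) * (\<Sum>s = 0..j. of_nat (j choose s) * z ^ s * (deriv ^^ (j - s)) phi x)"
      by (simp add: sum_distrib_left mult_ac)
    finally show "(deriv ^^ j) (\<lambda>y. exp (y * z) * phi y) x = exp (x * z) * (\<Sum>s = 0..j. of_nat (j choose s) * z ^ s * (deriv ^^ (j - s)) phi x)" .
  qed
  then show ?thesis unfolding opap_def by (simp add: sum_distrib_left mult_ac)
qed

fun Nf :: "complex poly \<Rightarrow> nat \<Rightarrow> complex poly \<Rightarrow> complex poly" where
  "Nf q 0 p = p"
| "Nf q (Suc l) p = pderiv (Nf q l p) * q - Polynomial.smult (of_nat (Suc l)) (Nf q l p * pderiv q)"

lemma hd_rat:
  assumes "poly q w \<noteq> 0"
  shows "(deriv ^^ l) (\<lambda>u. poly p u / poly q u) w = poly (Nf q l p) w / (poly q w) ^ Suc l"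
  using assms
proof (induction l arbitrary: w)
  case 0
  then show ?case by simp
next
  case (Suc l)
  let ?S = "{w. poly q w \<noteq> 0}"
  have So: "open ?S" by (rule open_Collect_neq) (auto intro!: continuous_intros)
  have ev0: "\<forall>\<^sub>F u in nhds w. u \<in> ?S" by (rule eventually_nhds_in_open[OF So]) (use Suc.prems in simp)
  have ev: "eventually (\<lambda>u. (deriv ^^ l) (\<lambda>u. poly p u / poly q u) u = poly (Nf q l p) u / (poly q u) ^ Suc l) (nhds w)"
    by (rule eventually_mono[OF ev0]) (use Suc.IH in blast)
  have "(deriv ^^ Suc l) (\<lambda>u. poly p u / poly q u) w = deriv ((deriv ^^ l) (\<lambda>u. poly p u / poly q u)) w"
    by simp
  also have "\<dots> = deriv (\<lambda>u. poly (Nf q l p) u / (poly q u) ^ Suc l) w"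
    by (rule deriv_cong_ev[OF ev refl])
  also have "\<dots> = (poly (pderiv (Nf q l p)) w * poly q w ^ Suc l - poly (Nf q l p) w * (of_nat (Suc l) * (poly (pderiv q) w * poly q w ^ (Suc l - Suc 0)))) / (poly q w ^ Suc l * poly q w ^ Suc l)"
  proof (rule DERIV_imp_deriv)
    have d1: "((\<lambda>u. poly (Nf q l p) u) has_field_derivative poly (pderiv (Nf q l p)) w) (at w)" by (rule poly_DERIV)
    have d2: "((\<lambda>u. poly q u ^ Suc l) has_field_derivative of_nat (Suc l) * (poly (pderiv q) w * poly q w ^ (Suc l - Suc 0))) (at w)"
      by (rule DERIV_power[OF poly_DERIV])
    show "((\<lambda>u. poly (Nf q l p) u / poly q u ^ Suc l) has_field_derivative (poly (pderiv (Nf q l p)) w * poly q w ^ Suc l - poly (Nf q l p) w * (of_nat (Suc l) * (poly (pderiv q) w * poly q w ^ (Suc l - Suc 0)))) / (poly q w ^ Suc l * poly q w ^ Suc l)) (at w)"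
      by (rule DERIV_divide[OF d1 d2]) (use Suc.prems in simp)
  qed
  also have "\<dots> = poly (Nf q (Suc l) p) w / poly q w ^ Suc (Suc l)"
  proof -
    let ?N = "poly (Nf q l p) w" and ?N' = "poly (pderiv (Nf q l p)) w" and ?Q = "poly q w" and ?Q' = "poly (pderiv q) w"
    have e: "poly (Nf q (Suc l) p) w = ?N' * ?Q - of_nat (Suc l) * (?N * ?Q')" by (simp add: poly_mult)
    have qn: "?Q \<noteq> 0" using Suc.prems .
    have "(?N' * ?Q ^ Suc l - ?N * (of_nat (Suc l) * (?Q' * ?Q ^ l))) = ?Q ^ l * (?N' * ?Q - of_nat (Suc l) * (?N * ?Q'))"
      by (simp add: algebra_simps)
    moreover have "?Q ^ Suc l * ?Q ^ Suc l = ?Q ^ l * ?Q ^ Suc (Suc l)" by (simp add: algebra_simps)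
    ultimately show ?thesis using qn e by simp
  qed
  finally show ?case .
qed

definition RatZ :: "(complex \<Rightarrow> complex) \<Rightarrow> bool" where
  "RatZ h \<longleftrightarrow> (\<exists>p c. c \<noteq> 0 \<and> (\<forall>z. poly c z \<noteq> 0 \<longrightarrow> h z = poly p z / poly c z))"

lemma RatZ_const: "RatZ (\<lambda>z. a)"
  unfolding RatZ_def by (rule exI[of _ "[:a:]"], rule exI[of _ 1]) simp

lemma RatZ_poly: "RatZ (\<lambda>z. poly p z)"
  unfolding RatZ_def by (rule exI[of _ p], rule exI[of _ 1]) simp

lemma RatZ_mult:
  assumes "RatZ f" "RatZ g" shows "RatZ (\<lambda>z. f z * g z)"
proof -
  obtain p1 c1 p2 c2 where "c1 \<noteq> 0" "\<forall>z. poly c1 z \<noteq> 0 \<longrightarrow> f z = poly p1 z / poly c1 z"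
    "c2 \<noteq> 0" "\<forall>z. poly c2 z \<noteq> 0 \<longrightarrow> g z = poly p2 z / poly c2 z"
    using assms unfolding RatZ_def by blast
  then show ?thesis unfolding RatZ_def
    by (intro exI[of _ "p1 * p2"] exI[of _ "c1 * c2"]) (auto simp: poly_mult)
qed

lemma RatZ_shift_rat:
  assumes "q \<noteq> 0"
  shows "RatZ (\<lambda>z. (deriv ^^ l) (\<lambda>u. poly p u / poly q u) (z + nu))"
proof -
  let ?s = "[:nu, 1:]"
  have ds: "degree ?s > 0" by simp
  have cnz: "(pcompose q ?s) ^ Suc l \<noteq> 0" using assms pcompose_eq_0_iff[OF ds] by simp
  have "\<forall>z. poly ((pcompose q ?s) ^ Suc l) z \<noteq> 0 \<longrightarrow>
     (deriv ^^ l) (\<lambda>u. poly p u / poly q u) (z + nu) = poly (pcompose (Nf q l p) ?s) z / poly ((pcompose q ?s) ^ Suc l) z"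
  proof (intro allI impI)
    fix z assume "poly ((pcompose q ?s) ^ Suc l) z \<noteq> 0"
    then have qz: "poly q (z + nu) \<noteq> 0" by (simp add: poly_pcompose add.commute)
    show "(deriv ^^ l) (\<lambda>u. poly p u / poly q u) (z + nu) = poly (pcompose (Nf q l p) ?s) z / poly ((pcompose q ?s) ^ Suc l) z"
      using hd_rat[OF qz] by (simp add: poly_pcompose add.commute)
  qed
  then show ?thesis using cnz unfolding RatZ_def by blast
qed

lemma RatZ_common:
  assumes "finite I" "\<And>a. a \<in> I \<Longrightarrow> RatZ (h a)"
  shows "\<exists>c P. c \<noteq> 0 \<and> (\<forall>a\<in>I. \<forall>z. poly c z \<noteq> 0 \<longrightarrow> h a z = poly (P a) z / poly c z)"
  using assms
proof (induction I rule: finite_induct)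
  case empty
  then show ?case by (intro exI[of _ 1]) simp
next
  case (insert a I)
  then obtain c P where cP: "c \<noteq> 0" "\<forall>b\<in>I. \<forall>z. poly c z \<noteq> 0 \<longrightarrow> h b z = poly (P b) z / poly c z" by auto
  obtain p1 c1 where pc1: "c1 \<noteq> 0" "\<forall>z. poly c1 z \<noteq> 0 \<longrightarrow> h a z = poly p1 z / poly c1 z"
    using insert.prems unfolding RatZ_def by blast
  define P' where "P' = (\<lambda>b. if b = a then p1 * c else P b * c1)"
  have "c * c1 \<noteq> 0" using cP(1) pc1(1) by simp
  moreover have "\<forall>b\<in>insert a I. \<forall>z. poly (c * c1) z \<noteq> 0 \<longrightarrow> h b z = poly (P' b) z / poly (c * c1) z"
  proof (intro ballI allI impI)
    fix b z assume b: "b \<in> insert a I" and nz: "poly (c * c1) z \<noteq> 0"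
    then have nz1: "poly c z \<noteq> 0" "poly c1 z \<noteq> 0" by (auto simp: poly_mult)
    show "h b z = poly (P' b) z / poly (c * c1) z"
    proof (cases "b = a")
      case True
      then show ?thesis using pc1(2) nz1 unfolding P'_def by (simp add: poly_mult)
    next
      case False
      then have "b \<in> I" using b by simp
      then show ?thesis using cP(2) nz1 False unfolding P'_def by (simp add: poly_mult)
    qed
  qed
  ultimately show ?case by blast
qed

lemma qC_nonzero: "qC C \<noteq> 0"
proof (cases "finite (supp_points C)")
  case True
  have "\<And>l. [:-l, 1:] ^ (max_order C l + 1) \<noteq> (0::complex poly)"
  proof -
    fix l
    have "[:-l, 1:] \<noteq> (0::complex poly)" by simp
    then show "[:-l, 1:] ^ (max_order C l + 1) \<noteq> (0::complex poly)" by (rule power_not_zero)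
  qed
  then show ?thesis unfolding qC_def using True by (simp only: prod_zero_iff) blast
next
  case False
  then show ?thesis unfolding qC_def by simp
qed

definition tk :: "nat \<times> complex \<times> nat \<Rightarrow> nat" where "tk t = fst t"
definition tmu :: "nat \<times> complex \<times> nat \<Rightarrow> complex" where "tmu t = fst (snd t)"
definition tj :: "nat \<times> complex \<times> nat \<Rightarrow> nat" where "tj t = snd (snd t)"

definition Pfun :: "peop \<Rightarrow> complex \<Rightarrow> complex \<Rightarrow> complex" where
  "Pfun Kb x u = (\<Sum>t\<in>{t. Kb t \<noteq> 0}. Kb t * x ^ tk t * exp (tmu t * x) * u ^ tj t)"

definition rhoj :: "complex poly \<Rightarrow> nat \<Rightarrow> complex \<Rightarrow> complex" where
  "rhoj q j = (\<lambda>u. poly (monom 1 j) u / poly q u)"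

definition Phi :: "peop \<Rightarrow> peop \<Rightarrow> complex poly \<Rightarrow> complex \<Rightarrow> complex \<Rightarrow> complex" where
  "Phi Q Kb q x z = (\<Sum>t\<in>{t. Q t \<noteq> 0}. Q t * z ^ tj t *
      (\<Sum>t'\<in>{t. Kb t \<noteq> 0}. Kb t' * x ^ tk t' * exp (tmu t' * x) * Afun (tk t) (rhoj q (tj t')) x (z + tmu t)))"

definition Tfun :: "peop \<Rightarrow> complex poly \<Rightarrow> complex \<Rightarrow> complex \<Rightarrow> complex" where
  "Tfun Q q z x = (\<Sum>t\<in>{t. Q t \<noteq> 0}. Q t * z ^ tj t * Afun (tk t) (\<lambda>u. 1 / poly q u) x (z + tmu t))"

definition goodz :: "peop \<Rightarrow> complex poly \<Rightarrow> complex \<Rightarrow> bool" where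
  "goodz Q q z \<longleftrightarrow> (\<forall>t. Q t \<noteq> 0 \<longrightarrow> poly q (z + tmu t) \<noteq> 0)"

lemma b_apply_shift:
  "b_apply L F z = (\<Sum>t\<in>{t. L t \<noteq> 0}. L t * z ^ tj t * (deriv ^^ tk t) F (z + tmu t))"
  unfolding b_apply_def
  by (rule sum.cong) (auto simp: hd_shift tk_def tj_def tmu_def split: prod.splits)

lemma peop_apply_split:
  "peop_apply L f x = (\<Sum>t\<in>{t. L t \<noteq> 0}. L t * x ^ tk t * exp (tmu t * x) * (deriv ^^ tj t) f x)"
  unfolding peop_apply_def
  by (rule sum.cong) (auto simp: tk_def tj_def tmu_def split: prod.splits)

lemma qopen: "open {u. poly q u \<noteq> (0::complex)}"
  by (rule open_Collect_neq) (auto intro!: continuous_intros)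

lemma rhoj_holo: "rhoj q j holomorphic_on {u. poly q u \<noteq> 0}"
  unfolding rhoj_def by (auto intro!: holomorphic_intros)

lemma inv_holo: "(\<lambda>u. 1 / poly q u) holomorphic_on {u. poly q u \<noteq> 0}"
  by (auto intro!: holomorphic_intros)

lemma hd_exp_y: "(deriv ^^ j) (\<lambda>y. exp (y * u)) (x::complex) = u ^ j * exp (x * u)"
proof -
  have e: "(\<lambda>y. exp (y * u)) = (\<lambda>y. exp (u * y))" by (simp add: mult.commute)
  have "(deriv ^^ j) (\<lambda>y. exp (y * u)) x = (deriv ^^ j) (\<lambda>y. exp (u * y)) x" by (simp only: e)
  also have "\<dots> = u ^ j * exp (u * x)" by (rule hd_exp)
  finally show ?thesis by (simp add: mult.commute)
qed

lemma Kbar_exp: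
  assumes "represents_Kbar n cs Kb"
  shows "KbarC n cs (\<lambda>y. exp (y * u)) x = Pfun Kb x u * exp (x * u)"
proof -
  have fin: "finite {t. Kb t \<noteq> 0}" using assms unfolding represents_Kbar_def finite_supp_def by blast
  have "KbarC n cs (\<lambda>y. exp (y * u)) x = peop_apply Kb (\<lambda>y. exp (y * u)) x"
  proof -
    have h: "(\<lambda>y. exp (y * u)) holomorphic_on UNIV" by (auto intro!: holomorphic_intros)
    then show ?thesis using assms unfolding represents_Kbar_def by simp
  qed
  also have "\<dots> = Pfun Kb x u * exp (x * u)"
    unfolding peop_apply_split Pfun_def hd_exp_y by (simp add: sum_distrib_left sum_distrib_right mult_ac)
  finally show ?thesis .
qed

lemma L1:
  assumes fin: "finite {t. Kb t \<noteq> 0}" and g: "goodz Q q z"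
  shows "(\<Sum>t\<in>{t. Q t \<noteq> 0}. Q t * z ^ tj t * (deriv ^^ tk t) (\<lambda>u. Pfun Kb x u * exp (x * u) / poly q u) (z + tmu t)) = Phi Q Kb q x z"
  unfolding Phi_def
proof (rule sum.cong[OF refl])
  fix t assume t: "t \<in> {t. Q t \<noteq> 0}"
  let ?S = "{u. poly q u \<noteq> 0}"
  have zS: "z + tmu t \<in> ?S" using g t unfolding goodz_def by blast
  let ?c = "\<lambda>t'. Kb t' * x ^ tk t' * exp (tmu t' * x)"
  let ?rho = "\<lambda>u. \<Sum>t'\<in>{t. Kb t \<noteq> 0}. ?c t' * rhoj q (tj t') u"
  have feq: "(\<lambda>u. Pfun Kb x u * exp (x * u) / poly q u) = (\<lambda>u. exp (x * u) * ?rho u)"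
    unfolding Pfun_def rhoj_def
    by (auto simp: sum_divide_distrib sum_distrib_left sum_distrib_right poly_monom mult_ac fun_eq_iff)
  have rh: "?rho holomorphic_on ?S"
    by (intro holomorphic_on_sum holomorphic_on_mult holomorphic_on_const rhoj_holo)
  have "(deriv ^^ tk t) (\<lambda>u. Pfun Kb x u * exp (x * u) / poly q u) (z + tmu t) = Afun (tk t) ?rho x (z + tmu t)"
    unfolding feq by (rule hd_exp_mult[OF rh qopen zS])
  also have "\<dots> = (\<Sum>t'\<in>{t. Kb t \<noteq> 0}. ?c t' * Afun (tk t) (rhoj q (tj t')) x (z + tmu t))"
    by (rule Afun_sum[OF fin rhoj_holo qopen zS])
  finally show "Q t * z ^ tj t * (deriv ^^ tk t) (\<lambda>u. Pfun Kb x u * exp (x * u) / poly q u) (z + tmu t) =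
     Q t * z ^ tj t * (\<Sum>t'\<in>{t. Kb t \<noteq> 0}. ?c t' * Afun (tk t) (rhoj q (tj t')) x (z + tmu t))" by simp
qed

lemma Tfun_holo: "Tfun Q q z holomorphic_on UNIV"
  unfolding Tfun_def by (intro holomorphic_on_sum holomorphic_on_mult holomorphic_on_const Afun_holo)

lemma Tfun_hd:
  assumes finQ: "finite {t. Q t \<noteq> 0}" and g: "goodz Q q z"
  shows "(deriv ^^ i) (Tfun Q q z) x = (\<Sum>t\<in>{t. Q t \<noteq> 0}. Q t * z ^ tj t * Afun (tk t) (\<lambda>u. u ^ i * (1 / poly q u)) x (z + tmu t))"
proof -
  have "(deriv ^^ i) (Tfun Q q z) x = (\<Sum>t\<in>{t. Q t \<noteq> 0}. (deriv ^^ i) (\<lambda>x. Q t * z ^ tj t * Afun (tk t) (\<lambda>u. 1 / poly q u) x (z + tmu t)) x)"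
    unfolding Tfun_def[abs_def]
    by (rule hd_sum[OF finQ _ open_UNIV]) (intro holomorphic_on_mult holomorphic_on_const Afun_holo, simp)
  also have "\<dots> = (\<Sum>t\<in>{t. Q t \<noteq> 0}. Q t * z ^ tj t * Afun (tk t) (\<lambda>u. u ^ i * (1 / poly q u)) x (z + tmu t))"
  proof (rule sum.cong[OF refl])
    fix t assume t: "t \<in> {t. Q t \<noteq> 0}"
    have zS: "z + tmu t \<in> {u. poly q u \<noteq> 0}" using g t unfolding goodz_def by blast
    have "(deriv ^^ i) (\<lambda>x. Q t * z ^ tj t * Afun (tk t) (\<lambda>u. 1 / poly q u) x (z + tmu t)) x =
          Q t * z ^ tj t * (deriv ^^ i) (\<lambda>x. Afun (tk t) (\<lambda>u. 1 / poly q u) x (z + tmu t)) x"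
      by (rule hd_cmult[OF Afun_holo open_UNIV]) simp
    also have "\<dots> = Q t * z ^ tj t * Afun (tk t) (\<lambda>u. u ^ i * (1 / poly q u)) x (z + tmu t)"
      using Afun_hdx[OF inv_holo qopen zS] by simp
    finally show "(deriv ^^ i) (\<lambda>x. Q t * z ^ tj t * Afun (tk t) (\<lambda>u. 1 / poly q u) x (z + tmu t)) x =
          Q t * z ^ tj t * Afun (tk t) (\<lambda>u. u ^ i * (1 / poly q u)) x (z + tmu t)" .
  qed
  finally show ?thesis .
qed

lemma L2b:
  assumes finQ: "finite {t. Q t \<noteq> 0}" and finK: "finite {t. Kb t \<noteq> 0}" and g: "goodz Q q z"
  shows "peop_apply Kb (Tfun Q q z) x = Phi Q Kb q x z"
proof -
  have "peop_apply Kb (Tfun Q q z) x = (\<Sum>t'\<in>{t. Kb t \<noteq> 0}. Kb t' * x ^ tk t' * exp (tmu t' * x) *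
      (\<Sum>t\<in>{t. Q t \<noteq> 0}. Q t * z ^ tj t * Afun (tk t) (rhoj q (tj t')) x (z + tmu t)))"
    unfolding peop_apply_split Tfun_hd[OF finQ g]
  proof (rule sum.cong[OF refl])
    fix t' 
    have "(\<lambda>u. u ^ tj t' * (1 / poly q u)) = rhoj q (tj t')"
      unfolding rhoj_def by (auto simp: poly_monom)
    then show "Kb t' * x ^ tk t' * exp (tmu t' * x) * (\<Sum>t\<in>{t. Q t \<noteq> 0}. Q t * z ^ tj t * Afun (tk t) (\<lambda>u. u ^ tj t' * (1 / poly q u)) x (z + tmu t)) =
          Kb t' * x ^ tk t' * exp (tmu t' * x) * (\<Sum>t\<in>{t. Q t \<noteq> 0}. Q t * z ^ tj t * Afun (tk t) (rhoj q (tj t')) x (z + tmu t))"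
      by simp
  qed
  also have "\<dots> = (\<Sum>t'\<in>{t. Kb t \<noteq> 0}. \<Sum>t\<in>{t. Q t \<noteq> 0}. Q t * z ^ tj t * (Kb t' * x ^ tk t' * exp (tmu t' * x) * Afun (tk t) (rhoj q (tj t')) x (z + tmu t)))"
    by (simp add: sum_distrib_left mult_ac)
  also have "\<dots> = (\<Sum>t\<in>{t. Q t \<noteq> 0}. \<Sum>t'\<in>{t. Kb t \<noteq> 0}. Q t * z ^ tj t * (Kb t' * x ^ tk t' * exp (tmu t' * x) * Afun (tk t) (rhoj q (tj t')) x (z + tmu t)))"
    by (rule sum.swap)
  also have "\<dots> = Phi Q Kb q x z"
    unfolding Phi_def by (simp add: sum_distrib_left)
  finally show ?thesis .
qed

lemma L2c:
  assumes finQ: "finite {t. Q t \<noteq> 0}" and g: "goodz Q q z"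
  shows "poly_diff q (Tfun Q q z) x = peop_apply Q (\<lambda>y. exp (y * z)) x"
proof -
  have "poly_diff q (Tfun Q q z) x = (\<Sum>i\<le>degree q. coeff q i *
      (\<Sum>t\<in>{t. Q t \<noteq> 0}. Q t * z ^ tj t * Afun (tk t) (\<lambda>u. u ^ i * (1 / poly q u)) x (z + tmu t)))"
    unfolding poly_diff_def Tfun_hd[OF finQ g] ..
  also have "\<dots> = (\<Sum>t\<in>{t. Q t \<noteq> 0}. Q t * z ^ tj t * (\<Sum>i\<le>degree q. coeff q i * Afun (tk t) (\<lambda>u. u ^ i * (1 / poly q u)) x (z + tmu t)))"
    by (simp add: sum_distrib_left sum.swap[of _ "{..degree q}"] mult_ac)
  also have "\<dots> = (\<Sum>t\<in>{t. Q t \<noteq> 0}. Q t * z ^ tj t * (x ^ tk t * exp (x * (z + tmu t))))"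
  proof (rule sum.cong[OF refl])
    fix t assume t: "t \<in> {t. Q t \<noteq> 0}"
    let ?S = "{u. poly q u \<noteq> 0}"
    have zS: "z + tmu t \<in> ?S" using g t unfolding goodz_def by blast
    have "(\<Sum>i\<le>degree q. coeff q i * Afun (tk t) (\<lambda>u. u ^ i * (1 / poly q u)) x (z + tmu t)) =
          Afun (tk t) (\<lambda>u. \<Sum>i\<le>degree q. coeff q i * (u ^ i * (1 / poly q u))) x (z + tmu t)"
      by (rule Afun_sum[symmetric, OF _ _ qopen zS]) (auto intro!: holomorphic_intros)
    also have "\<dots> = Afun (tk t) (\<lambda>u. 1) x (z + tmu t)"
    proof (rule Afun_cong[OF _ _ qopen zS])
      show "(\<lambda>u. \<Sum>i\<le>degree q. coeff q i * (u ^ i * (1 / poly q u))) holomorphic_on ?S"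
        by (auto intro!: holomorphic_intros)
      fix w assume w: "w \<in> ?S"
      have "(\<Sum>i\<le>degree q. coeff q i * (w ^ i * (1 / poly q w))) = (\<Sum>i\<le>degree q. coeff q i * w ^ i) * (1 / poly q w)"
        by (simp add: sum_distrib_right mult_ac sum_divide_distrib)
      also have "(\<Sum>i\<le>degree q. coeff q i * w ^ i) = poly q w" by (simp add: poly_altdef)
      finally show "(\<Sum>i\<le>degree q. coeff q i * (w ^ i * (1 / poly q w))) = 1" using w by simp
    qed simp
    also have "\<dots> = x ^ tk t * exp (x * (z + tmu t))" by (rule Afun_const1)
    finally show "Q t * z ^ tj t * (\<Sum>i\<le>degree q. coeff q i * Afun (tk t) (\<lambda>u. u ^ i * (1 / poly q u)) x (z + tmu t)) =
                  Q t * z ^ tj t * (x ^ tk t * exp (x * (z + tmu t)))" by simp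
  qed
  also have "\<dots> = peop_apply Q (\<lambda>y. exp (y * z)) x"
    unfolding peop_apply_split hd_exp_y
    by (rule sum.cong[OF refl]) (simp add: exp_add distrib_left mult_ac)
  finally show ?thesis .
qed

definition KK :: "peop \<Rightarrow> nat" where
  "KK Q = Max (insert 0 (tk ` {t. Q t \<noteq> 0}))"

definition gfun :: "peop \<Rightarrow> ((nat \<times> complex \<times> nat) \<times> (nat \<times> complex \<times> nat) \<times> nat) \<Rightarrow> complex \<Rightarrow> complex" where
  "gfun Kb a x = (case a of (t, t', i) \<Rightarrow> Kb t' * x ^ tk t' * exp (tmu t' * x) * exp (tmu t * x) * x ^ i)"

definition hfun :: "peop \<Rightarrow> complex poly \<Rightarrow> ((nat \<times> complex \<times> nat) \<times> (nat \<times> complex \<times> nat) \<times> nat) \<Rightarrow> complex \<Rightarrow> complex" where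
  "hfun Q q a z = (case a of (t, t', i) \<Rightarrow>
     (if i \<le> tk t then Q t * z ^ tj t * of_nat (tk t choose i) * (deriv ^^ (tk t - i)) (rhoj q (tj t')) (z + tmu t) else 0))"

definition Iset :: "peop \<Rightarrow> peop \<Rightarrow> ((nat \<times> complex \<times> nat) \<times> (nat \<times> complex \<times> nat) \<times> nat) set" where
  "Iset Q Kb = {t. Q t \<noteq> 0} \<times> ({t. Kb t \<noteq> 0} \<times> {..KK Q})"

lemma KK_ge: "finite {t. Q t \<noteq> 0} \<Longrightarrow> Q t \<noteq> 0 \<Longrightarrow> tk t \<le> KK Q"
  unfolding KK_def by (rule Max_ge) auto

lemma finite_Iset: "finite {t. Q t \<noteq> 0} \<Longrightarrow> finite {t. Kb t \<noteq> 0} \<Longrightarrow> finite (Iset Q Kb)"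
  unfolding Iset_def by auto

lemma isE_gfun: "isE (gfun Kb a)"
proof -
  obtain t t' i where a: "a = (t, t', i)" by (cases a) auto
  show ?thesis unfolding gfun_def a
    by (simp, intro isE_mult isE_const isE_xpow isE_exp)
qed

lemma RatZ_hfun:
  assumes "q \<noteq> 0"
  shows "RatZ (hfun Q q a)"
proof -
  obtain t t' i where a: "a = (t, t', i)" by (cases a) auto
  show ?thesis
  proof (cases "i \<le> tk t")
    case True
    have e: "hfun Q q a = (\<lambda>z. (\<lambda>z. Q t * of_nat (tk t choose i)) z * ((\<lambda>z. poly (monom 1 (tj t)) z) z *
       (\<lambda>z. (deriv ^^ (tk t - i)) (\<lambda>u. poly (monom 1 (tj t')) u / poly q u) (z + tmu t)) z))"
      unfolding hfun_def a rhoj_def using True by (auto simp: poly_monom fun_eq_iff mult_ac)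
    show ?thesis unfolding e
      by (intro RatZ_mult RatZ_const RatZ_poly RatZ_shift_rat assms)
  next
    case False
    then have "hfun Q q a = (\<lambda>z. 0)" unfolding hfun_def a by auto
    then show ?thesis using RatZ_const by simp
  qed
qed

lemma L4:
  assumes finQ: "finite {t. Q t \<noteq> 0}" and finK: "finite {t. Kb t \<noteq> 0}"
  shows "Phi Q Kb q x z = exp (x * z) * (\<Sum>a\<in>Iset Q Kb. gfun Kb a x * hfun Q q a z)"
proof -
  have A: "\<And>t t'. t \<in> {t. Q t \<noteq> 0} \<Longrightarrow> Q t * z ^ tj t * (Kb t' * x ^ tk t' * exp (tmu t' * x) * Afun (tk t) (rhoj q (tj t')) x (z + tmu t)) =
     exp (x * z) * (\<Sum>i\<le>KK Q. gfun Kb (t, t', i) x * hfun Q q (t, t', i) z)"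
  proof -
    fix t t' assume t: "t \<in> {t. Q t \<noteq> 0}"
    have kk: "tk t \<le> KK Q" using KK_ge[OF finQ] t by simp
    let ?F = "\<lambda>i. gfun Kb (t, t', i) x * hfun Q q (t, t', i) z"
    have "(\<Sum>i\<le>KK Q. ?F i) = (\<Sum>i\<le>tk t. ?F i)"
      by (rule sum.mono_neutral_right) (auto simp: kk hfun_def)
    also have "\<dots> = (\<Sum>i = 0..tk t. Kb t' * x ^ tk t' * exp (tmu t' * x) * exp (tmu t * x) * x ^ i *
         (Q t * z ^ tj t * of_nat (tk t choose i) * (deriv ^^ (tk t - i)) (rhoj q (tj t')) (z + tmu t)))"
      by (rule sum.cong) (auto simp: gfun_def hfun_def)
    finally have e1: "(\<Sum>i\<le>KK Q. ?F i) = \<dots>" .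
    have "Q t * z ^ tj t * (Kb t' * x ^ tk t' * exp (tmu t' * x) * Afun (tk t) (rhoj q (tj t')) x (z + tmu t)) =
      (\<Sum>i = 0..tk t. Q t * z ^ tj t * (Kb t' * x ^ tk t' * exp (tmu t' * x) * (of_nat (tk t choose i) * x ^ i * exp (x * (z + tmu t)) * (deriv ^^ (tk t - i)) (rhoj q (tj t')) (z + tmu t))))"
      unfolding Afun_def by (simp add: sum_distrib_left)
    also have "\<dots> = exp (x * z) * (\<Sum>i = 0..tk t. Kb t' * x ^ tk t' * exp (tmu t' * x) * exp (tmu t * x) * x ^ i *
         (Q t * z ^ tj t * of_nat (tk t choose i) * (deriv ^^ (tk t - i)) (rhoj q (tj t')) (z + tmu t)))"
      unfolding sum_distrib_left by (rule sum.cong[OF refl]) (simp add: distrib_left exp_add mult_ac)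
    finally show "Q t * z ^ tj t * (Kb t' * x ^ tk t' * exp (tmu t' * x) * Afun (tk t) (rhoj q (tj t')) x (z + tmu t)) =
     exp (x * z) * (\<Sum>i\<le>KK Q. ?F i)" using e1 by simp
  qed
  have "Phi Q Kb q x z = (\<Sum>t\<in>{t. Q t \<noteq> 0}. \<Sum>t'\<in>{t. Kb t \<noteq> 0}.
      Q t * z ^ tj t * (Kb t' * x ^ tk t' * exp (tmu t' * x) * Afun (tk t) (rhoj q (tj t')) x (z + tmu t)))"
    unfolding Phi_def by (simp add: sum_distrib_left)
  also have "\<dots> = (\<Sum>t\<in>{t. Q t \<noteq> 0}. \<Sum>t'\<in>{t. Kb t \<noteq> 0}. exp (x * z) * (\<Sum>i\<le>KK Q. gfun Kb (t, t', i) x * hfun Q q (t, t', i) z))"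
    using A by (intro sum.cong refl) auto
  also have "\<dots> = exp (x * z) * (\<Sum>t\<in>{t. Q t \<noteq> 0}. \<Sum>t'\<in>{t. Kb t \<noteq> 0}. \<Sum>i\<le>KK Q. gfun Kb (t, t', i) x * hfun Q q (t, t', i) z)"
    by (simp add: sum_distrib_left)
  also have "(\<Sum>t\<in>{t. Q t \<noteq> 0}. \<Sum>t'\<in>{t. Kb t \<noteq> 0}. \<Sum>i\<le>KK Q. gfun Kb (t, t', i) x * hfun Q q (t, t', i) z) =
      (\<Sum>t\<in>{t. Q t \<noteq> 0}. \<Sum>b\<in>{t. Kb t \<noteq> 0} \<times> {..KK Q}. gfun Kb (t, b) x * hfun Q q (t, b) z)"
    by (rule sum.cong[OF refl]) (simp add: sum.cartesian_product)
  also have "\<dots> = (\<Sum>a\<in>Iset Q Kb. gfun Kb a x * hfun Q q a z)"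
    unfolding Iset_def by (simp add: sum.cartesian_product)
  finally show ?thesis .
qed

lemma poly_sum_le:
  fixes p :: "complex poly"
  assumes "degree p \<le> N"
  shows "poly p z = (\<Sum>m\<le>N. coeff p m * z ^ m)"
proof -
  have "poly p z = (\<Sum>m\<le>degree p. coeff p m * z ^ m)" by (simp add: poly_altdef)
  also have "\<dots> = (\<Sum>m\<le>N. coeff p m * z ^ m)"
    by (rule sum.mono_neutral_left) (use assms in \<open>auto simp: coeff_eq_0\<close>)
  finally show ?thesis .
qed

lemma L5:
  fixes c :: "complex poly" and g :: "'b \<Rightarrow> complex \<Rightarrow> complex"
  assumes fin: "finite I" and c: "c \<noteq> 0" and P: "\<forall>a\<in>I. \<forall>z. poly c z \<noteq> 0 \<longrightarrow> h a z = poly (P a) z / poly c z"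
    and N: "degree c \<le> N" "\<And>a. a \<in> I \<Longrightarrow> degree (P a) \<le> N"
    and cz: "poly c z \<noteq> 0"
  shows "((\<Sum>a\<in>I. g a x * h a z) - pif x) * poly c z =
     (\<Sum>m\<le>N. z ^ m * ((\<Sum>a\<in>I. g a x * coeff (P a) m) - pif x * coeff c m))"
proof -
  have e1: "(\<Sum>a\<in>I. g a x * h a z) * poly c z = (\<Sum>a\<in>I. g a x * poly (P a) z)"
    unfolding sum_distrib_right using P cz by (intro sum.cong refl) simp
  have e2: "(\<Sum>a\<in>I. g a x * poly (P a) z) = (\<Sum>m\<le>N. z ^ m * (\<Sum>a\<in>I. g a x * coeff (P a) m))"
  proof -
    have "(\<Sum>a\<in>I. g a x * poly (P a) z) = (\<Sum>a\<in>I. \<Sum>m\<le>N. z ^ m * (g a x * coeff (P a) m))"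
      by (rule sum.cong[OF refl]) (simp add: poly_sum_le[OF N(2)] sum_distrib_left mult_ac)
    also have "\<dots> = (\<Sum>m\<le>N. \<Sum>a\<in>I. z ^ m * (g a x * coeff (P a) m))" by (rule sum.swap)
    also have "\<dots> = (\<Sum>m\<le>N. z ^ m * (\<Sum>a\<in>I. g a x * coeff (P a) m))" by (simp add: sum_distrib_left)
    finally show ?thesis .
  qed
  have e3: "pif x * poly c z = (\<Sum>m\<le>N. z ^ m * (pif x * coeff c m))"
    by (simp add: poly_sum_le[OF N(1)] sum_distrib_left mult_ac)
  show ?thesis
    by (simp only: left_diff_distrib e1 e2 e3 sum_subtractf[symmetric] right_diff_distrib)
qed

lemma sum_single:
  assumes "finite A" "a \<in> A" "\<And>b. b \<in> A \<Longrightarrow> b \<noteq> a \<Longrightarrow> f b = 0"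
  shows "sum f A = f a"
proof -
  have "sum f A = f a + sum f (A - {a})" using sum.remove[OF assms(1,2)] .
  also have "sum f (A - {a}) = 0" by (rule sum.neutral) (use assms(3) in auto)
  finally show ?thesis by simp
qed

lemma Zlem:
  fixes Qc Dm :: "nat \<Rightarrow> complex \<Rightarrow> complex" and pif :: "complex \<Rightarrow> complex" and c :: "complex poly"
  assumes B: "finite B"
    and S: "open S" "x \<in> S" "\<And>y. y \<in> S \<Longrightarrow> pif y \<noteq> 0" "\<And>m. Dm m holomorphic_on S" "pif holomorphic_on S"
    and H: "\<And>z. z \<notin> B \<Longrightarrow> poly c z \<noteq> 0 \<and>
        opap d Qc (\<lambda>y. exp (y * z) * ((1 / poly c z) * (\<Sum>m\<le>M. z ^ m * (Dm m y / pif y)))) x = 0"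
  shows "Qc d x * Dm M x = 0"
proof -
  let ?D = "\<lambda>r m. (deriv ^^ r) (\<lambda>y. Dm m y / pif y) x"
  have hq: "\<And>m. (\<lambda>y. Dm m y / pif y) holomorphic_on S"
    using S by (intro holomorphic_on_divide) auto
  define PP where "PP = (\<Sum>j\<le>d. \<Sum>s\<in>{0..j}. \<Sum>m\<le>M. monom (Qc j x * of_nat (j choose s) * ?D (j - s) m) (s + m))"
  have polyPP: "\<And>z. z \<notin> B \<Longrightarrow> poly PP z = 0"
  proof -
    fix z assume z: "z \<notin> B"
    have cz: "poly c z \<noteq> 0" using H[OF z] by simp
    let ?phi = "\<lambda>y. (1 / poly c z) * (\<Sum>m\<le>M. z ^ m * (Dm m y / pif y))"
    have sh: "(\<lambda>y. \<Sum>m\<le>M. z ^ m * (Dm m y / pif y)) holomorphic_on S"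
      by (rule holomorphic_on_sum, rule holomorphic_on_mult[OF holomorphic_on_const hq])
    have phih: "?phi holomorphic_on S" by (rule holomorphic_on_mult[OF holomorphic_on_const sh])
    have dphi: "\<And>r. (deriv ^^ r) ?phi x = (1 / poly c z) * (\<Sum>m\<le>M. z ^ m * ?D r m)"
    proof -
      fix r
      have "(deriv ^^ r) ?phi x = (1 / poly c z) * (deriv ^^ r) (\<lambda>y. \<Sum>m\<le>M. z ^ m * (Dm m y / pif y)) x"
        by (rule hd_cmult[OF sh S(1,2)])
      also have "(deriv ^^ r) (\<lambda>y. \<Sum>m\<le>M. z ^ m * (Dm m y / pif y)) x = (\<Sum>m\<le>M. z ^ m * ?D r m)"
      proof -
        have "(deriv ^^ r) (\<lambda>y. \<Sum>m\<le>M. z ^ m * (Dm m y / pif y)) x = (\<Sum>m\<le>M. (deriv ^^ r) (\<lambda>y. z ^ m * (Dm m y / pif y)) x)"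
          by (rule hd_sum[OF _ _ S(1,2)], simp, rule holomorphic_on_mult[OF holomorphic_on_const hq])
        also have "\<dots> = (\<Sum>m\<le>M. z ^ m * ?D r m)"
          by (rule sum.cong[OF refl], rule hd_cmult[OF hq S(1,2)])
        finally show ?thesis .
      qed
      finally show "(deriv ^^ r) ?phi x = (1 / poly c z) * (\<Sum>m\<le>M. z ^ m * ?D r m)" .
    qed
    have "0 = opap d Qc (\<lambda>y. exp (y * z) * ?phi y) x" using H[OF z] by simp
    also have "\<dots> = exp (x * z) * (\<Sum>j\<le>d. Qc j x * (\<Sum>s = 0..j. of_nat (j choose s) * z ^ s * (deriv ^^ (j - s)) ?phi x))"
      by (rule opap_exp_mult[OF phih S(1,2)])
    also have "\<dots> = exp (x * z) * (1 / poly c z) * poly PP z"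
    proof -
      have "poly PP z = (\<Sum>j\<le>d. \<Sum>s\<in>{0..j}. \<Sum>m\<le>M. Qc j x * of_nat (j choose s) * ?D (j - s) m * z ^ (s + m))"
        unfolding PP_def by (simp add: poly_sum poly_monom)
      also have "\<dots> = (\<Sum>j\<le>d. Qc j x * (\<Sum>s = 0..j. of_nat (j choose s) * z ^ s * (\<Sum>m\<le>M. z ^ m * ?D (j - s) m)))"
        by (simp add: sum_distrib_left power_add mult_ac)
      finally have e: "poly PP z = \<dots>" .
      show ?thesis unfolding e dphi
        by (simp add: sum_distrib_left mult_ac)
    qed
    finally have "exp (x * z) * (1 / poly c z) * poly PP z = 0" by simp
    then show "poly PP z = 0" using cz by simp
  qed
  have PP0: "PP = 0" by (rule poly_zero_cofinite[OF B polyPP])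
  have "coeff PP (d + M) = (\<Sum>j\<le>d. \<Sum>s\<in>{0..j}. \<Sum>m\<le>M. (if s + m = d + M then Qc j x * of_nat (j choose s) * ?D (j - s) m else 0))"
    unfolding PP_def by (simp add: coeff_sum coeff_monom)
  also have "\<dots> = Qc d x * ?D 0 M"
  proof -
    let ?F = "\<lambda>j s m. (if s + m = d + M then Qc j x * of_nat (j choose s) * ?D (j - s) m else 0)"
    have "(\<Sum>j\<le>d. \<Sum>s\<in>{0..j}. \<Sum>m\<le>M. ?F j s m) = (\<Sum>s\<in>{0..d}. \<Sum>m\<le>M. ?F d s m)"
    proof (rule sum_single)
      fix j assume j: "j \<in> {..d}" "j \<noteq> d"
      show "(\<Sum>s\<in>{0..j}. \<Sum>m\<le>M. ?F j s m) = 0"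
        by (rule sum.neutral, intro ballI sum.neutral) (use j in auto)
    qed auto
    also have "\<dots> = (\<Sum>m\<le>M. ?F d d m)"
    proof (rule sum_single)
      fix s assume s: "s \<in> {0..d}" "s \<noteq> d"
      show "(\<Sum>m\<le>M. ?F d s m) = 0"
        by (rule sum.neutral) (use s in auto)
    qed auto
    also have "\<dots> = ?F d d M"
      by (rule sum_single) auto
    finally show ?thesis by simp
  qed
  finally have "Qc d x * ?D 0 M = 0" using PP0 by simp
  then show ?thesis using S(3)[OF S(2)] by simp
qed

lemma poly_diff_exp: "poly_diff q (\<lambda>y. exp (y * w)) x = poly q w * exp (x * w)"
  unfolding poly_diff_def hd_exp_y by (simp add: poly_altdef sum_distrib_left sum_distrib_right mult_ac)

lemma pcoef_bnd:
  assumes "finite {t. Q t \<noteq> 0}"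
  shows "bnd (Max (insert 0 (tj ` {t. Q t \<noteq> 0}))) (pcoef Q)"
  unfolding bnd_def
proof (intro allI impI)
  fix j assume j: "Max (insert 0 (tj ` {t. Q t \<noteq> 0})) < j"
  have e: "{t. Q t \<noteq> 0 \<and> snd (snd t) = j} = {}"
  proof (rule ccontr)
    assume "{t. Q t \<noteq> 0 \<and> snd (snd t) = j} \<noteq> {}"
    then obtain t where t: "Q t \<noteq> 0" "snd (snd t) = j" by blast
    have "tj t \<le> Max (insert 0 (tj ` {t. Q t \<noteq> 0}))" by (rule Max_ge) (use assms t in auto)
    then show False using t j unfolding tj_def by simp
  qed
  show "pcoef Q j = (\<lambda>x. 0)" by (rule ext) (simp only: pcoef_def e sum.empty)
qed

lemma peop_mQ:
  assumes "finite {t. Q t \<noteq> 0}"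
  shows "peop_apply Q f x = opap (Max (insert 0 (tj ` {t. Q t \<noteq> 0}))) (pcoef Q) f x"
proof (rule peop_opap)
  show "finite_supp Q" using assms unfolding finite_supp_def .
  fix t assume "Q t \<noteq> 0"
  then show "snd (snd t) \<le> Max (insert 0 (tj ` {t. Q t \<noteq> 0}))"
    unfolding tj_def by (intro Max_ge) (use assms in auto)
qed

lemma exists_d:
  assumes fact: "factorization n cs Q pp"
  shows "\<exists>d. pcoef Q d \<noteq> (\<lambda>x. 0) \<and> (\<forall>j>d. pcoef Q j = (\<lambda>x. 0))"
proof -
  have finQ: "finite {t. Q t \<noteq> 0}" using fact unfolding factorization_def finite_supp_def by blast
  define mQ where "mQ = Max (insert 0 (tj ` {t. Q t \<noteq> 0}))"
  have bQ: "bnd mQ (pcoef Q)" unfolding mQ_def by (rule pcoef_bnd[OF finQ])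
  define J where "J = {j. j \<le> mQ \<and> pcoef Q j \<noteq> (\<lambda>x. 0)}"
  have finJ: "finite J" unfolding J_def by auto
  show ?thesis
  proof (cases "J = {}")
    case True
    have allz: "\<And>j. pcoef Q j = (\<lambda>x. 0)"
    proof -
      fix j
      show "pcoef Q j = (\<lambda>x. 0)"
      proof (cases "j \<le> mQ")
        case True
        then have "j \<notin> J" using \<open>J = {}\<close> by simp
        then show ?thesis using True unfolding J_def by simp
      next
        case False
        then show ?thesis using bQ unfolding bnd_def by simp
      qed
    qed
    have pz: "\<And>f x. peop_apply Q f x = 0"
      unfolding peop_mQ[OF finQ] opap_def using allz by simp
    have ppnz: "pe_fun pp \<noteq> (\<lambda>x. 0)" using fact unfolding factorization_def by blast
    have "\<exists>x. pe_fun pp x \<noteq> 0"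
    proof (rule ccontr)
      assume "\<not> (\<exists>x. pe_fun pp x \<noteq> 0)"
      then have "pe_fun pp = (\<lambda>x. 0)" by auto
      then show False using ppnz by simp
    qed
    then obtain x0 where x0: "pe_fun pp x0 \<noteq> 0" by blast
    have qnz: "qC (dspan n cs) \<noteq> 0" by (rule qC_nonzero)
    obtain w0 where w0: "poly (qC (dspan n cs)) w0 \<noteq> 0"
      using poly_zero_cofinite[of "{}" "qC (dspan n cs)"] qnz by blast
    have "poly_diff (qC (dspan n cs)) (\<lambda>y. exp (y * w0)) x0 = peop_apply Q (\<lambda>y. KbarC n cs (\<lambda>y. exp (y * w0)) y / pe_fun pp y) x0"
    proof -
      have hf: "(\<lambda>y. exp (y * w0)) holomorphic_on UNIV" by (auto intro!: holomorphic_intros)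
      then show ?thesis using fact x0 unfolding factorization_def by blast
    qed
    then have "poly (qC (dspan n cs)) w0 * exp (x0 * w0) = 0" using pz poly_diff_exp by simp
    then show ?thesis using w0 by simp
  next
    case False
    define d where "d = Max J"
    have dJ: "d \<in> J" unfolding d_def using finJ False by simp
    have "\<forall>j>d. pcoef Q j = (\<lambda>x. 0)"
    proof (intro allI impI)
      fix j assume j: "d < j"
      show "pcoef Q j = (\<lambda>x. 0)"
      proof (cases "j \<le> mQ")
        case True
        have "j \<notin> J"
        proof
          assume "j \<in> J"
          then have "j \<le> d" unfolding d_def by (rule Max_ge[OF finJ])
          then show False using j by simp
        qed
        then show ?thesis using True unfolding J_def by simp
      next
        case False
        then show ?thesis using bQ unfolding bnd_def by simp
      qed
    qed
    then show ?thesis using dJ unfolding J_def by blast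
  qed
qed

lemma Phi_holo: "(\<lambda>y. Phi Q Kb q y z) holomorphic_on UNIV"
proof -
  have "\<And>t t'. (\<lambda>y. Kb t' * y ^ tk t' * exp (tmu t' * y) * Afun (tk t) (rhoj q (tj t')) y (z + tmu t)) holomorphic_on UNIV"
    by (intro holomorphic_on_mult holomorphic_on_const Afun_holo) (auto intro!: holomorphic_intros)
  then show ?thesis unfolding Phi_def
    by (intro holomorphic_on_sum holomorphic_on_mult[OF holomorphic_on_const])
qed

lemma isE_pcoef:
  assumes "finite_supp L"
  shows "isE (pcoef L j)"
proof -
  have "\<And>t. isE (\<lambda>x. L t * x ^ fst t * exp (fst (snd t) * x))"
    by (intro isE_mult isE_const isE_xpow isE_exp)
  then show ?thesis unfolding pcoef_def[abs_def]
    by (intro isE_sum) (use assms in \<open>auto simp: finite_supp_def\<close>)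
qed

lemma KL:
  assumes fact: "factorization n cs Q pp" and rep: "represents_Kbar n cs Kb"
  shows "\<exists>B. finite B \<and> (\<forall>z. z \<notin> B \<longrightarrow> goodz Q (qC (dspan n cs)) z \<and>
           (\<forall>x. Phi Q Kb (qC (dspan n cs)) x z = pe_fun pp x * exp (x * z)))"
proof -
  define q where "q = qC (dspan n cs)"
  have finQ: "finite {t. Q t \<noteq> 0}" using fact unfolding factorization_def finite_supp_def by blast
  have finpp: "finite_supp pp" using fact unfolding factorization_def by blast
  have ppnz: "pe_fun pp \<noteq> (\<lambda>x. 0)" using fact unfolding factorization_def by blast
  have finK: "finite {t. Kb t \<noteq> 0}" using rep unfolding represents_Kbar_def finite_supp_def by blast
  have qnz: "q \<noteq> 0" unfolding q_def by (rule qC_nonzero)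
  define I where "I = Iset Q Kb"
  have finI: "finite I" unfolding I_def by (rule finite_Iset[OF finQ finK])
  have "\<exists>c P. c \<noteq> 0 \<and> (\<forall>a\<in>I. \<forall>z. poly c z \<noteq> 0 \<longrightarrow> hfun Q q a z = poly (P a) z / poly c z)"
    by (rule RatZ_common[OF finI RatZ_hfun[OF qnz]])
  then obtain c P where cP: "c \<noteq> 0" "\<forall>a\<in>I. \<forall>z. poly c z \<noteq> 0 \<longrightarrow> hfun Q q a z = poly (P a) z / poly c z"
    by blast
  define N where "N = Max (insert (degree c) ((\<lambda>a. degree (P a)) ` I))"
  have N1: "degree c \<le> N" unfolding N_def using finI by simp
  have N2: "\<And>a. a \<in> I \<Longrightarrow> degree (P a) \<le> N" unfolding N_def using finI by simp
  define pif where "pif = pe_fun pp"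
  have pifE: "isE pif" unfolding pif_def by (rule isE_pe_fun[OF finpp])
  have pifh: "pif holomorphic_on UNIV" by (rule isE_holo[OF pifE])
  define Dm where "Dm = (\<lambda>m x. (\<Sum>a\<in>I. gfun Kb a x * coeff (P a) m) - pif x * coeff c m)"
  have DmE: "\<And>m. isE (Dm m)"
  proof -
    fix m
    have "\<And>a. isE (\<lambda>x. gfun Kb a x * coeff (P a) m)" by (rule isE_mult[OF isE_gfun isE_const])
    then have "isE (\<lambda>x. \<Sum>a\<in>I. gfun Kb a x * coeff (P a) m)" by (rule isE_sum[OF finI])
    moreover have "isE (\<lambda>x. pif x * coeff c m)" by (rule isE_mult[OF pifE isE_const])
    ultimately show "isE (Dm m)" unfolding Dm_def by (rule isE_diff)
  qed
  define Bq where "Bq = (\<Union>t\<in>{t. Q t \<noteq> 0}. (\<lambda>r. r - tmu t) ` {r. poly q r = 0})"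
  have finBq: "finite Bq" unfolding Bq_def
    by (intro finite_UN_I finQ finite_imageI poly_roots_finite[OF qnz])
  have goodB: "\<And>z. z \<notin> Bq \<Longrightarrow> goodz Q q z"
  proof -
    fix z assume z: "z \<notin> Bq"
    show "goodz Q q z" unfolding goodz_def
    proof (intro allI impI)
      fix t assume t: "Q t \<noteq> 0"
      show "poly q (z + tmu t) \<noteq> 0"
      proof
        assume "poly q (z + tmu t) = 0"
        then have "z \<in> (\<lambda>r. r - tmu t) ` {r. poly q r = 0}" by (intro image_eqI[of _ _ "z + tmu t"]) auto
        then show False using z t unfolding Bq_def by blast
      qed
    qed
  qed
  define B where "B = Bq \<union> {z. poly c z = 0}"
  have finB: "finite B" unfolding B_def using finBq poly_roots_finite[OF cP(1)] by simp
  have decomp: "\<And>z x. z \<notin> B \<Longrightarrow> ((\<Sum>a\<in>I. gfun Kb a x * hfun Q q a z) - pif x) * poly c z = (\<Sum>m\<le>N. z ^ m * Dm m x)"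
    unfolding Dm_def by (rule L5[OF finI cP N1 N2]) (auto simp: B_def)
  have PhiD: "\<And>x z. Phi Q Kb q x z = exp (x * z) * (\<Sum>a\<in>I. gfun Kb a x * hfun Q q a z)"
    unfolding I_def by (rule L4[OF finQ finK])
  have DmZ: "\<forall>m\<le>N. Dm m = (\<lambda>x. 0)"
  proof (rule ccontr)
    assume nz: "\<not> (\<forall>m\<le>N. Dm m = (\<lambda>x. 0))"
    define Mset where "Mset = {m. m \<le> N \<and> Dm m \<noteq> (\<lambda>x. 0)}"
    have Mne: "Mset \<noteq> {}" using nz unfolding Mset_def by auto
    have Mfin: "finite Mset" unfolding Mset_def by auto
    define M where "M = Max Mset"
    have MM: "M \<in> Mset" unfolding M_def using Mne Mfin by simp
    then have DmM: "Dm M \<noteq> (\<lambda>x. 0)" and MN: "M \<le> N" unfolding Mset_def by auto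
    have above: "\<And>m. M < m \<Longrightarrow> m \<le> N \<Longrightarrow> Dm m = (\<lambda>x. 0)"
    proof (rule ccontr)
      fix m assume m: "M < m" "m \<le> N" "Dm m \<noteq> (\<lambda>x. 0)"
      then have "m \<in> Mset" unfolding Mset_def by simp
      then have "m \<le> M" unfolding M_def by (rule Max_ge[OF Mfin])
      then show False using m by simp
    qed
    obtain d where d: "pcoef Q d \<noteq> (\<lambda>x. 0)" "\<forall>j>d. pcoef Q j = (\<lambda>x. 0)"
      using exists_d[OF fact] by blast
    define mQ where "mQ = Max (insert 0 (tj ` {t. Q t \<noteq> 0}))"
    have bQ: "bnd mQ (pcoef Q)" unfolding mQ_def by (rule pcoef_bnd[OF finQ])
    have bd: "bnd d (pcoef Q)" unfolding bnd_def using d(2) by blast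
    have peop_d: "\<And>f y. peop_apply Q f y = opap d (pcoef Q) f y"
    proof -
      fix f y
      have "peop_apply Q f y = opap mQ (pcoef Q) f y" unfolding mQ_def by (rule peop_mQ[OF finQ])
      also have "\<dots> = opap (max mQ d) (pcoef Q) f y" by (rule opap_mono[OF bQ, symmetric]) simp
      also have "\<dots> = opap d (pcoef Q) f y" by (rule opap_mono[OF bd]) simp
      finally show "peop_apply Q f y = opap d (pcoef Q) f y" .
    qed
    have Zx: "\<And>x. pif x \<noteq> 0 \<Longrightarrow> pcoef Q d x * Dm M x = 0"
    proof -
      fix x assume px: "pif x \<noteq> 0"
      define S where "S = {y. pif y \<noteq> 0}"
      have Sopen: "open S" unfolding S_def
        by (rule open_Collect_neq[OF holomorphic_on_imp_continuous_on[OF pifh] continuous_on_const])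
      have xS: "x \<in> S" using px unfolding S_def by simp
      show "pcoef Q d x * Dm M x = 0"
      proof (rule Zlem[where B=B and S=S and pif=pif and c=c and Dm=Dm and M=M and d=d and Qc="pcoef Q" and x=x])
        show "finite B" by (rule finB)
        show "open S" by (rule Sopen)
        show "x \<in> S" by (rule xS)
        show "\<And>y. y \<in> S \<Longrightarrow> pif y \<noteq> 0" unfolding S_def by simp
        show "\<And>m. Dm m holomorphic_on S" using DmE isE_holo holomorphic_on_subset by blast
        show "pif holomorphic_on S" using pifh holomorphic_on_subset by blast
      next
        fix z assume z: "z \<notin> B"
        have cz: "poly c z \<noteq> 0" using z unfolding B_def by simp
        have gz: "goodz Q q z" using z goodB unfolding B_def by simp
        let ?phi = "\<lambda>y. (1 / poly c z) * (\<Sum>m\<le>M. z ^ m * (Dm m y / pif y))"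
        let ?e = "\<lambda>y. exp (y * z)"
        let ?T = "Tfun Q q z"
        have Th: "?T holomorphic_on UNIV" by (rule Tfun_holo)
        have KT: "\<And>y. KbarC n cs ?T y = Phi Q Kb q y z"
        proof -
          fix y
          have "KbarC n cs ?T y = peop_apply Kb ?T y" using rep Th unfolding represents_Kbar_def by simp
          also have "\<dots> = Phi Q Kb q y z" by (rule L2b[OF finQ finK gz])
          finally show "KbarC n cs ?T y = Phi Q Kb q y z" .
        qed
        have A: "peop_apply Q (\<lambda>y. Phi Q Kb q y z / pif y) x = peop_apply Q ?e x"
        proof -
          have "poly_diff q ?T x = peop_apply Q (\<lambda>y. KbarC n cs ?T y / pe_fun pp y) x"
            using fact Th px unfolding factorization_def q_def pif_def by blast
          moreover have "poly_diff q ?T x = peop_apply Q ?e x" by (rule L2c[OF finQ gz])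
          ultimately show ?thesis unfolding KT pif_def by simp
        qed
        have eqS: "\<And>y. y \<in> S \<Longrightarrow> Phi Q Kb q y z / pif y = ?e y * ?phi y + ?e y"
        proof -
          fix y assume y: "y \<in> S"
          have py: "pif y \<noteq> 0" using y unfolding S_def by simp
          let ?Psi = "\<Sum>a\<in>I. gfun Kb a y * hfun Q q a z"
          have "(?Psi - pif y) * poly c z = (\<Sum>m\<le>N. z ^ m * Dm m y)" by (rule decomp[OF z])
          also have "\<dots> = (\<Sum>m\<le>M. z ^ m * Dm m y)"
            by (rule sum.mono_neutral_right) (use MN above in auto)
          finally have e0: "(?Psi - pif y) * poly c z = (\<Sum>m\<le>M. z ^ m * Dm m y)" .
          have gen1: "\<And>(Ps::complex) Pi C S. C \<noteq> 0 \<Longrightarrow> (Ps - Pi) * C = S \<Longrightarrow> Ps = Pi + S / C"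
            by (simp add: field_simps)
          have "?Psi = pif y + (\<Sum>m\<le>M. z ^ m * Dm m y) / poly c z"
            by (rule gen1[OF cz e0])
          then have "Phi Q Kb q y z = ?e y * (pif y + (\<Sum>m\<le>M. z ^ m * Dm m y) / poly c z)"
            using PhiD by simp
          moreover have sd: "(\<Sum>m\<le>M. z ^ m * (Dm m y / pif y)) = (\<Sum>m\<le>M. z ^ m * Dm m y) / pif y"
            by (simp add: sum_divide_distrib)
          moreover have gen2: "\<And>(E::complex) P S C. P \<noteq> 0 \<Longrightarrow> C \<noteq> 0 \<Longrightarrow> E * (P + S / C) / P = E * ((1 / C) * (S / P)) + E"
            by (simp add: field_simps)
          ultimately show "Phi Q Kb q y z / pif y = ?e y * ?phi y + ?e y"
            using gen2[OF py cz] by simp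
        qed
        have hphi: "?phi holomorphic_on S"
        proof -
          have "\<And>m. (\<lambda>y. Dm m y / pif y) holomorphic_on S"
            by (rule holomorphic_on_divide[OF holomorphic_on_subset[OF isE_holo[OF DmE]] holomorphic_on_subset[OF pifh]])
               (auto simp: S_def)
          then show ?thesis
            by (intro holomorphic_on_mult[OF holomorphic_on_const] holomorphic_on_sum holomorphic_on_mult[OF holomorphic_on_const])
        qed
        have he: "?e holomorphic_on S" by (auto intro!: holomorphic_intros)
        have hPhi: "(\<lambda>y. Phi Q Kb q y z / pif y) holomorphic_on S"
          by (rule holomorphic_on_divide[OF holomorphic_on_subset[OF Phi_holo] holomorphic_on_subset[OF pifh]])
             (auto simp: S_def)
        have lin: "opap d (pcoef Q) (\<lambda>y. Phi Q Kb q y z / pif y) x = opap d (pcoef Q) (\<lambda>y. ?e y * ?phi y) x + opap d (pcoef Q) ?e x"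
        proof -
          have "\<And>j. (deriv ^^ j) (\<lambda>y. Phi Q Kb q y z / pif y) x = (deriv ^^ j) (\<lambda>y. ?e y * ?phi y) x + (deriv ^^ j) ?e x"
          proof -
            fix j
            have "(deriv ^^ j) (\<lambda>y. Phi Q Kb q y z / pif y) x = (deriv ^^ j) (\<lambda>y. ?e y * ?phi y + ?e y) x"
              by (rule higher_deriv_transform_within_open[OF hPhi holomorphic_on_add[OF holomorphic_on_mult[OF he hphi] he] Sopen xS])
                 (rule eqS)
            also have "\<dots> = (deriv ^^ j) (\<lambda>y. ?e y * ?phi y) x + (deriv ^^ j) ?e x"
              by (rule higher_deriv_add[OF holomorphic_on_mult[OF he hphi] he Sopen xS])
            finally show "(deriv ^^ j) (\<lambda>y. Phi Q Kb q y z / pif y) x = (deriv ^^ j) (\<lambda>y. ?e y * ?phi y) x + (deriv ^^ j) ?e x" .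
          qed
          then show ?thesis unfolding opap_def by (simp add: distrib_left sum.distrib)
        qed
        have "opap d (pcoef Q) (\<lambda>y. ?e y * ?phi y) x = 0"
          using lin A peop_d by simp
        then show "poly c z \<noteq> 0 \<and> opap d (pcoef Q) (\<lambda>y. exp (y * z) * ((1 / poly c z) * (\<Sum>m\<le>M. z ^ m * (Dm m y / pif y)))) x = 0"
          using cz by simp
      qed
    qed
    have all0: "\<And>x. pcoef Q d x * (Dm M x * pif x) = 0"
    proof -
      fix x
      show "pcoef Q d x * (Dm M x * pif x) = 0"
        using Zx[of x] by (cases "pif x = 0") auto
    qed
    obtain x1 where x1: "pcoef Q d x1 \<noteq> 0"
    proof -
      have "\<exists>x. pcoef Q d x \<noteq> 0"
      proof (rule ccontr)
        assume "\<not> (\<exists>x. pcoef Q d x \<noteq> 0)"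
        then have "pcoef Q d = (\<lambda>x. 0)" by auto
        then show False using d(1) by simp
      qed
      then show ?thesis using that by blast
    qed
    obtain x2 where x2: "Dm M x2 \<noteq> 0"
    proof -
      have "\<exists>x. Dm M x \<noteq> 0"
      proof (rule ccontr)
        assume "\<not> (\<exists>x. Dm M x \<noteq> 0)"
        then have "Dm M = (\<lambda>x. 0)" by auto
        then show False using DmM by simp
      qed
      then show ?thesis using that by blast
    qed
    have QdE: "pcoef Q d holomorphic_on UNIV"
      by (rule isE_holo[OF isE_pcoef]) (use finQ in \<open>simp add: finite_supp_def\<close>)
    have h2: "(\<lambda>x. Dm M x * pif x) holomorphic_on UNIV"
      by (rule holomorphic_on_mult[OF isE_holo[OF DmE] pifh])
    have s1: "\<And>x. Dm M x * pif x = 0"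
      by (rule entire_mult_zero[OF QdE h2 all0 x1])
    have s2: "\<And>x. pif x = 0"
      by (rule entire_mult_zero[OF isE_holo[OF DmE] pifh s1 x2])
    then have "pe_fun pp = (\<lambda>x. 0)" unfolding pif_def by auto
    then show False using ppnz by simp
  qed
  have "\<forall>z. z \<notin> B \<longrightarrow> goodz Q q z \<and> (\<forall>x. Phi Q Kb q x z = pe_fun pp x * exp (x * z))"
  proof (intro allI impI conjI)
    fix z assume z: "z \<notin> B"
    show "goodz Q q z" using z goodB unfolding B_def by simp
    fix x
    have cz: "poly c z \<noteq> 0" using z unfolding B_def by simp
    have "((\<Sum>a\<in>I. gfun Kb a x * hfun Q q a z) - pif x) * poly c z = 0"
      using decomp[OF z, of x] DmZ by simp
    then have "(\<Sum>a\<in>I. gfun Kb a x * hfun Q q a z) = pif x" using cz by simp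
    then show "Phi Q Kb q x z = pe_fun pp x * exp (x * z)"
      using PhiD unfolding pif_def by (simp add: mult.commute)
  qed
  then have "finite B \<and> (\<forall>z. z \<notin> B \<longrightarrow> goodz Q q z \<and> (\<forall>x. Phi Q Kb q x z = pe_fun pp x * exp (x * z)))"
    using finB by simp
  then show ?thesis unfolding q_def by (rule exI)
qed

lemma psi_formula:
  assumes rep: "represents_Kbar n cs Kb"
  shows "psiC n cs x u = Pfun Kb x u * exp (x * u) / tauC n cs x / u ^ n"
  unfolding psiC_def KC_def Kbar_exp[OF rep] ..

lemma H_eq:
  assumes "u \<noteq> 0"
  shows "u ^ n / Cq * (A / T / u ^ n) = (1 / T) * (A / (Cq::complex))"
  using assms by (cases "Cq = 0"; cases "T = 0") (auto simp: field_simps)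

lemma part3:
  assumes fact: "factorization n cs Q pp" and rep: "represents_Kbar n cs Kb"
  shows "\<exists>F. finite F \<and> (\<forall>x z. z \<notin> F \<longrightarrow> Lambda_hat n cs Kb Q (psiC n cs x) z = pe_fun pp x * psiC n cs x z)"
proof -
  define q where "q = qC (dspan n cs)"
  obtain B where B: "finite B" "\<And>z. z \<notin> B \<Longrightarrow> goodz Q q z \<and> (\<forall>x. Phi Q Kb q x z = pe_fun pp x * exp (x * z))"
    using KL[OF fact rep] unfolding q_def by blast
  have finQ: "finite {t. Q t \<noteq> 0}" using fact unfolding factorization_def finite_supp_def by blast
  have finK: "finite {t. Kb t \<noteq> 0}" using rep unfolding represents_Kbar_def finite_supp_def by blast
  define B0 where "B0 = B \<union> (\<Union>t\<in>{t. Q t \<noteq> 0}. {- tmu t})"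
  have finB0: "finite B0" unfolding B0_def using B(1) finQ by simp
  have closedB0: "closed B0" using finB0 by (rule finite_imp_closed)
  have openG: "open (- B0)" using closedB0 by (simp add: open_Compl)
  define F where "F = {0} \<union> (\<Union>t\<in>{t. Kb t \<noteq> 0}. (\<lambda>b. b - tmu t) ` B0)"
  have finF: "finite F" unfolding F_def using finB0 finK by simp
  have "\<forall>x z. z \<notin> F \<longrightarrow> Lambda_hat n cs Kb Q (psiC n cs x) z = pe_fun pp x * psiC n cs x z"
  proof (intro allI impI)
    fix x z assume zF: "z \<notin> F"
    let ?tau = "tauC n cs x"
    let ?pi = "pe_fun pp x"
    let ?H = "\<lambda>u. u ^ n / poly q u * psiC n cs x u"
    let ?U = "\<lambda>u. Pfun Kb x u * exp (x * u) / poly q u"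
    have Hu: "\<And>u. u \<noteq> 0 \<Longrightarrow> ?H u = (1 / ?tau) * ?U u"
      unfolding psi_formula[OF rep] by (rule H_eq)
    have G1: "\<And>w. w \<notin> B0 \<Longrightarrow> b_apply Q ?H w = (?pi / ?tau) * exp (x * w)"
    proof -
      fix w assume w: "w \<notin> B0"
      have wB: "w \<notin> B" using w unfolding B0_def by simp
      have gw: "goodz Q q w" using B(2)[OF wB] by simp
      have "b_apply Q ?H w = (\<Sum>t\<in>{t. Q t \<noteq> 0}. Q t * w ^ tj t * (deriv ^^ tk t) ?H (w + tmu t))"
        by (rule b_apply_shift)
      also have "\<dots> = (\<Sum>t\<in>{t. Q t \<noteq> 0}. (1 / ?tau) * (Q t * w ^ tj t * (deriv ^^ tk t) ?U (w + tmu t)))"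
      proof (rule sum.cong[OF refl])
        fix t assume t: "t \<in> {t. Q t \<noteq> 0}"
        have nz: "w + tmu t \<noteq> 0"
        proof
          assume "w + tmu t = 0"
          then have "w = - tmu t" by (simp add: eq_neg_iff_add_eq_0)
          moreover have "- tmu t \<in> (\<Union>t\<in>{t. Q t \<noteq> 0}. {- tmu t})" using t by blast
          ultimately show False using w unfolding B0_def by blast
        qed
        have qs: "w + tmu t \<in> {u. poly q u \<noteq> 0}" using gw t unfolding goodz_def by blast
        have ev: "eventually (\<lambda>u. ?H u = (1 / ?tau) * ?U u) (nhds (w + tmu t))"
        proof -
          have "eventually (\<lambda>u. u \<in> {u. u \<noteq> 0}) (nhds (w + tmu t))"
            by (rule eventually_nhds_in_open) (use nz in \<open>auto simp: open_Collect_neq\<close>)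
          then show ?thesis by (rule eventually_mono) (use Hu in simp)
        qed
        have Uh: "?U holomorphic_on {u. poly q u \<noteq> 0}"
          unfolding Pfun_def by (auto intro!: holomorphic_intros)
        have "(deriv ^^ tk t) ?H (w + tmu t) = (deriv ^^ tk t) (\<lambda>u. (1 / ?tau) * ?U u) (w + tmu t)"
          by (rule higher_deriv_cong_ev[OF ev refl])
        also have "\<dots> = (1 / ?tau) * (deriv ^^ tk t) ?U (w + tmu t)"
          by (rule hd_cmult[OF Uh qopen qs])
        finally show "Q t * w ^ tj t * (deriv ^^ tk t) ?H (w + tmu t) = (1 / ?tau) * (Q t * w ^ tj t * (deriv ^^ tk t) ?U (w + tmu t))"
          by simp
      qed
      also have "\<dots> = (1 / ?tau) * Phi Q Kb q x w"
        unfolding sum_distrib_left[symmetric] L1[OF finK gw] ..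
      also have "\<dots> = (?pi / ?tau) * exp (x * w)" using B(2)[OF wB] by simp
      finally show "b_apply Q ?H w = (?pi / ?tau) * exp (x * w)" .
    qed
    have z0: "z \<noteq> 0" using zF unfolding F_def by auto
    have "b_apply Kb (b_apply Q ?H) z = (\<Sum>t\<in>{t. Kb t \<noteq> 0}. Kb t * z ^ tj t * (deriv ^^ tk t) (b_apply Q ?H) (z + tmu t))"
      by (rule b_apply_shift)
    also have "\<dots> = (\<Sum>t\<in>{t. Kb t \<noteq> 0}. Kb t * z ^ tj t * ((?pi / ?tau) * (x ^ tk t * exp (x * (z + tmu t)))))"
    proof (rule sum.cong[OF refl])
      fix t assume t: "t \<in> {t. Kb t \<noteq> 0}"
      have nB: "z + tmu t \<notin> B0"
      proof
        assume "z + tmu t \<in> B0"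
        then have "z \<in> (\<lambda>b. b - tmu t) ` B0" by (intro image_eqI[of _ _ "z + tmu t"]) auto
        then show False using zF t unfolding F_def by blast
      qed
      have ev: "eventually (\<lambda>w. b_apply Q ?H w = (?pi / ?tau) * exp (x * w)) (nhds (z + tmu t))"
      proof -
        have "eventually (\<lambda>w. w \<in> - B0) (nhds (z + tmu t))"
          by (rule eventually_nhds_in_open[OF openG]) (use nB in simp)
        then show ?thesis by (rule eventually_mono) (use G1 in simp)
      qed
      have "(deriv ^^ tk t) (b_apply Q ?H) (z + tmu t) = (deriv ^^ tk t) (\<lambda>w. (?pi / ?tau) * exp (x * w)) (z + tmu t)"
        by (rule higher_deriv_cong_ev[OF ev refl])
      also have "\<dots> = (?pi / ?tau) * (deriv ^^ tk t) (\<lambda>w. exp (x * w)) (z + tmu t)"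
        by (rule hd_cmult[where S=UNIV]) (auto intro!: holomorphic_intros)
      also have "\<dots> = (?pi / ?tau) * (x ^ tk t * exp (x * (z + tmu t)))" by (simp add: hd_exp)
      finally show "Kb t * z ^ tj t * (deriv ^^ tk t) (b_apply Q ?H) (z + tmu t) =
          Kb t * z ^ tj t * ((?pi / ?tau) * (x ^ tk t * exp (x * (z + tmu t))))" by simp
    qed
    also have "\<dots> = (?pi / ?tau) * (Pfun Kb x z * exp (x * z))"
      unfolding Pfun_def by (simp add: sum_distrib_left sum_distrib_right distrib_left exp_add mult_ac)
    finally have bb: "b_apply Kb (b_apply Q ?H) z = (?pi / ?tau) * (Pfun Kb x z * exp (x * z))" .
    have "Lambda_hat n cs Kb Q (psiC n cs x) z = (1 / z ^ n) * ((?pi / ?tau) * (Pfun Kb x z * exp (x * z)))"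
      unfolding Lambda_hat_def q_def[symmetric] bb ..
    also have "\<dots> = ?pi * psiC n cs x z"
      unfolding psi_formula[OF rep] by simp
    finally show "Lambda_hat n cs Kb Q (psiC n cs x) z = ?pi * psiC n cs x z" .
  qed
  then show ?thesis using finF by blast
qed

theorem mainTheorem2:
  fixes n :: nat and cs :: "nat \<Rightarrow> distr"
  assumes "n \<ge> 1"
    and "\<forall>i<n. finite_supp (cs i)"
    and "dlin_indep n cs"
  shows "(\<exists>Q pp. factorization n cs Q pp)
    \<and> (\<exists>Kb. represents_Kbar n cs Kb)
    \<and> (\<forall>Q pp Kb. factorization n cs Q pp \<and> represents_Kbar n cs Kb \<longrightarrow>
         (\<exists>F. finite F \<and> (\<forall>x z. z \<notin> F \<longrightarrow>
            Lambda_hat n cs Kb Q (psiC n cs x) z = pe_fun pp x * psiC n cs x z)))"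
  using fact_exists[OF assms] Kbar_exists[OF assms(2)] part3 by blast

end
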